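(* Let $\mathcal K$ be a 2-category and $n>1$ an integer. The composite 2-functor $C_1\circ C_1\circ\cdots\circ C_1:\mathsf{Wdl}^{(n)}(\overline{\mathcal K})\to\mathsf{Wdl}^{(n-1)}(\overline{\mathcal K})\to\cdots\to\mathsf{Wdl}(\overline{\mathcal K})$ ($n-1$ factors) takes a 0-cell $\{\lambda_{i,j}:s_js_i\to s_is_j\}_{0\le i<j\le n}$ to the weak distributive law $$\lambda_{0\dots n-1,n}:=R.s_n\bar\lambda_{0\dots n-1}:s_n(s_0\cdots s_{n-1})\to(s_0\cdots s_{n-1})s_n,$$ where $R:=s_0\cdots s_{n-2}\lambda_{n-1,n}.\cdots.s_0\lambda_{1,n}s_2\cdots s_{n-1}.\lambda_{0,n}s_1\cdots s_{n-1}:s_ns_0\cdots s_{n-1}\to s_0\cdots s_{n-1}s_n$ (between the monads $(s_0\cdots s_{n-1},\bar\lambda_{0\dots n-1})$ and $s_n$).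
   Context: Conventions. For 1-cells, $uw$ is the horizontal composite ($w$ first); for 2-cells $\alpha,\beta$, $\alpha\beta$ is their horizontal composite; a 1-cell next to a 2-cell means whiskering; $\alpha.\beta$ is vertical composition ($\beta$ first). A monad $(A,t)$ has multiplication $\mu:tt\to t$, unit $\eta:1_A\to t$; decorations carry over. Local idempotent closure $\overline{\mathcal K}$: same 0-cells as $\mathcal K$; 1-cells are pairs $(v,\bar v)$ with $v$ a 1-cell of $\mathcal K$ and $\bar v$ an idempotent 2-cell on $v$; 2-cells $(v,\bar v)\to(v',\bar v')$ are 2-cells $\omega:v\to v'$ of $\mathcal K$ with $\bar v'.\omega=\omega=\omega.\bar v$; compositions from $\mathcal K$, identity 2-cell of $(v,\bar v)$ is $\bar v$. Monads $(A,(t,\bar t))$ in $\overline{\mathcal K}$ satisfy $\mu.t\eta=\mu.\eta t=\bar t$; we write just $t$, and $v$ for $(v,\bar v)$. $\mathsf{Mnd}(\overline{\mathcal K})$: 1-cells $(A,t)\to(A',t')$ are $(v,\psi)$, $\psi:t'v\to vt$, with $\psi.\mu'v=v\mu.\psi t.t'\psi$, $\psi.\eta'v=v\eta$; 2-cells $\omega:v\to v'$ with $\psi'.t'\omega=\omega t.\psi$. Weak distributive law in $\overline{\mathcal K}$: monads $(A,t),(A,s)$ and $\lambda:ts\to st$ with $\lambda.\mu s=s\mu.\lambda t.t\lambda$, $\lambda.t\mu=\mu t.s\lambda.\lambda s$, $\lambda.\eta s=\mu t.s\lambda.st\eta.s\eta$, $\lambda.t\eta=s\mu.\lambda t.\eta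 st.\eta t$; idempotent $\bar\lambda:=\mu t.s\lambda.st\eta$; induced monad $(st,\bar\lambda)$ with multiplication $\mu\mu.s\lambda t$, unit $\lambda.\eta\eta$. $\mathsf{Wdl}(\overline{\mathcal K})$: 1-cells $\lambda\to\lambda'$ are $(v,\xi,\zeta)$ with $(v,\xi),(v,\zeta)$ 1-cells of $\mathsf{Mnd}(\overline{\mathcal K})$ and $v\lambda.\xi s.t'\zeta=v\bar\lambda.\zeta t.s'\xi.\lambda'v$; 2-cells are 2-cells of $\mathsf{Mnd}(\overline{\mathcal K})$ for both. $\mathsf{Wdl}^{(m)}(\overline{\mathcal K})$: 0-cells are monads $(A,s_0),\dots,(A,s_m)$ with weak distributive laws $\lambda_{i,j}:s_js_i\to s_is_j$ ($i<j$) satisfying $\lambda_{i,j}s_k.s_j\lambda_{i,k}.\lambda_{j,k}s_i=s_i\lambda_{j,k}.\lambda_{i,k}s_j.s_k\lambda_{i,j}$; 1-cells are $v$ with $\xi_i:s'_iv\to vs_i$ such that each $(v,\xi_i,\xi_j)$ ($i<j$) is a 1-cell of $\mathsf{Wdl}(\overline{\mathcal K})$; 2-cells are 2-cells of $\mathsf{Mnd}(\overline{\mathcal K})$ for all $(v,\xi_i)$. $\bar\lambda_{ij}$ is the idempotent of $\lambda_{i,j}$. The idempotent $\bar\lambda_{0\dots m}$ ($m\ge1$): $\bar\lambda_{01}$ for $m=1$; for $m\ge2$, $\bar\lambda_{0\dots m}:=\overleftarrow\lambda_{0,\dots,m}.\overleftarrow\lambda_{0,\dots,m-1}s_m.\cdots.\overleftarrow\lambda_{0,1,2}s_3\cdots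 s_m.\bar\lambda_{01}s_2\cdots s_m$, where $\overleftarrow\lambda_{0,\dots,l}:=s_0\cdots s_{l-1}\mu_l.R_l.\eta_ls_0\cdots s_l$ with $R_l:=s_0\cdots s_{l-2}\lambda_{l-1,l}s_l.\cdots.\lambda_{0,l}s_1\cdots s_l$. The 2-functor $C_1:\mathsf{Wdl}^{(m)}(\overline{\mathcal K})\to\mathsf{Wdl}^{(m-1)}(\overline{\mathcal K})$ ($m\ge1$): on a 0-cell it gives the monads $(s_0s_1,\bar\lambda_{01}),s_2,\dots,s_m$ with laws $\lambda_{i,j}$ for $2\le i<j$ and $s_0\lambda_{1,j}.\lambda_{0,j}s_1.s_j\bar\lambda_{01}:s_j(s_0s_1)\to(s_0s_1)s_j$ for $j\ge2$; on a 1-cell it gives $v\bar\lambda_{01}.\xi_0s_1.s'_0\xi_1,\xi_2,\dots,\xi_m$; identity on 2-cells. *)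

theory Defs
  imports Main
begin

text \<open>Hc1 u w is the horizontal composite uw (w first); Vc a b is the vertical composite a.b (b first);
  Hc2 a b is the horizontal composite of 2-cells, with Dom (Hc2 a b) = Hc1 (Dom a) (Dom b).\<close>

record ('o,'a,'c) tcat =
  Obj  :: "'o set"
  Arr  :: "'a set"
  Src  :: "'a \<Rightarrow> 'o"
  Trg  :: "'a \<Rightarrow> 'o"
  Id1  :: "'o \<Rightarrow> 'a"
  Hc1  :: "'a \<Rightarrow> 'a \<Rightarrow> 'a"
  Cell :: "'c set"
  Dom  :: "'c \<Rightarrow> 'a"
  Cod  :: "'c \<Rightarrow> 'a"
  Vc   :: "'c \<Rightarrow> 'c \<Rightarrow> 'c"
  Id2  :: "'a \<Rightarrow> 'c"
  Hc2  :: "'c \<Rightarrow> 'c \<Rightarrow> 'c"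

definition twocat :: "('o,'a,'c) tcat \<Rightarrow> bool" where
  "twocat K \<longleftrightarrow>
    (\<forall>x\<in>Obj K. Id1 K x \<in> Arr K \<and> Src K (Id1 K x) = x \<and> Trg K (Id1 K x) = x) \<and>
    (\<forall>u\<in>Arr K. Src K u \<in> Obj K \<and> Trg K u \<in> Obj K) \<and>
    (\<forall>u\<in>Arr K. \<forall>w\<in>Arr K. Trg K w = Src K u \<longrightarrow>
        Hc1 K u w \<in> Arr K \<and> Src K (Hc1 K u w) = Src K w \<and> Trg K (Hc1 K u w) = Trg K u) \<and>
    (\<forall>u\<in>Arr K. \<forall>v\<in>Arr K. \<forall>w\<in>Arr K. Trg K w = Src K v \<longrightarrow> Trg K v = Src K u \<longrightarrow>
        Hc1 K (Hc1 K u v) w = Hc1 K u (Hc1 K v w)) \<and>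
    (\<forall>u\<in>Arr K. Hc1 K (Id1 K (Trg K u)) u = u \<and> Hc1 K u (Id1 K (Src K u)) = u) \<and>
    (\<forall>a\<in>Cell K. Dom K a \<in> Arr K \<and> Cod K a \<in> Arr K \<and>
        Src K (Dom K a) = Src K (Cod K a) \<and> Trg K (Dom K a) = Trg K (Cod K a)) \<and>
    (\<forall>u\<in>Arr K. Id2 K u \<in> Cell K \<and> Dom K (Id2 K u) = u \<and> Cod K (Id2 K u) = u) \<and>
    (\<forall>a\<in>Cell K. \<forall>b\<in>Cell K. Cod K b = Dom K a \<longrightarrow>
        Vc K a b \<in> Cell K \<and> Dom K (Vc K a b) = Dom K b \<and> Cod K (Vc K a b) = Cod K a) \<and>
    (\<forall>a\<in>Cell K. \<forall>b\<in>Cell K. \<forall>c\<in>Cell K. Cod K c = Dom K b \<longrightarrow> Cod K b = Dom K a \<longrightarrow>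
        Vc K (Vc K a b) c = Vc K a (Vc K b c)) \<and>
    (\<forall>a\<in>Cell K. Vc K (Id2 K (Cod K a)) a = a \<and> Vc K a (Id2 K (Dom K a)) = a) \<and>
    (\<forall>a\<in>Cell K. \<forall>b\<in>Cell K. Trg K (Dom K b) = Src K (Dom K a) \<longrightarrow>
        Hc2 K a b \<in> Cell K \<and> Dom K (Hc2 K a b) = Hc1 K (Dom K a) (Dom K b) \<and>
        Cod K (Hc2 K a b) = Hc1 K (Cod K a) (Cod K b)) \<and>
    (\<forall>a\<in>Cell K. \<forall>b\<in>Cell K. \<forall>c\<in>Cell K.
        Trg K (Dom K c) = Src K (Dom K b) \<longrightarrow> Trg K (Dom K b) = Src K (Dom K a) \<longrightarrow>
        Hc2 K (Hc2 K a b) c = Hc2 K a (Hc2 K b c)) \<and>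
    (\<forall>a\<in>Cell K. Hc2 K (Id2 K (Id1 K (Trg K (Dom K a)))) a = a \<and>
        Hc2 K a (Id2 K (Id1 K (Src K (Dom K a)))) = a) \<and>
    (\<forall>u\<in>Arr K. \<forall>w\<in>Arr K. Trg K w = Src K u \<longrightarrow> Hc2 K (Id2 K u) (Id2 K w) = Id2 K (Hc1 K u w)) \<and>
    (\<forall>a\<in>Cell K. \<forall>b\<in>Cell K. \<forall>c\<in>Cell K. \<forall>d\<in>Cell K.
        Cod K b = Dom K a \<longrightarrow> Cod K d = Dom K c \<longrightarrow> Trg K (Dom K c) = Src K (Dom K a) \<longrightarrow>
        Hc2 K (Vc K a b) (Vc K c d) = Vc K (Hc2 K a c) (Hc2 K b d))"

text \<open>A 1-cell of the local idempotent closure is a pair (v, vbar).  A 2-cell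
  (v,vbar) -> (v',vbar') is a 2-cell w of K with vbar'.w = w = w.vbar.
  Compositions are those of K; the identity 2-cell of (v,vbar) is vbar, so whiskering
  by (v,vbar) is horizontal composition with vbar.\<close>

definition barArr :: "('o,'a,'c) tcat \<Rightarrow> 'a \<times> 'c \<Rightarrow> bool" where
  "barArr K v \<longleftrightarrow> fst v \<in> Arr K \<and> snd v \<in> Cell K \<and> Dom K (snd v) = fst v \<and>
     Cod K (snd v) = fst v \<and> Vc K (snd v) (snd v) = snd v"

definition barHom :: "('o,'a,'c) tcat \<Rightarrow> 'c \<Rightarrow> 'a \<times> 'c \<Rightarrow> 'a \<times> 'c \<Rightarrow> bool" where
  "barHom K w v v' \<longleftrightarrow> w \<in> Cell K \<and> Dom K w = fst v \<and> Cod K w = fst v' \<and>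
     Vc K (snd v') w = w \<and> Vc K w (snd v) = w"

definition barC :: "('o,'a,'c) tcat \<Rightarrow> 'a \<times> 'c \<Rightarrow> 'a \<times> 'c \<Rightarrow> 'a \<times> 'c" where
  "barC K u w = (Hc1 K (fst u) (fst w), Hc2 K (snd u) (snd w))"

definition barId :: "('o,'a,'c) tcat \<Rightarrow> 'o \<Rightarrow> 'a \<times> 'c" where
  "barId K A = (Id1 K A, Id2 K (Id1 K A))"

definition wl :: "('o,'a,'c) tcat \<Rightarrow> 'a \<times> 'c \<Rightarrow> 'c \<Rightarrow> 'c" where
  "wl K v a = Hc2 K (snd v) a"

definition wr :: "('o,'a,'c) tcat \<Rightarrow> 'c \<Rightarrow> 'a \<times> 'c \<Rightarrow> 'c" where
  "wr K a v = Hc2 K a (snd v)"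

record ('a,'c) bmonad =
  mc  :: "'a \<times> 'c"
  mmu :: 'c
  meta :: 'c

definition bar_monad :: "('o,'a,'c) tcat \<Rightarrow> 'o \<Rightarrow> ('a,'c) bmonad \<Rightarrow> bool" where
  "bar_monad K A M \<longleftrightarrow> A \<in> Obj K \<and> barArr K (mc M) \<and>
     Src K (fst (mc M)) = A \<and> Trg K (fst (mc M)) = A \<and>
     barHom K (mmu M) (barC K (mc M) (mc M)) (mc M) \<and>
     barHom K (meta M) (barId K A) (mc M) \<and>
     Vc K (mmu M) (wr K (mmu M) (mc M)) = Vc K (mmu M) (wl K (mc M) (mmu M)) \<and>
     Vc K (mmu M) (wl K (mc M) (meta M)) = snd (mc M) \<and>
     Vc K (mmu M) (wr K (meta M) (mc M)) = snd (mc M)"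

definition bar_wdl :: "('o,'a,'c) tcat \<Rightarrow> 'o \<Rightarrow> ('a,'c) bmonad \<Rightarrow> ('a,'c) bmonad \<Rightarrow> 'c \<Rightarrow> bool" where
  "bar_wdl K A T S l \<longleftrightarrow> bar_monad K A T \<and> bar_monad K A S \<and>
     (let t = mc T; s = mc S in
       barHom K l (barC K t s) (barC K s t) \<and>
       Vc K l (wr K (mmu T) s) = Vc K (wl K s (mmu T)) (Vc K (wr K l t) (wl K t l)) \<and>
       Vc K l (wl K t (mmu S)) = Vc K (wr K (mmu S) t) (Vc K (wl K s l) (wr K l s)) \<and>
       Vc K l (wr K (meta T) s) =
         Vc K (wr K (mmu S) t) (Vc K (wl K s l) (Vc K (wl K (barC K s t) (meta S)) (wl K s (meta T)))) \<and>
       Vc K l (wl K t (meta S)) =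
         Vc K (wl K s (mmu T)) (Vc K (wr K l t) (Vc K (wr K (meta T) (barC K s t)) (wr K (meta S) t))))"

definition wdl_idem :: "('o,'a,'c) tcat \<Rightarrow> ('a,'c) bmonad \<Rightarrow> ('a,'c) bmonad \<Rightarrow> 'c \<Rightarrow> 'c" where
  "wdl_idem K T S l = (let t = mc T; s = mc S in
     Vc K (wr K (mmu S) t) (Vc K (wl K s l) (wl K (barC K s t) (meta S))))"

definition wdl_monad :: "('o,'a,'c) tcat \<Rightarrow> ('a,'c) bmonad \<Rightarrow> ('a,'c) bmonad \<Rightarrow> 'c \<Rightarrow> ('a,'c) bmonad" where
  "wdl_monad K T S l = (let t = mc T; s = mc S in
     \<lparr> mc = (Hc1 K (fst s) (fst t), wdl_idem K T S l),
       mmu = Vc K (Hc2 K (mmu S) (mmu T)) (wl K s (wr K l t)),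
       meta = Vc K l (Hc2 K (meta T) (meta S)) \<rparr>)"

text \<open>A 0-cell: object A, number m, monads wS 0 .. wS m at A, laws wL i j : s_j s_i -> s_i s_j (i<j).\<close>
record ('o,'a,'c) wdlm =
  wA :: 'o
  wm :: nat
  wS :: "nat \<Rightarrow> ('a,'c) bmonad"
  wL :: "nat \<Rightarrow> nat \<Rightarrow> 'c"

definition Wdl_obj :: "('o,'a,'c) tcat \<Rightarrow> ('o,'a,'c) wdlm \<Rightarrow> bool" where
  "Wdl_obj K D \<longleftrightarrow>
     (\<forall>i\<le>wm D. bar_monad K (wA D) (wS D i)) \<and>
     (\<forall>i j. i < j \<and> j \<le> wm D \<longrightarrow> bar_wdl K (wA D) (wS D j) (wS D i) (wL D i j)) \<and>
     (\<forall>i j k. i < j \<and> j < k \<and> k \<le> wm D \<longrightarrow>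
        (let si = mc (wS D i); sj = mc (wS D j); sk = mc (wS D k) in
          Vc K (wr K (wL D i j) sk) (Vc K (wl K sj (wL D i k)) (wr K (wL D j k) si)) =
          Vc K (wl K si (wL D j k)) (Vc K (wr K (wL D i k) sj) (wl K sk (wL D i j)))))"

definition C1 :: "('o,'a,'c) tcat \<Rightarrow> ('o,'a,'c) wdlm \<Rightarrow> ('o,'a,'c) wdlm" where
  "C1 K D = (let S = wS D; L = wL D; lb = wdl_idem K (S 1) (S 0) (L 0 1) in
     \<lparr> wA = wA D,
       wm = wm D - 1,
       wS = (\<lambda>i. if i = 0 then wdl_monad K (S 1) (S 0) (L 0 1) else S (Suc i)),
       wL = (\<lambda>i j. if i = 0 then
                 Vc K (wl K (mc (S 0)) (L 1 (Suc j)))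
                   (Vc K (wr K (L 0 (Suc j)) (mc (S 1))) (wl K (mc (S (Suc j))) lb))
               else L (Suc i) (Suc j)) \<rparr>)"

fun comp_list :: "('o,'a,'c) tcat \<Rightarrow> 'o \<Rightarrow> ('a \<times> 'c) list \<Rightarrow> 'a \<times> 'c" where
  "comp_list K A [] = barId K A"
| "comp_list K A [v] = v"
| "comp_list K A (v # vs) = barC K v (comp_list K A vs)"

definition seg :: "('o,'a,'c) tcat \<Rightarrow> 'o \<Rightarrow> (nat \<Rightarrow> ('a,'c) bmonad) \<Rightarrow> nat \<Rightarrow> nat \<Rightarrow> 'a \<times> 'c" where
  "seg K A S a b = comp_list K A (map (\<lambda>i. mc (S i)) [a..<b])"

definition Rterm :: "('o,'a,'c) tcat \<Rightarrow> 'o \<Rightarrow> (nat \<Rightarrow> ('a,'c) bmonad) \<Rightarrow> (nat \<Rightarrow> nat \<Rightarrow> 'c)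
    \<Rightarrow> nat \<Rightarrow> nat \<Rightarrow> nat \<Rightarrow> 'c" where
  "Rterm K A S L l k i = wl K (seg K A S 0 i) (wr K (L i l) (seg K A S (Suc i) k))"

fun pushc :: "('o,'a,'c) tcat \<Rightarrow> 'o \<Rightarrow> (nat \<Rightarrow> ('a,'c) bmonad) \<Rightarrow> (nat \<Rightarrow> nat \<Rightarrow> 'c)
    \<Rightarrow> nat \<Rightarrow> nat \<Rightarrow> nat \<Rightarrow> 'c" where
  "pushc K A S L l k 0 = snd (barC K (mc (S l)) (seg K A S 0 k))"
| "pushc K A S L l k (Suc 0) = Rterm K A S L l k 0"
| "pushc K A S L l k (Suc (Suc j)) = Vc K (Rterm K A S L l k (Suc j)) (pushc K A S L l k (Suc j))"

text \<open>R_l = pushc l (l+1) l;  overleftarrow lambda_(0..l) = s_0..s_(l-1) mu_l . R_l . eta_l s_0 .. s_l.\<close>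
definition ovl :: "('o,'a,'c) tcat \<Rightarrow> 'o \<Rightarrow> (nat \<Rightarrow> ('a,'c) bmonad) \<Rightarrow> (nat \<Rightarrow> nat \<Rightarrow> 'c) \<Rightarrow> nat \<Rightarrow> 'c" where
  "ovl K A S L l = Vc K (wl K (seg K A S 0 l) (mmu (S l)))
      (Vc K (pushc K A S L l (Suc l) l) (wr K (meta (S l)) (seg K A S 0 (Suc l))))"

definition lbterm :: "('o,'a,'c) tcat \<Rightarrow> 'o \<Rightarrow> (nat \<Rightarrow> ('a,'c) bmonad) \<Rightarrow> (nat \<Rightarrow> nat \<Rightarrow> 'c)
    \<Rightarrow> nat \<Rightarrow> nat \<Rightarrow> 'c" where
  "lbterm K A S L m j = (if j = 1 then wr K (wdl_idem K (S 1) (S 0) (L 0 1)) (seg K A S 2 (Suc m))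
                         else wr K (ovl K A S L j) (seg K A S (Suc j) (Suc m)))"

fun lbaux :: "('o,'a,'c) tcat \<Rightarrow> 'o \<Rightarrow> (nat \<Rightarrow> ('a,'c) bmonad) \<Rightarrow> (nat \<Rightarrow> nat \<Rightarrow> 'c)
    \<Rightarrow> nat \<Rightarrow> nat \<Rightarrow> 'c" where
  "lbaux K A S L m 0 = snd (seg K A S 0 (Suc m))"
| "lbaux K A S L m (Suc 0) = lbterm K A S L m 1"
| "lbaux K A S L m (Suc (Suc j)) = Vc K (lbterm K A S L m (Suc (Suc j))) (lbaux K A S L m (Suc j))"

text \<open>lbar_{0...m} for m >= 1.\<close>
definition lbar :: "('o,'a,'c) tcat \<Rightarrow> 'o \<Rightarrow> (nat \<Rightarrow> ('a,'c) bmonad) \<Rightarrow> (nat \<Rightarrow> nat \<Rightarrow> 'c) \<Rightarrow> nat \<Rightarrow> 'c" where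
  "lbar K A S L m = (if m = 1 then wdl_idem K (S 1) (S 0) (L 0 1) else lbaux K A S L m m)"

end

theory Submission
  imports Defs
begin


lemma twocatD0:
  assumes "twocat K"
  shows
    "(\<forall>x\<in>Obj K. Id1 K x \<in> Arr K \<and> Src K (Id1 K x) = x \<and> Trg K (Id1 K x) = x)"
    "(\<forall>u\<in>Arr K. Src K u \<in> Obj K \<and> Trg K u \<in> Obj K)"
    "(\<forall>u\<in>Arr K. \<forall>w\<in>Arr K. Trg K w = Src K u \<longrightarrow>
        Hc1 K u w \<in> Arr K \<and> Src K (Hc1 K u w) = Src K w \<and> Trg K (Hc1 K u w) = Trg K u)"
    "(\<forall>u\<in>Arr K. \<forall>v\<in>Arr K. \<forall>w\<in>Arr K. Trg K w = Src K v \<longrightarrow> Trg K v = Src K u \<longrightarrow>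
        Hc1 K (Hc1 K u v) w = Hc1 K u (Hc1 K v w))"
    "(\<forall>u\<in>Arr K. Hc1 K (Id1 K (Trg K u)) u = u \<and> Hc1 K u (Id1 K (Src K u)) = u)"
    "(\<forall>a\<in>Cell K. Dom K a \<in> Arr K \<and> Cod K a \<in> Arr K \<and>
        Src K (Dom K a) = Src K (Cod K a) \<and> Trg K (Dom K a) = Trg K (Cod K a))"
    "(\<forall>u\<in>Arr K. Id2 K u \<in> Cell K \<and> Dom K (Id2 K u) = u \<and> Cod K (Id2 K u) = u)"
    "(\<forall>a\<in>Cell K. \<forall>b\<in>Cell K. Cod K b = Dom K a \<longrightarrow>
        Vc K a b \<in> Cell K \<and> Dom K (Vc K a b) = Dom K b \<and> Cod K (Vc K a b) = Cod K a)"
    "(\<forall>a\<in>Cell K. \<forall>b\<in>Cell K. \<forall>c\<in>Cell K. Cod K c = Dom K b \<longrightarrow> Cod K b = Dom K a \<longrightarrow>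
        Vc K (Vc K a b) c = Vc K a (Vc K b c))"
    "(\<forall>a\<in>Cell K. Vc K (Id2 K (Cod K a)) a = a \<and> Vc K a (Id2 K (Dom K a)) = a)"
    "(\<forall>a\<in>Cell K. \<forall>b\<in>Cell K. Trg K (Dom K b) = Src K (Dom K a) \<longrightarrow>
        Hc2 K a b \<in> Cell K \<and> Dom K (Hc2 K a b) = Hc1 K (Dom K a) (Dom K b) \<and>
        Cod K (Hc2 K a b) = Hc1 K (Cod K a) (Cod K b))"
    "(\<forall>a\<in>Cell K. \<forall>b\<in>Cell K. \<forall>c\<in>Cell K.
        Trg K (Dom K c) = Src K (Dom K b) \<longrightarrow> Trg K (Dom K b) = Src K (Dom K a) \<longrightarrow>
        Hc2 K (Hc2 K a b) c = Hc2 K a (Hc2 K b c))"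
    "(\<forall>a\<in>Cell K. Hc2 K (Id2 K (Id1 K (Trg K (Dom K a)))) a = a \<and>
        Hc2 K a (Id2 K (Id1 K (Src K (Dom K a)))) = a)"
    "(\<forall>u\<in>Arr K. \<forall>w\<in>Arr K. Trg K w = Src K u \<longrightarrow> Hc2 K (Id2 K u) (Id2 K w) = Id2 K (Hc1 K u w))"
    "(\<forall>a\<in>Cell K. \<forall>b\<in>Cell K. \<forall>c\<in>Cell K. \<forall>d\<in>Cell K.
        Cod K b = Dom K a \<longrightarrow> Cod K d = Dom K c \<longrightarrow> Trg K (Dom K c) = Src K (Dom K a) \<longrightarrow>
        Hc2 K (Vc K a b) (Vc K c d) = Vc K (Hc2 K a c) (Hc2 K b d))"
  using assms unfolding twocat_def by (simp_all only: conj_imp_eq_imp_imp) 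

locale TC =
  fixes K :: "('o,'a,'c) tcat" and A :: 'o
  assumes tc: "twocat K" and A: "A \<in> Obj K"
begin

abbreviation V (infixr "\<odot>" 60) where "a \<odot> b \<equiv> Vc K a b"
abbreviation H (infixr "\<otimes>" 70) where "a \<otimes> b \<equiv> Hc2 K a b"
abbreviation I where "I \<equiv> Id1 K A"

definition ar where "ar u \<longleftrightarrow> u \<in> Arr K \<and> Src K u = A \<and> Trg K u = A"
definition ce where "ce c \<longleftrightarrow> c \<in> Cell K \<and> ar (Dom K c) \<and> ar (Cod K c)"

lemmas T = twocatD0[OF tc]

lemma ar_I[simp]: "ar I" using T(1) A by (simp add: ar_def)
lemma ar_H1[simp]: "ar u \<Longrightarrow> ar w \<Longrightarrow> ar (Hc1 K u w)" using T(3) by (simp add: ar_def)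
lemma H1_assoc[simp]: "ar u \<Longrightarrow> ar v \<Longrightarrow> ar w \<Longrightarrow> Hc1 K (Hc1 K u v) w = Hc1 K u (Hc1 K v w)"
  using T(4) by (simp add: ar_def)
lemma H1_I[simp]: "ar u \<Longrightarrow> Hc1 K I u = u" "ar u \<Longrightarrow> Hc1 K u I = u"
  using T(5) by (auto simp: ar_def)
lemma H_all: assumes "ce a" "ce b"
  shows "ce (a \<otimes> b) \<and> Dom K (a \<otimes> b) = Hc1 K (Dom K a) (Dom K b) \<and> Cod K (a \<otimes> b) = Hc1 K (Cod K a) (Cod K b)"
proof -
  have c: "a \<in> Cell K" "b \<in> Cell K" "Trg K (Dom K b) = Src K (Dom K a)" "ar (Dom K a)" "ar (Dom K b)"
     "ar (Cod K a)" "ar (Cod K b)"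
    using assms by (auto simp: ce_def ar_def)
  then have h: "a \<otimes> b \<in> Cell K \<and> Dom K (a \<otimes> b) = Hc1 K (Dom K a) (Dom K b) \<and> Cod K (a \<otimes> b) = Hc1 K (Cod K a) (Cod K b)"
    using T(11)[rule_format] by blast
  then show ?thesis using c by (simp add: ce_def)
qed
lemma ce_H[simp]: "ce a \<Longrightarrow> ce b \<Longrightarrow> ce (a \<otimes> b)"
  and Dom_H[simp]: "ce a \<Longrightarrow> ce b \<Longrightarrow> Dom K (a \<otimes> b) = Hc1 K (Dom K a) (Dom K b)"
  and Cod_H[simp]: "ce a \<Longrightarrow> ce b \<Longrightarrow> Cod K (a \<otimes> b) = Hc1 K (Cod K a) (Cod K b)"
  using H_all by blast+
lemma V_all: assumes "ce a" "ce b" "Cod K b = Dom K a"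
  shows "ce (a \<odot> b) \<and> Dom K (a \<odot> b) = Dom K b \<and> Cod K (a \<odot> b) = Cod K a"
proof -
  have c: "a \<in> Cell K" "b \<in> Cell K" "ar (Dom K b)" "ar (Cod K a)"
    using assms by (auto simp: ce_def)
  then have h: "a \<odot> b \<in> Cell K \<and> Dom K (a \<odot> b) = Dom K b \<and> Cod K (a \<odot> b) = Cod K a"
    using T(8)[rule_format] assms(3) by blast
  then show ?thesis using c by (simp add: ce_def)
qed
lemma ce_V[simp]: "ce a \<Longrightarrow> ce b \<Longrightarrow> Cod K b = Dom K a \<Longrightarrow> ce (a \<odot> b)"
  and Dom_V[simp]: "ce a \<Longrightarrow> ce b \<Longrightarrow> Cod K b = Dom K a \<Longrightarrow> Dom K (a \<odot> b) = Dom K b"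
  and Cod_V[simp]: "ce a \<Longrightarrow> ce b \<Longrightarrow> Cod K b = Dom K a \<Longrightarrow> Cod K (a \<odot> b) = Cod K a"
  using V_all by blast+
lemma ce_Id2[simp]: "ar u \<Longrightarrow> ce (Id2 K u)" and Dom_Id2[simp]: "ar u \<Longrightarrow> Dom K (Id2 K u) = u"
  and Cod_Id2[simp]: "ar u \<Longrightarrow> Cod K (Id2 K u) = u"
  using T(7) by (auto simp: ce_def ar_def)
lemma ce_ar[simp]: "ce a \<Longrightarrow> ar (Dom K a)" "ce a \<Longrightarrow> ar (Cod K a)" by (auto simp: ce_def)

lemma V_assoc[simp]: "ce a \<Longrightarrow> ce b \<Longrightarrow> ce c \<Longrightarrow> Cod K c = Dom K b \<Longrightarrow> Cod K b = Dom K a \<Longrightarrow>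
   (a \<odot> b) \<odot> c = a \<odot> b \<odot> c"
  unfolding ce_def by (rule T(9)[rule_format]) auto
lemma H_assoc[simp]: "ce a \<Longrightarrow> ce b \<Longrightarrow> ce c \<Longrightarrow> (a \<otimes> b) \<otimes> c = a \<otimes> b \<otimes> c"
  unfolding ce_def ar_def by (rule T(12)[rule_format]) auto
lemma V_idl[simp]: "ce a \<Longrightarrow> Cod K a = u \<Longrightarrow> Id2 K u \<odot> a = a"
  and V_idr[simp]: "ce a \<Longrightarrow> Dom K a = u \<Longrightarrow> a \<odot> Id2 K u = a"
proof -
  assume "ce a"
  then have "a \<in> Cell K" unfolding ce_def by blast
  then have "Vc K (Id2 K (Cod K a)) a = a \<and> Vc K a (Id2 K (Dom K a)) = a" by (rule T(10)[rule_format])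
  then show "Cod K a = u \<Longrightarrow> Id2 K u \<odot> a = a" "Dom K a = u \<Longrightarrow> a \<odot> Id2 K u = a" by auto
qed
lemma H_idl[simp]: "ce a \<Longrightarrow> Id2 K I \<otimes> a = a" and H_idr[simp]: "ce a \<Longrightarrow> a \<otimes> Id2 K I = a"
proof -
  assume "ce a"
  then have "a \<in> Cell K" "Trg K (Dom K a) = A" "Src K (Dom K a) = A" unfolding ce_def ar_def by blast+
  moreover from this(1) have "Hc2 K (Id2 K (Id1 K (Trg K (Dom K a)))) a = a \<and>
        Hc2 K a (Id2 K (Id1 K (Src K (Dom K a)))) = a" by (rule T(13)[rule_format])
  ultimately show "Id2 K I \<otimes> a = a" "a \<otimes> Id2 K I = a" by simp_all
qed
lemma H_Id2[simp]: "ar u \<Longrightarrow> ar w \<Longrightarrow> Id2 K u \<otimes> Id2 K w = Id2 K (Hc1 K u w)"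
proof -
  assume "ar u" "ar w"
  then have "u \<in> Arr K" "w \<in> Arr K" "Trg K w = Src K u" unfolding ar_def by auto
  then show ?thesis by (rule T(14)[rule_format])
qed
lemma ichg: "ce a \<Longrightarrow> ce b \<Longrightarrow> ce c \<Longrightarrow> ce d \<Longrightarrow> Cod K b = Dom K a \<Longrightarrow> Cod K d = Dom K c \<Longrightarrow>
   (a \<odot> b) \<otimes> (c \<odot> d) = (a \<otimes> c) \<odot> (b \<otimes> d)"
  unfolding ce_def ar_def by (rule T(15)[rule_format]) auto

text \<open>fusion, the direction used by the simplifier\<close>
lemma fuse: "ce a \<Longrightarrow> ce b \<Longrightarrow> ce c \<Longrightarrow> ce d \<Longrightarrow> Cod K b = Dom K a \<Longrightarrow> Cod K d = Dom K c \<Longrightarrow>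
   (a \<otimes> c) \<odot> (b \<otimes> d) = (a \<odot> b) \<otimes> (c \<odot> d)"
  using ichg[of a b c d] by simp

end


context TC begin

abbreviation H1 (infixr "\<cdot>" 75) where "u \<cdot> w \<equiv> Hc1 K u w"

lemma fuseS: "ce a \<Longrightarrow> ce b \<Longrightarrow> ce c \<Longrightarrow> ce d \<Longrightarrow> Cod K b = Dom K a \<Longrightarrow> Cod K d = Dom K c \<Longrightarrow>
   (a \<otimes> c) \<odot> (b \<otimes> d) = (a \<odot> b) \<otimes> (c \<odot> d)" by (rule fuse)

lemma absL: "ce x \<Longrightarrow> ce a \<Longrightarrow> ce b \<Longrightarrow> Cod K a = Dom K x \<Longrightarrow> Cod K b = Dom K a \<Longrightarrow> x \<odot> a = a
   \<Longrightarrow> x \<odot> a \<odot> b = a \<odot> b"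
  by (metis V_assoc)
lemma absR: "ce y \<Longrightarrow> ce a \<Longrightarrow> ce b \<Longrightarrow> Cod K y = Dom K b \<Longrightarrow> Cod K b = Dom K a \<Longrightarrow> b \<odot> y = b
   \<Longrightarrow> (a \<odot> b) \<odot> y = a \<odot> b"
  by (metis V_assoc)

definition carr where "carr v \<longleftrightarrow> barArr K v \<and> ar (fst v)"
definition ccell where "ccell x \<longleftrightarrow> carr (fst (snd x)) \<and> carr (snd (snd x)) \<and> barHom K (fst x) (fst (snd x)) (snd (snd x))"

lemma carr_iff: "carr v \<longleftrightarrow> ar (fst v) \<and> ce (snd v) \<and> Dom K (snd v) = fst v \<and> Cod K (snd v) = fst v \<and> snd v \<odot> snd v = snd v"
  unfolding carr_def barArr_def ce_def ar_def by auto

lemma ccell_iff: "ccell x \<longleftrightarrow> carr (fst (snd x)) \<and> carr (snd (snd x)) \<and> ce (fst x) \<and> Dom K (fst x) = fst (fst (snd x))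
   \<and> Cod K (fst x) = fst (snd (snd x)) \<and> snd (snd (snd x)) \<odot> fst x = fst x \<and> fst x \<odot> snd (fst (snd x)) = fst x"
  unfolding ccell_def barHom_def carr_iff ce_def by auto

definition clo :: "('o, 'a \<times> 'c, 'c \<times> ('a \<times> 'c) \<times> ('a \<times> 'c)) tcat" where
  "clo = \<lparr> Obj = {A}, Arr = {v. carr v}, Src = (\<lambda>v. A), Trg = (\<lambda>v. A), Id1 = barId K, Hc1 = barC K,
     Cell = {x. ccell x}, Dom = (\<lambda>x. fst (snd x)), Cod = (\<lambda>x. snd (snd x)),
     Vc = (\<lambda>x y. (Vc K (fst x) (fst y), fst (snd y), snd (snd x))),
     Id2 = (\<lambda>v. (snd v, v, v)),
     Hc2 = (\<lambda>x y. (Hc2 K (fst x) (fst y), barC K (fst (snd x)) (fst (snd y)), barC K (snd (snd x)) (snd (snd y)))) \<rparr>"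

lemma carr_barC: "carr u \<Longrightarrow> carr w \<Longrightarrow> carr (barC K u w)"
  by (auto simp: carr_iff barC_def fuseS)
lemma carr_barId: "carr (barId K A)" by (auto simp: carr_iff barId_def)

lemma clo_twocat: "twocat clo"
  unfolding twocat_def
proof (intro conjI)
  show "\<forall>x\<in>Obj clo. Id1 clo x \<in> Arr clo \<and> Src clo (Id1 clo x) = x \<and> Trg clo (Id1 clo x) = x"
    by (simp add: clo_def carr_barId)
  show "\<forall>u\<in>Arr clo. Src clo u \<in> Obj clo \<and> Trg clo u \<in> Obj clo" by (simp add: clo_def)
  show "\<forall>u\<in>Arr clo. \<forall>w\<in>Arr clo. Trg clo w = Src clo u \<longrightarrow>
        Hc1 clo u w \<in> Arr clo \<and> Src clo (Hc1 clo u w) = Src clo w \<and> Trg clo (Hc1 clo u w) = Trg clo u"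
    by (simp add: clo_def carr_barC)
  show "\<forall>u\<in>Arr clo. \<forall>v\<in>Arr clo. \<forall>w\<in>Arr clo. Trg clo w = Src clo v \<longrightarrow> Trg clo v = Src clo u \<longrightarrow>
        Hc1 clo (Hc1 clo u v) w = Hc1 clo u (Hc1 clo v w)"
    by (simp add: clo_def carr_iff barC_def)
  show "\<forall>u\<in>Arr clo. Hc1 clo (Id1 clo (Trg clo u)) u = u \<and> Hc1 clo u (Id1 clo (Src clo u)) = u"
    by (simp add: clo_def carr_iff barC_def barId_def)
  show "\<forall>a\<in>Cell clo. Dom clo a \<in> Arr clo \<and> Cod clo a \<in> Arr clo \<and>
        Src clo (Dom clo a) = Src clo (Cod clo a) \<and> Trg clo (Dom clo a) = Trg clo (Cod clo a)"
    by (simp add: clo_def ccell_def)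
  show "\<forall>u\<in>Arr clo. Id2 clo u \<in> Cell clo \<and> Dom clo (Id2 clo u) = u \<and> Cod clo (Id2 clo u) = u"
    by (simp add: clo_def ccell_iff carr_iff)
  show "\<forall>a\<in>Cell clo. \<forall>b\<in>Cell clo. Cod clo b = Dom clo a \<longrightarrow>
        Vc clo a b \<in> Cell clo \<and> Dom clo (Vc clo a b) = Dom clo b \<and> Cod clo (Vc clo a b) = Cod clo a"
  proof (intro ballI impI)
    fix a b assume a: "a \<in> Cell clo" and b: "b \<in> Cell clo" and e: "Cod clo b = Dom clo a"
    then show "Vc clo a b \<in> Cell clo \<and> Dom clo (Vc clo a b) = Dom clo b \<and> Cod clo (Vc clo a b) = Cod clo a"
      using absL absR by (simp add: clo_def ccell_iff carr_iff)
  qed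
  show "\<forall>a\<in>Cell clo. \<forall>b\<in>Cell clo. \<forall>c\<in>Cell clo. Cod clo c = Dom clo b \<longrightarrow> Cod clo b = Dom clo a \<longrightarrow>
        Vc clo (Vc clo a b) c = Vc clo a (Vc clo b c)"
    by (simp add: clo_def ccell_iff)
  show "\<forall>a\<in>Cell clo. Vc clo (Id2 clo (Cod clo a)) a = a \<and> Vc clo a (Id2 clo (Dom clo a)) = a"
    by (simp add: clo_def ccell_iff)
  show "\<forall>a\<in>Cell clo. \<forall>b\<in>Cell clo. Trg clo (Dom clo b) = Src clo (Dom clo a) \<longrightarrow>
        Hc2 clo a b \<in> Cell clo \<and> Dom clo (Hc2 clo a b) = Hc1 clo (Dom clo a) (Dom clo b) \<and>
        Cod clo (Hc2 clo a b) = Hc1 clo (Cod clo a) (Cod clo b)"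
    by (simp add: clo_def ccell_iff carr_barC) (simp add: barC_def carr_iff fuseS)
  show "\<forall>a\<in>Cell clo. \<forall>b\<in>Cell clo. \<forall>c\<in>Cell clo.
        Trg clo (Dom clo c) = Src clo (Dom clo b) \<longrightarrow> Trg clo (Dom clo b) = Src clo (Dom clo a) \<longrightarrow>
        Hc2 clo (Hc2 clo a b) c = Hc2 clo a (Hc2 clo b c)"
    by (simp add: clo_def ccell_iff barC_def carr_iff)
  show "\<forall>a\<in>Cell clo. Hc2 clo (Id2 clo (Id1 clo (Trg clo (Dom clo a)))) a = a \<and>
        Hc2 clo a (Id2 clo (Id1 clo (Src clo (Dom clo a)))) = a"
    by (simp add: clo_def ccell_iff barC_def carr_iff barId_def)
  show "\<forall>u\<in>Arr clo. \<forall>w\<in>Arr clo. Trg clo w = Src clo u \<longrightarrow> Hc2 clo (Id2 clo u) (Id2 clo w) = Id2 clo (Hc1 clo u w)"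
    by (simp add: clo_def barC_def)
  show "\<forall>a\<in>Cell clo. \<forall>b\<in>Cell clo. \<forall>c\<in>Cell clo. \<forall>d\<in>Cell clo.
        Cod clo b = Dom clo a \<longrightarrow> Cod clo d = Dom clo c \<longrightarrow> Trg clo (Dom clo c) = Src clo (Dom clo a) \<longrightarrow>
        Hc2 clo (Vc clo a b) (Vc clo c d) = Vc clo (Hc2 clo a c) (Hc2 clo b d)"
  proof (intro ballI impI)
    fix a b c d assume h: "a \<in> Cell clo" "b \<in> Cell clo" "c \<in> Cell clo" "d \<in> Cell clo"
      "Cod clo b = Dom clo a" "Cod clo d = Dom clo c"
    then have "ccell a" "ccell b" "ccell c" "ccell d" "snd (snd b) = fst (snd a)" "snd (snd d) = fst (snd c)"
      by (simp_all add: clo_def)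
    then have "ce (fst a)" "ce (fst b)" "ce (fst c)" "ce (fst d)" "Cod K (fst b) = Dom K (fst a)" "Cod K (fst d) = Dom K (fst c)"
      unfolding ccell_iff by auto
    then have "Hc2 K (Vc K (fst a) (fst b)) (Vc K (fst c) (fst d)) = Vc K (Hc2 K (fst a) (fst c)) (Hc2 K (fst b) (fst d))"
      by (rule ichg)
    then show "Hc2 clo (Vc clo a b) (Vc clo c d) = Vc clo (Hc2 clo a c) (Hc2 clo b d)" by (simp add: clo_def)
  qed
qed

end


context TC begin

abbreviation idt ("\<iota>") where "\<iota> \<equiv> Id2 K"

lemma Id_merge[simp]: "ar u \<Longrightarrow> ar w \<Longrightarrow> ce x \<Longrightarrow> \<iota> u \<otimes> \<iota> w \<otimes> x = \<iota> (u \<cdot> w) \<otimes> x"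
  by (simp flip: H_assoc)
lemma split_l[simp]: "ar p \<Longrightarrow> ce x \<Longrightarrow> ce y \<Longrightarrow> Cod K y = Dom K x \<Longrightarrow> \<iota> p \<otimes> (x \<odot> y) = (\<iota> p \<otimes> x) \<odot> (\<iota> p \<otimes> y)"
  using ichg[of "\<iota> p" "\<iota> p" x y] by simp
lemma split_r[simp]: "ar p \<Longrightarrow> ce x \<Longrightarrow> ce y \<Longrightarrow> Cod K y = Dom K x \<Longrightarrow> (x \<odot> y) \<otimes> \<iota> p = (x \<otimes> \<iota> p) \<odot> (y \<otimes> \<iota> p)"
  using ichg[of x y "\<iota> p" "\<iota> p"] by simp
lemma chain_id[simp]: "ce x \<Longrightarrow> ce y \<Longrightarrow> Dom K x = w \<Longrightarrow> Cod K y = w \<Longrightarrow> x \<odot> \<iota> w \<odot> y = x \<odot> y"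
proof -
  assume h: "ce x" "ce y" "Dom K x = w" "Cod K y = w"
  then have "x \<odot> \<iota> w \<odot> y = (x \<odot> \<iota> w) \<odot> y" by (intro V_assoc[symmetric]) auto
  then show ?thesis using h by simp
qed

lemma whisk: "x = y \<Longrightarrow> \<iota> p \<otimes> x \<otimes> \<iota> q = \<iota> p \<otimes> y \<otimes> \<iota> q" by simp
lemma whz: "x = y \<Longrightarrow> (\<And>z. ce z \<Longrightarrow> Cod K z = Dom K (\<iota> p \<otimes> x \<otimes> \<iota> q) \<Longrightarrow> (\<iota> p \<otimes> x \<otimes> \<iota> q) \<odot> z = (\<iota> p \<otimes> y \<otimes> \<iota> q) \<odot> z)" by simp
lemma sep: "ce x \<Longrightarrow> ce y \<Longrightarrow> x \<otimes> y = (x \<otimes> \<iota> (Cod K y)) \<odot> (\<iota> (Dom K x) \<otimes> y)"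
  using ichg[of x "\<iota> (Dom K x)" "\<iota> (Cod K y)" y] by simp
lemma sep': "ce x \<Longrightarrow> ce y \<Longrightarrow> x \<otimes> y = (\<iota> (Cod K x) \<otimes> y) \<odot> (x \<otimes> \<iota> (Dom K y))"
  using ichg[of "\<iota> (Cod K x)" x y "\<iota> (Dom K y)"] by simp
lemma wunit: "x \<odot> y = \<iota> w \<Longrightarrow> ce x \<Longrightarrow> ce y \<Longrightarrow> Cod K y = Dom K x \<Longrightarrow> ar w \<Longrightarrow> ar p \<Longrightarrow> ar q \<Longrightarrow>
   (\<iota> p \<otimes> x \<otimes> \<iota> q) \<odot> (\<iota> p \<otimes> y \<otimes> \<iota> q) = \<iota> (p \<cdot> w \<cdot> q)"
proof -
  assume h: "x \<odot> y = \<iota> w" "ce x" "ce y" "Cod K y = Dom K x" "ar w" "ar p" "ar q"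
  have e: "(\<iota> p \<otimes> x \<otimes> \<iota> q) \<odot> (\<iota> p \<otimes> y \<otimes> \<iota> q) = \<iota> p \<otimes> (x \<odot> y) \<otimes> \<iota> q" using h(2-7) by simp
  show ?thesis unfolding e h(1) using h by simp
qed
lemma wunitz: "x \<odot> y = \<iota> w \<Longrightarrow> ce x \<Longrightarrow> ce y \<Longrightarrow> Cod K y = Dom K x \<Longrightarrow> ar w \<Longrightarrow> ar p \<Longrightarrow> ar q \<Longrightarrow> ce z \<Longrightarrow>
   Cod K z = Dom K (\<iota> p \<otimes> y \<otimes> \<iota> q) \<Longrightarrow>
   (\<iota> p \<otimes> x \<otimes> \<iota> q) \<odot> (\<iota> p \<otimes> y \<otimes> \<iota> q) \<odot> z = z"
proof -
  assume h: "x \<odot> y = \<iota> w" "ce x" "ce y" "Cod K y = Dom K x" "ar w" "ar p" "ar q" "ce z" "Cod K z = Dom K (\<iota> p \<otimes> y \<otimes> \<iota> q)"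
  have w: "(\<iota> p \<otimes> x \<otimes> \<iota> q) \<odot> (\<iota> p \<otimes> y \<otimes> \<iota> q) = \<iota> (p \<cdot> w \<cdot> q)" by (rule wunit[OF h(1-7)])
  have "Dom K (\<iota> p \<otimes> y \<otimes> \<iota> q) = p \<cdot> w \<cdot> q"
  proof -
    have "Dom K ((\<iota> p \<otimes> x \<otimes> \<iota> q) \<odot> (\<iota> p \<otimes> y \<otimes> \<iota> q)) = Dom K (\<iota> p \<otimes> y \<otimes> \<iota> q)"
      using h by simp
    then show ?thesis using w h by simp
  qed
  have "(\<iota> p \<otimes> x \<otimes> \<iota> q) \<odot> (\<iota> p \<otimes> y \<otimes> \<iota> q) \<odot> z = ((\<iota> p \<otimes> x \<otimes> \<iota> q) \<odot> (\<iota> p \<otimes> y \<otimes> \<iota> q)) \<odot> z"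
    using h by simp
  also have "\<dots> = \<iota> (p \<cdot> w \<cdot> q) \<odot> z" using w by simp
  also have "\<dots> = z" using h \<open>Dom K (\<iota> p \<otimes> y \<otimes> \<iota> q) = p \<cdot> w \<cdot> q\<close> by simp
  finally show ?thesis .
qed
lemma extc: "x = y \<Longrightarrow> (\<And>z. ce z \<Longrightarrow> Cod K z = Dom K x \<Longrightarrow> x \<odot> z = y \<odot> z)" by simp

lemma swap: "ce x \<Longrightarrow> ce y \<Longrightarrow> ar p \<Longrightarrow> ar m \<Longrightarrow> ar q \<Longrightarrow>
  (\<iota> p \<otimes> \<iota> (Cod K x) \<otimes> \<iota> m \<otimes> y \<otimes> \<iota> q) \<odot> (\<iota> p \<otimes> x \<otimes> \<iota> m \<otimes> \<iota> (Dom K y) \<otimes> \<iota> q)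
  = (\<iota> p \<otimes> x \<otimes> \<iota> m \<otimes> \<iota> (Cod K y) \<otimes> \<iota> q) \<odot> (\<iota> p \<otimes> \<iota> (Dom K x) \<otimes> \<iota> m \<otimes> y \<otimes> \<iota> q)"
  by (simp del: Id_merge H_Id2 split_l split_r add: fuse)

lemma swapz: "ce x \<Longrightarrow> ce y \<Longrightarrow> ar p \<Longrightarrow> ar m \<Longrightarrow> ar q \<Longrightarrow> ce z \<Longrightarrow>
  Cod K z = Dom K (\<iota> p \<otimes> x \<otimes> \<iota> m \<otimes> \<iota> (Dom K y) \<otimes> \<iota> q) \<Longrightarrow>
  (\<iota> p \<otimes> \<iota> (Cod K x) \<otimes> \<iota> m \<otimes> y \<otimes> \<iota> q) \<odot> (\<iota> p \<otimes> x \<otimes> \<iota> m \<otimes> \<iota> (Dom K y) \<otimes> \<iota> q) \<odot> z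
  = (\<iota> p \<otimes> x \<otimes> \<iota> m \<otimes> \<iota> (Cod K y) \<otimes> \<iota> q) \<odot> (\<iota> p \<otimes> \<iota> (Dom K x) \<otimes> \<iota> m \<otimes> y \<otimes> \<iota> q) \<odot> z"
proof -
  assume h: "ce x" "ce y" "ar p" "ar m" "ar q" "ce z" 
    "Cod K z = Dom K (\<iota> p \<otimes> x \<otimes> \<iota> m \<otimes> \<iota> (Dom K y) \<otimes> \<iota> q)"
  note sw = swap[OF h(1-5)]
  have "((\<iota> p \<otimes> \<iota> (Cod K x) \<otimes> \<iota> m \<otimes> y \<otimes> \<iota> q) \<odot> (\<iota> p \<otimes> x \<otimes> \<iota> m \<otimes> \<iota> (Dom K y) \<otimes> \<iota> q)) \<odot> z
  = ((\<iota> p \<otimes> x \<otimes> \<iota> m \<otimes> \<iota> (Cod K y) \<otimes> \<iota> q) \<odot> (\<iota> p \<otimes> \<iota> (Dom K x) \<otimes> \<iota> m \<otimes> y \<otimes> \<iota> q)) \<odot> z"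
    by (subst sw) (rule refl)
  then show ?thesis using h by (simp del: Id_merge H_Id2)
qed

definition mon where
  "mon s m h \<longleftrightarrow> ar s \<and> ce m \<and> Dom K m = s \<cdot> s \<and> Cod K m = s \<and> ce h \<and> Dom K h = I \<and> Cod K h = s \<and>
     m \<odot> (m \<otimes> \<iota> s) = m \<odot> (\<iota> s \<otimes> m) \<and> m \<odot> (\<iota> s \<otimes> h) = \<iota> s \<and> m \<odot> (h \<otimes> \<iota> s) = \<iota> s"

definition wdl where
  "wdl t mt ht s ms hs l \<longleftrightarrow> mon t mt ht \<and> mon s ms hs \<and> ce l \<and> Dom K l = t \<cdot> s \<and> Cod K l = s \<cdot> t \<and>
     l \<odot> (mt \<otimes> \<iota> s) = (\<iota> s \<otimes> mt) \<odot> (l \<otimes> \<iota> t) \<odot> (\<iota> t \<otimes> l) \<and>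
     l \<odot> (\<iota> t \<otimes> ms) = (ms \<otimes> \<iota> t) \<odot> (\<iota> s \<otimes> l) \<odot> (l \<otimes> \<iota> s) \<and>
     l \<odot> (ht \<otimes> \<iota> s) = (ms \<otimes> \<iota> t) \<odot> (\<iota> s \<otimes> l) \<odot> (\<iota> s \<otimes> \<iota> t \<otimes> hs) \<odot> (\<iota> s \<otimes> ht) \<and>
     l \<odot> (\<iota> t \<otimes> hs) = (\<iota> s \<otimes> mt) \<odot> (l \<otimes> \<iota> t) \<odot> (ht \<otimes> \<iota> s \<otimes> \<iota> t) \<odot> (hs \<otimes> \<iota> t)"

end

locale MON = TC +
  fixes s ms hs assumes mS: "mon s ms hs"
begin
lemma mS_simps[simp]: "ar s" "ce ms" "Dom K ms = s \<cdot> s" "Cod K ms = s" "ce hs" "Dom K hs = I" "Cod K hs = s"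
  "ms \<odot> (\<iota> s \<otimes> hs) = \<iota> s" "ms \<odot> (hs \<otimes> \<iota> s) = \<iota> s"
  using mS by (auto simp: mon_def)
lemma mS_assoc: "ms \<odot> (ms \<otimes> \<iota> s) = ms \<odot> (\<iota> s \<otimes> ms)" using mS by (auto simp: mon_def)
end

locale WD = TC +
  fixes t mt ht s ms hs l assumes W: "wdl t mt ht s ms hs l"
begin
sublocale T: MON K A t mt ht using W by unfold_locales (simp add: wdl_def)
sublocale S: MON K A s ms hs using W by unfold_locales (simp add: wdl_def)
lemma l_simps[simp]: "ce l" "Dom K l = t \<cdot> s" "Cod K l = s \<cdot> t" using W by (auto simp: wdl_def)
lemma ax1: "l \<odot> (mt \<otimes> \<iota> s) = (\<iota> s \<otimes> mt) \<odot> (l \<otimes> \<iota> t) \<odot> (\<iota> t \<otimes> l)" using W by (simp add: wdl_def)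
lemma ax2: "l \<odot> (\<iota> t \<otimes> ms) = (ms \<otimes> \<iota> t) \<odot> (\<iota> s \<otimes> l) \<odot> (l \<otimes> \<iota> s)" using W by (simp add: wdl_def)
lemma ax3: "l \<odot> (ht \<otimes> \<iota> s) = (ms \<otimes> \<iota> t) \<odot> (\<iota> s \<otimes> l) \<odot> (\<iota> (s \<cdot> t) \<otimes> hs) \<odot> (\<iota> s \<otimes> ht)"
  using W by (simp add: wdl_def)
lemma ax4: "l \<odot> (\<iota> t \<otimes> hs) = (\<iota> s \<otimes> mt) \<odot> (l \<otimes> \<iota> t) \<odot> (ht \<otimes> \<iota> (s \<cdot> t)) \<odot> (hs \<otimes> \<iota> t)"
  using W by (simp add: wdl_def)

definition "E1 = (ms \<otimes> \<iota> t) \<odot> (\<iota> s \<otimes> l) \<odot> (\<iota> (s \<cdot> t) \<otimes> hs)"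
definition "E2 = (\<iota> s \<otimes> mt) \<odot> (l \<otimes> \<iota> t) \<odot> (ht \<otimes> \<iota> (s \<cdot> t))"

lemma E1_ty[simp]: "ce E1" "Dom K E1 = s \<cdot> t" "Cod K E1 = s \<cdot> t" unfolding E1_def by simp_all
lemma E2_ty[simp]: "ce E2" "Dom K E2 = s \<cdot> t" "Cod K E2 = s \<cdot> t" unfolding E2_def by simp_all

lemma E1_l: "E1 \<odot> l = l"
proof -
  have 1: "(\<iota> (s \<cdot> t) \<otimes> hs) \<odot> l = (l \<otimes> \<iota> s) \<odot> (\<iota> (t \<cdot> s) \<otimes> hs)"
    using ichg[of "\<iota> (s \<cdot> t)" l hs "\<iota> I"] ichg[of l "\<iota> (t \<cdot> s)" "\<iota> s" hs] by simp
  have "E1 \<odot> l = (ms \<otimes> \<iota> t) \<odot> (\<iota> s \<otimes> l) \<odot> (l \<otimes> \<iota> s) \<odot> (\<iota> (t \<cdot> s) \<otimes> hs)"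
    unfolding E1_def using 1 by simp
  also have "\<dots> = l \<odot> (\<iota> t \<otimes> ms) \<odot> (\<iota> (t \<cdot> s) \<otimes> hs)"
    using ax2[symmetric, THEN extc] by simp
  also have "\<dots> = l" 
    using ichg[of "\<iota> t" "\<iota> t" ms "\<iota> s \<otimes> hs"] by simp
  finally show ?thesis .
qed


lemma E1_ms: "E1 \<odot> (ms \<otimes> \<iota> t) = (ms \<otimes> \<iota> t) \<odot> (\<iota> s \<otimes> E1)"
proof -
  have "(ms \<otimes> \<iota> t) \<odot> (\<iota> s \<otimes> E1) = (ms \<otimes> \<iota> t) \<odot> (\<iota> s \<otimes> ms \<otimes> \<iota> t) \<odot> (\<iota> (s \<cdot> s) \<otimes> l) \<odot> (\<iota> (s \<cdot> s \<cdot> t) \<otimes> hs)"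
    unfolding E1_def by simp
  also have "\<dots> = (ms \<otimes> \<iota> t) \<odot> (ms \<otimes> \<iota> (s \<cdot> t)) \<odot> (\<iota> (s \<cdot> s) \<otimes> l) \<odot> (\<iota> (s \<cdot> s \<cdot> t) \<otimes> hs)"
    using S.mS_assoc[symmetric, THEN whz[where p=I and q=t]] by simp
  also have "\<dots> = (ms \<otimes> \<iota> t) \<odot> (\<iota> s \<otimes> l) \<odot> (ms \<otimes> \<iota> (t \<cdot> s)) \<odot> (\<iota> (s \<cdot> s \<cdot> t) \<otimes> hs)"
    using swapz[of ms l I I I, symmetric] by simp
  also have "\<dots> = (ms \<otimes> \<iota> t) \<odot> (\<iota> s \<otimes> l) \<odot> (\<iota> (s \<cdot> t) \<otimes> hs) \<odot> (ms \<otimes> \<iota> t)"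
    using swap[of ms hs I t I, symmetric] by simp
  also have "\<dots> = E1 \<odot> (ms \<otimes> \<iota> t)" unfolding E1_def by simp
  finally show ?thesis by simp
qed


lemma E2_mt: "E2 \<odot> (\<iota> s \<otimes> mt) = (\<iota> s \<otimes> mt) \<odot> (E2 \<otimes> \<iota> t)"
proof -
  have "(\<iota> s \<otimes> mt) \<odot> (E2 \<otimes> \<iota> t) = (\<iota> s \<otimes> mt) \<odot> (\<iota> s \<otimes> mt \<otimes> \<iota> t) \<odot> (l \<otimes> \<iota> (t \<cdot> t)) \<odot> (ht \<otimes> \<iota> (s \<cdot> t \<cdot> t))"
    unfolding E2_def by simp
  also have "\<dots> = (\<iota> s \<otimes> mt) \<odot> (\<iota> (s \<cdot> t) \<otimes> mt) \<odot> (l \<otimes> \<iota> (t \<cdot> t)) \<odot> (ht \<otimes> \<iota> (s \<cdot> t \<cdot> t))"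
    using T.mS_assoc[THEN whz[where p=s and q=I]] by simp
  also have "\<dots> = (\<iota> s \<otimes> mt) \<odot> (l \<otimes> \<iota> t) \<odot> (\<iota> (t \<cdot> s) \<otimes> mt) \<odot> (ht \<otimes> \<iota> (s \<cdot> t \<cdot> t))"
    using swapz[of l mt I I I] by simp
  also have "\<dots> = (\<iota> s \<otimes> mt) \<odot> (l \<otimes> \<iota> t) \<odot> (ht \<otimes> \<iota> (s \<cdot> t)) \<odot> (\<iota> s \<otimes> mt)"
    using swap[of ht mt I s I] by simp
  also have "\<dots> = E2 \<odot> (\<iota> s \<otimes> mt)" unfolding E2_def by simp
  finally show ?thesis by simp
qed

lemma E1_E2: "E1 = E2"
proof -
  have "E1 = (ms \<otimes> \<iota> t) \<odot> (\<iota> s \<otimes> l) \<odot> (\<iota> (s \<cdot> t) \<otimes> hs)" unfolding E1_def by simp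
  also have "\<dots> = (ms \<otimes> \<iota> t) \<odot> (\<iota> (s \<cdot> s) \<otimes> mt) \<odot> (\<iota> s \<otimes> l \<otimes> \<iota> t) \<odot> (\<iota> s \<otimes> ht \<otimes> \<iota> (s \<cdot> t)) \<odot> (\<iota> s \<otimes> hs \<otimes> \<iota> t)"
    using ax4[THEN whisk[where p=s and q=I]] by simp
  also have "\<dots> = (\<iota> s \<otimes> mt) \<odot> (ms \<otimes> \<iota> (t \<cdot> t)) \<odot> (\<iota> s \<otimes> l \<otimes> \<iota> t) \<odot> (\<iota> s \<otimes> ht \<otimes> \<iota> (s \<cdot> t)) \<odot> (\<iota> s \<otimes> hs \<otimes> \<iota> t)"
    using swapz[of ms mt I I I, symmetric] by simp
  also have "\<dots> = (\<iota> s \<otimes> mt) \<odot> (ms \<otimes> \<iota> (t \<cdot> t)) \<odot> (\<iota> s \<otimes> l \<otimes> \<iota> t) \<odot> (\<iota> (s \<cdot> t) \<otimes> hs \<otimes> \<iota> t) \<odot> (\<iota> s \<otimes> ht \<otimes> \<iota> t)"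
    using swap[of ht hs s I t, symmetric] by simp
  also have "\<dots> = (\<iota> s \<otimes> mt) \<odot> (l \<otimes> \<iota> t) \<odot> (ht \<otimes> \<iota> (s \<cdot> t))"
    using ax3[symmetric, THEN whisk[where p=I and q=t]] by simp
  also have "\<dots> = E2" unfolding E2_def by simp
  finally show ?thesis .
qed

lemma E1_mt: "E1 \<odot> (\<iota> s \<otimes> mt) = (\<iota> s \<otimes> mt) \<odot> (E1 \<otimes> \<iota> t)"
  using E2_mt E1_E2 by simp

lemma E1_idem: "E1 \<odot> E1 = E1"
proof -
  have "E1 \<odot> E1 = E1 \<odot> (ms \<otimes> \<iota> t) \<odot> (\<iota> s \<otimes> l) \<odot> (\<iota> (s \<cdot> t) \<otimes> hs)" by (simp add: E1_def)
  also have "\<dots> = (ms \<otimes> \<iota> t) \<odot> (\<iota> s \<otimes> E1) \<odot> (\<iota> s \<otimes> l) \<odot> (\<iota> (s \<cdot> t) \<otimes> hs)"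
    using E1_ms[THEN extc] by simp
  also have "\<dots> = E1"
    using E1_l[THEN whz[where p=s and q=I]] by (simp add: E1_def)
  finally show ?thesis .
qed


definition "muB = (ms \<otimes> \<iota> t) \<odot> (\<iota> (s \<cdot> s) \<otimes> mt) \<odot> (\<iota> s \<otimes> l \<otimes> \<iota> t)"
definition "etaB = l \<odot> (ht \<otimes> hs)"
lemma muB_ty[simp]: "ce muB" "Dom K muB = s \<cdot> t \<cdot> s \<cdot> t" "Cod K muB = s \<cdot> t" unfolding muB_def by simp_all
lemma etaB_ty[simp]: "ce etaB" "Dom K etaB = I" "Cod K etaB = s \<cdot> t" unfolding etaB_def by simp_all
lemma muB_alt: "muB = (ms \<otimes> mt) \<odot> (\<iota> s \<otimes> l \<otimes> \<iota> t)"
  unfolding muB_def using sep[of ms mt] by simp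

lemma E1_muB: "E1 \<odot> muB = muB"
proof -
  have "E1 \<odot> muB = (ms \<otimes> \<iota> t) \<odot> (\<iota> s \<otimes> E1) \<odot> (\<iota> (s \<cdot> s) \<otimes> mt) \<odot> (\<iota> s \<otimes> l \<otimes> \<iota> t)"
    unfolding muB_def using E1_ms[THEN extc] by simp
  also have "\<dots> = (ms \<otimes> \<iota> t) \<odot> (\<iota> (s \<cdot> s) \<otimes> mt) \<odot> (\<iota> s \<otimes> E1 \<otimes> \<iota> t) \<odot> (\<iota> s \<otimes> l \<otimes> \<iota> t)"
    using E1_mt[THEN whz[where p=s and q=I]] by simp
  also have "\<dots> = muB"
    unfolding muB_def using E1_l[THEN whisk[where p=s and q=t]] by simp
  finally show ?thesis .
qed

lemma muB_E2: "muB \<odot> (\<iota> (s \<cdot> t) \<otimes> E2) = muB"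
proof -
  have "muB \<odot> (\<iota> (s \<cdot> t) \<otimes> E2) = (ms \<otimes> \<iota> t) \<odot> (\<iota> (s \<cdot> s) \<otimes> mt) \<odot> (\<iota> s \<otimes> l \<otimes> \<iota> t) \<odot> (\<iota> (s \<cdot> t \<cdot> s) \<otimes> mt)
     \<odot> (\<iota> (s \<cdot> t) \<otimes> l \<otimes> \<iota> t) \<odot> (\<iota> (s \<cdot> t) \<otimes> ht \<otimes> \<iota> (s \<cdot> t))"
    unfolding muB_def E2_def by simp
  also have "\<dots> = (ms \<otimes> \<iota> t) \<odot> (\<iota> (s \<cdot> s) \<otimes> mt) \<odot> (\<iota> (s \<cdot> s \<cdot> t) \<otimes> mt) \<odot> (\<iota> s \<otimes> l \<otimes> \<iota> (t \<cdot> t))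
     \<odot> (\<iota> (s \<cdot> t) \<otimes> l \<otimes> \<iota> t) \<odot> (\<iota> (s \<cdot> t) \<otimes> ht \<otimes> \<iota> (s \<cdot> t))"
    using swapz[of l mt s I I, symmetric] by simp
  also have "\<dots> = (ms \<otimes> \<iota> t) \<odot> (\<iota> (s \<cdot> s) \<otimes> mt) \<odot> (\<iota> (s \<cdot> s) \<otimes> mt \<otimes> \<iota> t) \<odot> (\<iota> s \<otimes> l \<otimes> \<iota> (t \<cdot> t))
     \<odot> (\<iota> (s \<cdot> t) \<otimes> l \<otimes> \<iota> t) \<odot> (\<iota> (s \<cdot> t) \<otimes> ht \<otimes> \<iota> (s \<cdot> t))"
    using T.mS_assoc[symmetric, THEN whz[where p="s \<cdot> s" and q=I]] by simp
  also have "\<dots> = (ms \<otimes> \<iota> t) \<odot> (\<iota> (s \<cdot> s) \<otimes> mt) \<odot> (\<iota> s \<otimes> l \<otimes> \<iota> t) \<odot> (\<iota> s \<otimes> mt \<otimes> \<iota> (s \<cdot> t))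
     \<odot> (\<iota> (s \<cdot> t) \<otimes> ht \<otimes> \<iota> (s \<cdot> t))"
    using ax1[symmetric, THEN whz[where p=s and q=t]] by simp
  also have "\<dots> = muB"
    unfolding muB_def using wunit[OF T.mS_simps(8), of s "s \<cdot> t"] by simp
  finally show ?thesis .
qed

lemma muB_E1r: "muB \<odot> (E1 \<otimes> \<iota> (s \<cdot> t)) = muB"
proof -
  have "muB \<odot> (E1 \<otimes> \<iota> (s \<cdot> t)) = (ms \<otimes> \<iota> t) \<odot> (\<iota> (s \<cdot> s) \<otimes> mt) \<odot> (\<iota> s \<otimes> l \<otimes> \<iota> t) \<odot> (ms \<otimes> \<iota> (t \<cdot> s \<cdot> t))
     \<odot> (\<iota> s \<otimes> l \<otimes> \<iota> (s \<cdot> t)) \<odot> (\<iota> (s \<cdot> t) \<otimes> hs \<otimes> \<iota> (s \<cdot> t))"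
    unfolding muB_def E1_def by simp
  also have "\<dots> = (ms \<otimes> \<iota> t) \<odot> (\<iota> (s \<cdot> s) \<otimes> mt) \<odot> (ms \<otimes> \<iota> (s \<cdot> t \<cdot> t)) \<odot> (\<iota> (s \<cdot> s) \<otimes> l \<otimes> \<iota> t)
     \<odot> (\<iota> s \<otimes> l \<otimes> \<iota> (s \<cdot> t)) \<odot> (\<iota> (s \<cdot> t) \<otimes> hs \<otimes> \<iota> (s \<cdot> t))"
    using swapz[of ms l I I t] by simp
  also have "\<dots> = (ms \<otimes> \<iota> t) \<odot> (ms \<otimes> \<iota> (s \<cdot> t)) \<odot> (\<iota> (s \<cdot> s \<cdot> s) \<otimes> mt) \<odot> (\<iota> (s \<cdot> s) \<otimes> l \<otimes> \<iota> t)
     \<odot> (\<iota> s \<otimes> l \<otimes> \<iota> (s \<cdot> t)) \<odot> (\<iota> (s \<cdot> t) \<otimes> hs \<otimes> \<iota> (s \<cdot> t))"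
    using swapz[of ms mt I s I] by simp
  also have "\<dots> = (ms \<otimes> \<iota> t) \<odot> (\<iota> s \<otimes> ms \<otimes> \<iota> t) \<odot> (\<iota> (s \<cdot> s \<cdot> s) \<otimes> mt) \<odot> (\<iota> (s \<cdot> s) \<otimes> l \<otimes> \<iota> t)
     \<odot> (\<iota> s \<otimes> l \<otimes> \<iota> (s \<cdot> t)) \<odot> (\<iota> (s \<cdot> t) \<otimes> hs \<otimes> \<iota> (s \<cdot> t))"
    using S.mS_assoc[THEN whz[where p=I and q=t]] by simp
  also have "\<dots> = (ms \<otimes> \<iota> t) \<odot> (\<iota> (s \<cdot> s) \<otimes> mt) \<odot> (\<iota> s \<otimes> ms \<otimes> \<iota> (t \<cdot> t)) \<odot> (\<iota> (s \<cdot> s) \<otimes> l \<otimes> \<iota> t)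
     \<odot> (\<iota> s \<otimes> l \<otimes> \<iota> (s \<cdot> t)) \<odot> (\<iota> (s \<cdot> t) \<otimes> hs \<otimes> \<iota> (s \<cdot> t))"
    using swapz[of ms mt s I I, symmetric] by simp
  also have "\<dots> = (ms \<otimes> \<iota> t) \<odot> (\<iota> (s \<cdot> s) \<otimes> mt) \<odot> (\<iota> s \<otimes> l \<otimes> \<iota> t) \<odot> (\<iota> (s \<cdot> t) \<otimes> ms \<otimes> \<iota> t)
     \<odot> (\<iota> (s \<cdot> t) \<otimes> hs \<otimes> \<iota> (s \<cdot> t))"
    using ax2[symmetric, THEN whz[where p=s and q=t]] by simp
  also have "\<dots> = muB"
    unfolding muB_def using wunit[OF S.mS_simps(9), of "s \<cdot> t" t] by simp
  finally show ?thesis .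
qed

lemma muB_EE: "muB \<odot> (E1 \<otimes> E1) = muB"
proof -
  have "muB \<odot> (E1 \<otimes> E1) = muB \<odot> (E1 \<otimes> \<iota> (s \<cdot> t)) \<odot> (\<iota> (s \<cdot> t) \<otimes> E2)"
    using sep[of E1 E1] E1_E2 by simp
  also have "\<dots> = muB" using muB_E1r[THEN extc] muB_E2 by simp
  finally show ?thesis .
qed

lemma E1_etaB: "E1 \<odot> etaB = etaB" unfolding etaB_def using E1_l[THEN extc] by simp

lemma muB_unit1: "muB \<odot> (\<iota> (s \<cdot> t) \<otimes> etaB) = E1"
proof -
  have "muB \<odot> (\<iota> (s \<cdot> t) \<otimes> etaB) = (ms \<otimes> \<iota> t) \<odot> (\<iota> (s \<cdot> s) \<otimes> mt) \<odot> (\<iota> s \<otimes> l \<otimes> \<iota> t) \<odot> (\<iota> (s \<cdot> t) \<otimes> l)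
     \<odot> (\<iota> (s \<cdot> t) \<otimes> ht \<otimes> \<iota> s) \<odot> (\<iota> (s \<cdot> t) \<otimes> hs)"
    unfolding muB_def etaB_def using sep[of ht hs] by simp
  also have "\<dots> = (ms \<otimes> \<iota> t) \<odot> (\<iota> s \<otimes> l) \<odot> (\<iota> s \<otimes> mt \<otimes> \<iota> s) \<odot> (\<iota> (s \<cdot> t) \<otimes> ht \<otimes> \<iota> s) \<odot> (\<iota> (s \<cdot> t) \<otimes> hs)"
    using ax1[symmetric, THEN whz[where p=s and q=I]] by simp
  also have "\<dots> = E1"
    unfolding E1_def using wunitz[OF T.mS_simps(8), of s s] by simp
  finally show ?thesis .
qed

lemma muB_unit2: "muB \<odot> (etaB \<otimes> \<iota> (s \<cdot> t)) = E1"
proof -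
  have "muB \<odot> (etaB \<otimes> \<iota> (s \<cdot> t)) = (ms \<otimes> \<iota> t) \<odot> (\<iota> (s \<cdot> s) \<otimes> mt) \<odot> (\<iota> s \<otimes> l \<otimes> \<iota> t) \<odot> (l \<otimes> \<iota> (s \<cdot> t))
     \<odot> (ht \<otimes> \<iota> (s \<cdot> s \<cdot> t)) \<odot> (hs \<otimes> \<iota> (s \<cdot> t))"
    unfolding muB_def etaB_def using sep[of ht "hs \<otimes> \<iota> (s \<cdot> t)"] by simp
  also have "\<dots> = (\<iota> s \<otimes> mt) \<odot> (ms \<otimes> \<iota> (t \<cdot> t)) \<odot> (\<iota> s \<otimes> l \<otimes> \<iota> t) \<odot> (l \<otimes> \<iota> (s \<cdot> t))
     \<odot> (ht \<otimes> \<iota> (s \<cdot> s \<cdot> t)) \<odot> (hs \<otimes> \<iota> (s \<cdot> t))"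
    using swapz[of ms mt I I I, symmetric] by simp
  also have "\<dots> = (\<iota> s \<otimes> mt) \<odot> (l \<otimes> \<iota> t) \<odot> (\<iota> t \<otimes> ms \<otimes> \<iota> t)
     \<odot> (ht \<otimes> \<iota> (s \<cdot> s \<cdot> t)) \<odot> (hs \<otimes> \<iota> (s \<cdot> t))"
    using ax2[symmetric, THEN whz[where p=I and q=t]] by simp
  also have "\<dots> = (\<iota> s \<otimes> mt) \<odot> (l \<otimes> \<iota> t) \<odot> (ht \<otimes> \<iota> (s \<cdot> t)) \<odot> (ms \<otimes> \<iota> t) \<odot> (hs \<otimes> \<iota> (s \<cdot> t))"
    using swapz[of ht ms I I t] by simp
  also have "\<dots> = E2"
    unfolding E2_def using wunit[OF S.mS_simps(9), of I t] by simp
  finally show ?thesis using E1_E2 by simp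
qed

lemma muB_assoc: "muB \<odot> (muB \<otimes> \<iota> (s \<cdot> t)) = muB \<odot> (\<iota> (s \<cdot> t) \<otimes> muB)"
proof -
  have "muB \<odot> (muB \<otimes> \<iota> (s \<cdot> t)) = (ms \<otimes> \<iota> t) \<odot> (\<iota> (s \<cdot> s) \<otimes> mt) \<odot> (\<iota> s \<otimes> l \<otimes> \<iota> t) \<odot> (ms \<otimes> \<iota> (t \<cdot> s \<cdot> t))
     \<odot> (\<iota> (s \<cdot> s) \<otimes> mt \<otimes> \<iota> (s \<cdot> t)) \<odot> (\<iota> s \<otimes> l \<otimes> \<iota> (t \<cdot> s \<cdot> t))"
    unfolding muB_def by simp
  also have "\<dots> = (ms \<otimes> \<iota> t) \<odot> (\<iota> (s \<cdot> s) \<otimes> mt) \<odot> (ms \<otimes> \<iota> (s \<cdot> t \<cdot> t)) \<odot> (\<iota> (s \<cdot> s) \<otimes> l \<otimes> \<iota> t)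
     \<odot> (\<iota> (s \<cdot> s) \<otimes> mt \<otimes> \<iota> (s \<cdot> t)) \<odot> (\<iota> s \<otimes> l \<otimes> \<iota> (t \<cdot> s \<cdot> t))"
    using swapz[of ms l I I t] by simp
  also have "\<dots> = (ms \<otimes> \<iota> t) \<odot> (ms \<otimes> \<iota> (s \<cdot> t)) \<odot> (\<iota> (s \<cdot> s \<cdot> s) \<otimes> mt) \<odot> (\<iota> (s \<cdot> s) \<otimes> l \<otimes> \<iota> t)
     \<odot> (\<iota> (s \<cdot> s) \<otimes> mt \<otimes> \<iota> (s \<cdot> t)) \<odot> (\<iota> s \<otimes> l \<otimes> \<iota> (t \<cdot> s \<cdot> t))"
    using swapz[of ms mt I s I] by simp
  also have "\<dots> = (ms \<otimes> \<iota> t) \<odot> (\<iota> s \<otimes> ms \<otimes> \<iota> t) \<odot> (\<iota> (s \<cdot> s \<cdot> s) \<otimes> mt) \<odot> (\<iota> (s \<cdot> s) \<otimes> l \<otimes> \<iota> t)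
     \<odot> (\<iota> (s \<cdot> s) \<otimes> mt \<otimes> \<iota> (s \<cdot> t)) \<odot> (\<iota> s \<otimes> l \<otimes> \<iota> (t \<cdot> s \<cdot> t))"
    using S.mS_assoc[THEN whz[where p=I and q=t]] by simp
  also have "\<dots> = (ms \<otimes> \<iota> t) \<odot> (\<iota> s \<otimes> ms \<otimes> \<iota> t) \<odot> (\<iota> (s \<cdot> s \<cdot> s) \<otimes> mt) \<odot> (\<iota> (s \<cdot> s \<cdot> s) \<otimes> mt \<otimes> \<iota> t)
     \<odot> (\<iota> (s \<cdot> s) \<otimes> l \<otimes> \<iota> (t \<cdot> t)) \<odot> (\<iota> (s \<cdot> s \<cdot> t) \<otimes> l \<otimes> \<iota> t) \<odot> (\<iota> s \<otimes> l \<otimes> \<iota> (t \<cdot> s \<cdot> t))"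
    using ax1[THEN whz[where p="s \<cdot> s" and q=t]] by simp
  also have "\<dots> = (ms \<otimes> \<iota> t) \<odot> (\<iota> s \<otimes> ms \<otimes> \<iota> t) \<odot> (\<iota> (s \<cdot> s \<cdot> s) \<otimes> mt) \<odot> (\<iota> (s \<cdot> s \<cdot> s \<cdot> t) \<otimes> mt)
     \<odot> (\<iota> (s \<cdot> s) \<otimes> l \<otimes> \<iota> (t \<cdot> t)) \<odot> (\<iota> (s \<cdot> s \<cdot> t) \<otimes> l \<otimes> \<iota> t) \<odot> (\<iota> s \<otimes> l \<otimes> \<iota> (t \<cdot> s \<cdot> t))"
    using T.mS_assoc[THEN whz[where p="s \<cdot> s \<cdot> s" and q=I]] by simp
  also have "\<dots> = (ms \<otimes> \<iota> t) \<odot> (\<iota> s \<otimes> ms \<otimes> \<iota> t) \<odot> (\<iota> (s \<cdot> s \<cdot> s) \<otimes> mt) \<odot> (\<iota> (s \<cdot> s \<cdot> s \<cdot> t) \<otimes> mt)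
     \<odot> (\<iota> (s \<cdot> s) \<otimes> l \<otimes> \<iota> (t \<cdot> t)) \<odot> (\<iota> s \<otimes> l \<otimes> \<iota> (s \<cdot> t \<cdot> t)) \<odot> (\<iota> (s \<cdot> t \<cdot> s) \<otimes> l \<otimes> \<iota> t)"
    using swap[of l l s I t] by simp
  also have "\<dots> = (ms \<otimes> \<iota> t) \<odot> (\<iota> s \<otimes> ms \<otimes> \<iota> t) \<odot> (\<iota> (s \<cdot> s \<cdot> s) \<otimes> mt) \<odot> (\<iota> (s \<cdot> s) \<otimes> l \<otimes> \<iota> t)
     \<odot> (\<iota> (s \<cdot> s \<cdot> t \<cdot> s) \<otimes> mt) \<odot> (\<iota> s \<otimes> l \<otimes> \<iota> (s \<cdot> t \<cdot> t)) \<odot> (\<iota> (s \<cdot> t \<cdot> s) \<otimes> l \<otimes> \<iota> t)"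
    using swapz[of l mt "s \<cdot> s" I I] by simp
  also have "\<dots> = (ms \<otimes> \<iota> t) \<odot> (\<iota> s \<otimes> ms \<otimes> \<iota> t) \<odot> (\<iota> (s \<cdot> s \<cdot> s) \<otimes> mt) \<odot> (\<iota> (s \<cdot> s) \<otimes> l \<otimes> \<iota> t)
     \<odot> (\<iota> s \<otimes> l \<otimes> \<iota> (s \<cdot> t)) \<odot> (\<iota> (s \<cdot> t \<cdot> s \<cdot> s) \<otimes> mt) \<odot> (\<iota> (s \<cdot> t \<cdot> s) \<otimes> l \<otimes> \<iota> t)"
    using swapz[of l mt s s I] by simp
  also have "\<dots> = (ms \<otimes> \<iota> t) \<odot> (\<iota> (s \<cdot> s) \<otimes> mt) \<odot> (\<iota> s \<otimes> ms \<otimes> \<iota> (t \<cdot> t)) \<odot> (\<iota> (s \<cdot> s) \<otimes> l \<otimes> \<iota> t)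
     \<odot> (\<iota> s \<otimes> l \<otimes> \<iota> (s \<cdot> t)) \<odot> (\<iota> (s \<cdot> t \<cdot> s \<cdot> s) \<otimes> mt) \<odot> (\<iota> (s \<cdot> t \<cdot> s) \<otimes> l \<otimes> \<iota> t)"
    using swapz[of ms mt s I I, symmetric] by simp
  also have "\<dots> = (ms \<otimes> \<iota> t) \<odot> (\<iota> (s \<cdot> s) \<otimes> mt) \<odot> (\<iota> s \<otimes> l \<otimes> \<iota> t) \<odot> (\<iota> (s \<cdot> t) \<otimes> ms \<otimes> \<iota> t)
     \<odot> (\<iota> (s \<cdot> t \<cdot> s \<cdot> s) \<otimes> mt) \<odot> (\<iota> (s \<cdot> t \<cdot> s) \<otimes> l \<otimes> \<iota> t)"
    using ax2[symmetric, THEN whz[where p=s and q=t]] by simp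
  also have "\<dots> = muB \<odot> (\<iota> (s \<cdot> t) \<otimes> muB)" unfolding muB_def by simp
  finally show ?thesis .
qed

end


context WD begin
lemma ax3E: "l \<odot> (ht \<otimes> \<iota> s) = E1 \<odot> (\<iota> s \<otimes> ht)" using ax3 unfolding E1_def by simp
lemma ax4E: "l \<odot> (\<iota> t \<otimes> hs) = E2 \<odot> (hs \<otimes> \<iota> t)" using ax4 unfolding E2_def by simp
lemma E2_idem: "E2 \<odot> E2 = E2" using E1_idem E1_E2 by simp
lemma E2_l: "E2 \<odot> l = l" using E1_l E1_E2 by simp
lemma E2_ms: "E2 \<odot> (ms \<otimes> \<iota> t) = (ms \<otimes> \<iota> t) \<odot> (\<iota> s \<otimes> E2)" using E1_ms E1_E2 by simp
lemma muB_mid: "muB \<odot> (\<iota> s \<otimes> ht \<otimes> \<iota> (s \<cdot> t)) \<odot> (\<iota> s \<otimes> hs \<otimes> \<iota> t) = E1"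
proof -
  have "muB \<odot> (\<iota> s \<otimes> ht \<otimes> \<iota> (s \<cdot> t)) \<odot> (\<iota> s \<otimes> hs \<otimes> \<iota> t) = (ms \<otimes> \<iota> t) \<odot> (\<iota> (s \<cdot> s) \<otimes> mt) \<odot> (\<iota> s \<otimes> E1 \<otimes> \<iota> t) \<odot> (\<iota> (s \<cdot> s) \<otimes> ht \<otimes> \<iota> t) \<odot> (\<iota> s \<otimes> hs \<otimes> \<iota> t)"
    unfolding muB_def using ax3E[THEN whz[where p=s and q=t]] by simp
  also have "\<dots> = E1 \<odot> (ms \<otimes> \<iota> t) \<odot> (\<iota> (s \<cdot> s) \<otimes> mt) \<odot> (\<iota> (s \<cdot> s) \<otimes> ht \<otimes> \<iota> t) \<odot> (\<iota> s \<otimes> hs \<otimes> \<iota> t)"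
    using E1_mt[symmetric, THEN whz[where p=s and q=I]] E1_ms[symmetric, THEN extc] by simp
  also have "\<dots> = E1"
    using wunitz[OF T.mS_simps(9), of "s \<cdot> s" I] wunit[OF S.mS_simps(8), of I t] by simp
  finally show ?thesis .
qed
end

locale WD3 = TC +
  fixes s ms hs t mt ht u mu hu a b c
  assumes Wa: "wdl t mt ht s ms hs a" and Wb: "wdl u mu hu s ms hs b" and Wc: "wdl u mu hu t mt ht c"
  and YB: "(a \<otimes> \<iota> u) \<odot> (\<iota> t \<otimes> b) \<odot> (c \<otimes> \<iota> s) = (\<iota> s \<otimes> c) \<odot> (b \<otimes> \<iota> t) \<odot> (\<iota> u \<otimes> a)"
begin
sublocale WA: WD K A t mt ht s ms hs a by unfold_locales (rule Wa)
sublocale WB: WD K A u mu hu s ms hs b by unfold_locales (rule Wb)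
sublocale WC: WD K A u mu hu t mt ht c by unfold_locales (rule Wc)

abbreviation "E \<equiv> WA.E1"

definition "P = (ms \<otimes> \<iota> (t \<cdot> u)) \<odot> (\<iota> s \<otimes> a \<otimes> \<iota> u) \<odot> (\<iota> (s \<cdot> t) \<otimes> b) \<odot> (\<iota> (s \<cdot> t \<cdot> u) \<otimes> hs)"
definition "Q = (\<iota> (s \<cdot> t) \<otimes> mu) \<odot> (\<iota> s \<otimes> c \<otimes> \<iota> u) \<odot> (b \<otimes> \<iota> (t \<cdot> u)) \<odot> (hu \<otimes> \<iota> (s \<cdot> t \<cdot> u))"
lemma P_ty[simp]: "ce P" "Dom K P = s \<cdot> t \<cdot> u" "Cod K P = s \<cdot> t \<cdot> u" unfolding P_def by simp_all
lemma Q_ty[simp]: "ce Q" "Dom K Q = s \<cdot> t \<cdot> u" "Cod K Q = s \<cdot> t \<cdot> u" unfolding Q_def by simp_all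

lemma Lam_P: "(\<iota> s \<otimes> c) \<odot> (b \<otimes> \<iota> t) \<odot> (\<iota> u \<otimes> E) = P \<odot> (\<iota> s \<otimes> c) \<odot> (b \<otimes> \<iota> t)"
proof -
  have "(\<iota> s \<otimes> c) \<odot> (b \<otimes> \<iota> t) \<odot> (\<iota> u \<otimes> E) = (\<iota> s \<otimes> c) \<odot> (b \<otimes> \<iota> t) \<odot> (\<iota> u \<otimes> ms \<otimes> \<iota> t) \<odot> (\<iota> (u \<cdot> s) \<otimes> a) \<odot> (\<iota> (u \<cdot> s \<cdot> t) \<otimes> hs)"
    unfolding WA.E1_def by simp
  also have "\<dots> = (\<iota> s \<otimes> c) \<odot> (ms \<otimes> \<iota> (u \<cdot> t)) \<odot> (\<iota> s \<otimes> b \<otimes> \<iota> t) \<odot> (b \<otimes> \<iota> (s \<cdot> t)) \<odot> (\<iota> (u \<cdot> s) \<otimes> a) \<odot> (\<iota> (u \<cdot> s \<cdot> t) \<otimes> hs)"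
    using WB.ax2[THEN whz[where p=I and q=t]] by simp
  also have "\<dots> = (ms \<otimes> \<iota> (t \<cdot> u)) \<odot> (\<iota> (s \<cdot> s) \<otimes> c) \<odot> (\<iota> s \<otimes> b \<otimes> \<iota> t) \<odot> (\<iota> (s \<cdot> u) \<otimes> a) \<odot> (b \<otimes> \<iota> (t \<cdot> s)) \<odot> (\<iota> (u \<cdot> s \<cdot> t) \<otimes> hs)"
    using swapz[of ms c I I I] swapz[of b a I I I, symmetric] by simp
  also have "\<dots> = (ms \<otimes> \<iota> (t \<cdot> u)) \<odot> (\<iota> s \<otimes> a \<otimes> \<iota> u) \<odot> (\<iota> (s \<cdot> t) \<otimes> b) \<odot> (\<iota> s \<otimes> c \<otimes> \<iota> s) \<odot> (b \<otimes> \<iota> (t \<cdot> s)) \<odot> (\<iota> (u \<cdot> s \<cdot> t) \<otimes> hs)"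
    using YB[symmetric, THEN whz[where p=s and q=I]] by simp
  also have "\<dots> = (ms \<otimes> \<iota> (t \<cdot> u)) \<odot> (\<iota> s \<otimes> a \<otimes> \<iota> u) \<odot> (\<iota> (s \<cdot> t) \<otimes> b) \<odot> (\<iota> (s \<cdot> t \<cdot> u) \<otimes> hs) \<odot> (\<iota> s \<otimes> c) \<odot> (b \<otimes> \<iota> t)"
    using swap[of b hs I t I, symmetric] swapz[of c hs s I I, symmetric] by simp
  also have "\<dots> = P \<odot> (\<iota> s \<otimes> c) \<odot> (b \<otimes> \<iota> t)" unfolding P_def by simp
  finally show ?thesis .
qed

lemma EP: "(E \<otimes> \<iota> u) \<odot> P = P"
proof -
  have "(E \<otimes> \<iota> u) \<odot> P = (ms \<otimes> \<iota> (t \<cdot> u)) \<odot> (\<iota> s \<otimes> E \<otimes> \<iota> u) \<odot> (\<iota> s \<otimes> a \<otimes> \<iota> u) \<odot> (\<iota> (s \<cdot> t) \<otimes> b) \<odot> (\<iota> (s \<cdot> t \<cdot> u) \<otimes> hs)"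
    unfolding P_def using WA.E1_ms[THEN whz[where p=I and q=u]] by simp
  also have "\<dots> = P" unfolding P_def using WA.E1_l[THEN whz[where p=s and q=u]] by simp
  finally show ?thesis .
qed

lemma ELam: "(E \<otimes> \<iota> u) \<odot> (\<iota> s \<otimes> c) \<odot> (b \<otimes> \<iota> t) \<odot> (\<iota> u \<otimes> E) = (\<iota> s \<otimes> c) \<odot> (b \<otimes> \<iota> t) \<odot> (\<iota> u \<otimes> E)"
  using Lam_P EP[THEN extc] by simp


definition "Lam = (\<iota> s \<otimes> c) \<odot> (b \<otimes> \<iota> t) \<odot> (\<iota> u \<otimes> E)"
lemma Lam_ty[simp]: "ce Lam" "Dom K Lam = u \<cdot> s \<cdot> t" "Cod K Lam = s \<cdot> t \<cdot> u" unfolding Lam_def by simp_all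

lemma ELam': "(E \<otimes> \<iota> u) \<odot> Lam = Lam" unfolding Lam_def using ELam by simp
lemma LamE: "Lam \<odot> (\<iota> u \<otimes> E) = Lam" unfolding Lam_def using WA.E1_idem[THEN whisk[where p=u and q=I]] by simp

lemma A1: "Lam \<odot> (mu \<otimes> E) = (E \<otimes> mu) \<odot> (Lam \<otimes> \<iota> u) \<odot> (\<iota> u \<otimes> Lam)"
proof -
  have "Lam \<odot> (mu \<otimes> E) = (\<iota> s \<otimes> c) \<odot> (b \<otimes> \<iota> t) \<odot> (\<iota> u \<otimes> E) \<odot> (mu \<otimes> \<iota> (s \<cdot> t)) \<odot> (\<iota> (u \<cdot> u) \<otimes> E)"
    unfolding Lam_def using sep[of mu E] by simp
  also have "\<dots> = (\<iota> s \<otimes> c) \<odot> (b \<otimes> \<iota> t) \<odot> (mu \<otimes> \<iota> (s \<cdot> t)) \<odot> (\<iota> (u \<cdot> u) \<otimes> E)"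
    using swapz[of mu E I I I] WA.E1_idem[THEN whisk[where p="u \<cdot> u" and q=I]] by simp
  also have "\<dots> = (\<iota> s \<otimes> c) \<odot> (\<iota> s \<otimes> mu \<otimes> \<iota> t) \<odot> (b \<otimes> \<iota> (u \<cdot> t)) \<odot> (\<iota> u \<otimes> b \<otimes> \<iota> t) \<odot> (\<iota> (u \<cdot> u) \<otimes> E)"
    using WB.ax1[THEN whz[where p=I and q=t]] by simp
  also have "\<dots> = (\<iota> (s \<cdot> t) \<otimes> mu) \<odot> (\<iota> s \<otimes> c \<otimes> \<iota> u) \<odot> (\<iota> (s \<cdot> u) \<otimes> c) \<odot> (b \<otimes> \<iota> (u \<cdot> t)) \<odot> (\<iota> u \<otimes> b \<otimes> \<iota> t) \<odot> (\<iota> (u \<cdot> u) \<otimes> E)"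
    using WC.ax1[THEN whz[where p=s and q=I]] by simp
  also have "\<dots> = (\<iota> (s \<cdot> t) \<otimes> mu) \<odot> (\<iota> s \<otimes> c \<otimes> \<iota> u) \<odot> (b \<otimes> \<iota> (t \<cdot> u)) \<odot> (\<iota> (u \<cdot> s) \<otimes> c) \<odot> (\<iota> u \<otimes> b \<otimes> \<iota> t) \<odot> (\<iota> (u \<cdot> u) \<otimes> E)"
    using swapz[of b c I I I] by simp
  finally have L: "Lam \<odot> (mu \<otimes> E) = (\<iota> (s \<cdot> t) \<otimes> mu) \<odot> (\<iota> s \<otimes> c \<otimes> \<iota> u) \<odot> (b \<otimes> \<iota> (t \<cdot> u)) \<odot> (\<iota> (u \<cdot> s) \<otimes> c) \<odot> (\<iota> u \<otimes> b \<otimes> \<iota> t) \<odot> (\<iota> (u \<cdot> u) \<otimes> E)" .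
  have "(E \<otimes> mu) \<odot> (Lam \<otimes> \<iota> u) \<odot> (\<iota> u \<otimes> Lam) = (\<iota> (s \<cdot> t) \<otimes> mu) \<odot> (E \<otimes> \<iota> (u \<cdot> u)) \<odot> (\<iota> s \<otimes> c \<otimes> \<iota> u) \<odot> (b \<otimes> \<iota> (t \<cdot> u)) \<odot> (\<iota> u \<otimes> E \<otimes> \<iota> u)
     \<odot> (\<iota> (u \<cdot> s) \<otimes> c) \<odot> (\<iota> u \<otimes> b \<otimes> \<iota> t) \<odot> (\<iota> (u \<cdot> u) \<otimes> E)"
    unfolding Lam_def using sep'[of E mu] by simp
  also have "\<dots> = (\<iota> (s \<cdot> t) \<otimes> mu) \<odot> (\<iota> s \<otimes> c \<otimes> \<iota> u) \<odot> (b \<otimes> \<iota> (t \<cdot> u)) \<odot> (\<iota> u \<otimes> E \<otimes> \<iota> u)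
     \<odot> (\<iota> (u \<cdot> s) \<otimes> c) \<odot> (\<iota> u \<otimes> b \<otimes> \<iota> t) \<odot> (\<iota> (u \<cdot> u) \<otimes> E)"
    using ELam[THEN whz[where p=I and q=u]] by simp
  also have "\<dots> = (\<iota> (s \<cdot> t) \<otimes> mu) \<odot> (\<iota> s \<otimes> c \<otimes> \<iota> u) \<odot> (b \<otimes> \<iota> (t \<cdot> u)) 
     \<odot> (\<iota> (u \<cdot> s) \<otimes> c) \<odot> (\<iota> u \<otimes> b \<otimes> \<iota> t) \<odot> (\<iota> (u \<cdot> u) \<otimes> E)"
    using ELam[THEN whisk[where p=u and q=I]] by simp
  finally show ?thesis using L by simp
qed

lemma S2: "(\<iota> s \<otimes> c) \<odot> (b \<otimes> \<iota> t) \<odot> (\<iota> u \<otimes> WA.muB) = (WA.muB \<otimes> \<iota> u) \<odot> (\<iota> (s \<cdot> t \<cdot> s) \<otimes> c) \<odot> (\<iota> (s \<cdot> t) \<otimes> b \<otimes> \<iota> t)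
   \<odot> (\<iota> s \<otimes> c \<otimes> \<iota> (s \<cdot> t)) \<odot> (b \<otimes> \<iota> (t \<cdot> s \<cdot> t))"
proof -
  have "(\<iota> s \<otimes> c) \<odot> (b \<otimes> \<iota> t) \<odot> (\<iota> u \<otimes> WA.muB) = (\<iota> s \<otimes> c) \<odot> (b \<otimes> \<iota> t) \<odot> (\<iota> u \<otimes> ms \<otimes> \<iota> t) \<odot> (\<iota> (u \<cdot> s \<cdot> s) \<otimes> mt) \<odot> (\<iota> (u \<cdot> s) \<otimes> a \<otimes> \<iota> t)"
    unfolding WA.muB_def by simp
  also have "\<dots> = (\<iota> s \<otimes> c) \<odot> (ms \<otimes> \<iota> (u \<cdot> t)) \<odot> (\<iota> s \<otimes> b \<otimes> \<iota> t) \<odot> (b \<otimes> \<iota> (s \<cdot> t)) \<odot> (\<iota> (u \<cdot> s \<cdot> s) \<otimes> mt) \<odot> (\<iota> (u \<cdot> s) \<otimes> a \<otimes> \<iota> t)"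
    using WB.ax2[THEN whz[where p=I and q=t]] by simp
  also have "\<dots> = (ms \<otimes> \<iota> (t \<cdot> u)) \<odot> (\<iota> (s \<cdot> s) \<otimes> c) \<odot> (\<iota> (s \<cdot> s \<cdot> u) \<otimes> mt) \<odot> (\<iota> s \<otimes> b \<otimes> \<iota> (t \<cdot> t)) \<odot> (b \<otimes> \<iota> (s \<cdot> t \<cdot> t)) \<odot> (\<iota> (u \<cdot> s) \<otimes> a \<otimes> \<iota> t)"
    using swapz[of ms c I I I] swapz[of b mt I s I, symmetric] swapz[of b mt s I I, symmetric] by simp
  also have "\<dots> = (ms \<otimes> \<iota> (t \<cdot> u)) \<odot> (\<iota> (s \<cdot> s) \<otimes> mt \<otimes> \<iota> u) \<odot> (\<iota> (s \<cdot> s \<cdot> t) \<otimes> c) \<odot> (\<iota> (s \<cdot> s) \<otimes> c \<otimes> \<iota> t) \<odot> (\<iota> s \<otimes> b \<otimes> \<iota> (t \<cdot> t)) \<odot> (b \<otimes> \<iota> (s \<cdot> t \<cdot> t)) \<odot> (\<iota> (u \<cdot> s) \<otimes> a \<otimes> \<iota> t)"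
    using WC.ax2[THEN whz[where p="s \<cdot> s" and q=I]] by simp
  also have "\<dots> = (ms \<otimes> \<iota> (t \<cdot> u)) \<odot> (\<iota> (s \<cdot> s) \<otimes> mt \<otimes> \<iota> u) \<odot> (\<iota> (s \<cdot> s \<cdot> t) \<otimes> c) \<odot> (\<iota> (s \<cdot> s) \<otimes> c \<otimes> \<iota> t) \<odot> (\<iota> s \<otimes> b \<otimes> \<iota> (t \<cdot> t)) \<odot> (\<iota> (s \<cdot> u) \<otimes> a \<otimes> \<iota> t) \<odot> (b \<otimes> \<iota> (t \<cdot> s \<cdot> t))"
    using swap[of b a I I t, symmetric] by simp
  also have "\<dots> = (ms \<otimes> \<iota> (t \<cdot> u)) \<odot> (\<iota> (s \<cdot> s) \<otimes> mt \<otimes> \<iota> u) \<odot> (\<iota> (s \<cdot> s \<cdot> t) \<otimes> c) \<odot> (\<iota> s \<otimes> a \<otimes> \<iota> (u \<cdot> t)) \<odot> (\<iota> (s \<cdot> t) \<otimes> b \<otimes> \<iota> t) \<odot> (\<iota> s \<otimes> c \<otimes> \<iota> (s \<cdot> t)) \<odot> (b \<otimes> \<iota> (t \<cdot> s \<cdot> t))"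
    using YB[symmetric, THEN whz[where p=s and q=t]] by simp
  also have "\<dots> = (ms \<otimes> \<iota> (t \<cdot> u)) \<odot> (\<iota> (s \<cdot> s) \<otimes> mt \<otimes> \<iota> u) \<odot> (\<iota> s \<otimes> a \<otimes> \<iota> (t \<cdot> u)) \<odot> (\<iota> (s \<cdot> t \<cdot> s) \<otimes> c) \<odot> (\<iota> (s \<cdot> t) \<otimes> b \<otimes> \<iota> t) \<odot> (\<iota> s \<otimes> c \<otimes> \<iota> (s \<cdot> t)) \<odot> (b \<otimes> \<iota> (t \<cdot> s \<cdot> t))"
    using swapz[of a c s I I] by simp
  also have "\<dots> = (WA.muB \<otimes> \<iota> u) \<odot> (\<iota> (s \<cdot> t \<cdot> s) \<otimes> c) \<odot> (\<iota> (s \<cdot> t) \<otimes> b \<otimes> \<iota> t) \<odot> (\<iota> s \<otimes> c \<otimes> \<iota> (s \<cdot> t)) \<odot> (b \<otimes> \<iota> (t \<cdot> s \<cdot> t))"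
    unfolding WA.muB_def by simp
  finally show ?thesis .
qed

lemma A2: "Lam \<odot> (\<iota> u \<otimes> WA.muB) = (WA.muB \<otimes> \<iota> u) \<odot> (E \<otimes> Lam) \<odot> (Lam \<otimes> E)"
proof -
  have "Lam \<odot> (\<iota> u \<otimes> WA.muB) = (\<iota> s \<otimes> c) \<odot> (b \<otimes> \<iota> t) \<odot> (\<iota> u \<otimes> WA.muB)"
    unfolding Lam_def using WA.E1_muB[THEN whisk[where p=u and q=I]] by simp
  also have "\<dots> = (\<iota> s \<otimes> c) \<odot> (b \<otimes> \<iota> t) \<odot> (\<iota> u \<otimes> WA.muB) \<odot> (\<iota> u \<otimes> E \<otimes> \<iota> (s \<cdot> t)) \<odot> (\<iota> (u \<cdot> s \<cdot> t) \<otimes> E)"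
    using WA.muB_EE[symmetric, THEN whisk[where p=u and q=I]] sep[of E E] by simp
  also have "\<dots> = (WA.muB \<otimes> \<iota> u) \<odot> (\<iota> (s \<cdot> t \<cdot> s) \<otimes> c) \<odot> (\<iota> (s \<cdot> t) \<otimes> b \<otimes> \<iota> t)
   \<odot> (\<iota> s \<otimes> c \<otimes> \<iota> (s \<cdot> t)) \<odot> (b \<otimes> \<iota> (t \<cdot> s \<cdot> t)) \<odot> (\<iota> u \<otimes> E \<otimes> \<iota> (s \<cdot> t)) \<odot> (\<iota> (u \<cdot> s \<cdot> t) \<otimes> E)"
    using S2[THEN extc] by simp
  finally have L: "Lam \<odot> (\<iota> u \<otimes> WA.muB) = (WA.muB \<otimes> \<iota> u) \<odot> (\<iota> (s \<cdot> t \<cdot> s) \<otimes> c) \<odot> (\<iota> (s \<cdot> t) \<otimes> b \<otimes> \<iota> t)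
   \<odot> (\<iota> s \<otimes> c \<otimes> \<iota> (s \<cdot> t)) \<odot> (b \<otimes> \<iota> (t \<cdot> s \<cdot> t)) \<odot> (\<iota> u \<otimes> E \<otimes> \<iota> (s \<cdot> t)) \<odot> (\<iota> (u \<cdot> s \<cdot> t) \<otimes> E)" .
  have "(WA.muB \<otimes> \<iota> u) \<odot> (E \<otimes> Lam) \<odot> (Lam \<otimes> E) = (WA.muB \<otimes> \<iota> u) \<odot> (E \<otimes> \<iota> (s \<cdot> t \<cdot> u)) \<odot> (\<iota> (s \<cdot> t) \<otimes> Lam) \<odot> (Lam \<otimes> \<iota> (s \<cdot> t)) \<odot> (\<iota> (u \<cdot> s \<cdot> t) \<otimes> E)"
    using sep[of E Lam] sep[of Lam E] by simp
  also have "\<dots> = (WA.muB \<otimes> \<iota> u) \<odot> (\<iota> (s \<cdot> t) \<otimes> Lam) \<odot> (Lam \<otimes> \<iota> (s \<cdot> t)) \<odot> (\<iota> (u \<cdot> s \<cdot> t) \<otimes> E)"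
    using WA.muB_E1r[THEN whz[where p=I and q=u]] by simp
  also have "\<dots> = (WA.muB \<otimes> \<iota> u) \<odot> (\<iota> (s \<cdot> t \<cdot> s) \<otimes> c) \<odot> (\<iota> (s \<cdot> t) \<otimes> b \<otimes> \<iota> t) \<odot> (\<iota> (s \<cdot> t \<cdot> u) \<otimes> E)
      \<odot> (\<iota> s \<otimes> c \<otimes> \<iota> (s \<cdot> t)) \<odot> (b \<otimes> \<iota> (t \<cdot> s \<cdot> t)) \<odot> (\<iota> u \<otimes> E \<otimes> \<iota> (s \<cdot> t)) \<odot> (\<iota> (u \<cdot> s \<cdot> t) \<otimes> E)"
    unfolding Lam_def by simp
  also have "\<dots> = (WA.muB \<otimes> \<iota> u) \<odot> (\<iota> (s \<cdot> t \<cdot> s) \<otimes> c) \<odot> (\<iota> (s \<cdot> t) \<otimes> b \<otimes> \<iota> t)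
      \<odot> (\<iota> s \<otimes> c \<otimes> \<iota> (s \<cdot> t)) \<odot> (b \<otimes> \<iota> (t \<cdot> s \<cdot> t)) \<odot> (\<iota> u \<otimes> E \<otimes> \<iota> (s \<cdot> t)) \<odot> (\<iota> (u \<cdot> s \<cdot> t) \<otimes> E) \<odot> (\<iota> (u \<cdot> s \<cdot> t) \<otimes> E)"
    using swapz[of c E s I I] swapz[of b E I t I] swapz[of E E u I I] by simp
  also have "\<dots> = (WA.muB \<otimes> \<iota> u) \<odot> (\<iota> (s \<cdot> t \<cdot> s) \<otimes> c) \<odot> (\<iota> (s \<cdot> t) \<otimes> b \<otimes> \<iota> t)
      \<odot> (\<iota> s \<otimes> c \<otimes> \<iota> (s \<cdot> t)) \<odot> (b \<otimes> \<iota> (t \<cdot> s \<cdot> t)) \<odot> (\<iota> u \<otimes> E \<otimes> \<iota> (s \<cdot> t)) \<odot> (\<iota> (u \<cdot> s \<cdot> t) \<otimes> E)"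
    using WA.E1_idem[THEN whisk[where p="u \<cdot> s \<cdot> t" and q=I]] by simp
  finally show ?thesis using L by simp
qed

lemma Y: "(a \<otimes> \<iota> u) \<odot> (\<iota> t \<otimes> b) \<odot> (WC.E2 \<otimes> \<iota> s) = Q \<odot> (a \<otimes> \<iota> u) \<odot> (\<iota> t \<otimes> b)"
proof -
  have "(a \<otimes> \<iota> u) \<odot> (\<iota> t \<otimes> b) \<odot> (WC.E2 \<otimes> \<iota> s) = (a \<otimes> \<iota> u) \<odot> (\<iota> t \<otimes> b) \<odot> (\<iota> t \<otimes> mu \<otimes> \<iota> s) \<odot> (c \<otimes> \<iota> (u \<cdot> s)) \<odot> (hu \<otimes> \<iota> (t \<cdot> u \<cdot> s))"
    unfolding WC.E2_def by simp
  also have "\<dots> = (a \<otimes> \<iota> u) \<odot> (\<iota> (t \<cdot> s) \<otimes> mu) \<odot> (\<iota> t \<otimes> b \<otimes> \<iota> u) \<odot> (\<iota> (t \<cdot> u) \<otimes> b) \<odot> (c \<otimes> \<iota> (u \<cdot> s)) \<odot> (hu \<otimes> \<iota> (t \<cdot> u \<cdot> s))"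
    using WB.ax1[THEN whz[where p=t and q=I]] by simp
  also have "\<dots> = (\<iota> (s \<cdot> t) \<otimes> mu) \<odot> (a \<otimes> \<iota> (u \<cdot> u)) \<odot> (\<iota> t \<otimes> b \<otimes> \<iota> u) \<odot> (c \<otimes> \<iota> (s \<cdot> u)) \<odot> (\<iota> (u \<cdot> t) \<otimes> b) \<odot> (hu \<otimes> \<iota> (t \<cdot> u \<cdot> s))"
    using swapz[of a mu I I I, symmetric] swapz[of c b I I I] by simp
  also have "\<dots> = (\<iota> (s \<cdot> t) \<otimes> mu) \<odot> (\<iota> s \<otimes> c \<otimes> \<iota> u) \<odot> (b \<otimes> \<iota> (t \<cdot> u)) \<odot> (\<iota> u \<otimes> a \<otimes> \<iota> u) \<odot> (\<iota> (u \<cdot> t) \<otimes> b) \<odot> (hu \<otimes> \<iota> (t \<cdot> u \<cdot> s))"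
    using YB[THEN whz[where p=I and q=u]] by simp
  also have "\<dots> = Q \<odot> (a \<otimes> \<iota> u) \<odot> (\<iota> t \<otimes> b)"
    unfolding Q_def using swap[of hu b I t I] swapz[of hu a I I u] by simp
  finally show ?thesis .
qed

lemma Q_alt: "Q = (\<iota> (s \<cdot> t) \<otimes> mu) \<odot> (\<iota> s \<otimes> c \<otimes> \<iota> u) \<odot> (WB.E1 \<otimes> \<iota> (t \<cdot> u)) \<odot> (\<iota> s \<otimes> hu \<otimes> \<iota> (t \<cdot> u))"
  unfolding Q_def using WB.ax3E[THEN whisk[where p=I and q="t \<cdot> u"]] by simp

lemma Z: "(ms \<otimes> \<iota> (t \<cdot> u)) \<odot> (\<iota> s \<otimes> Q) = Q \<odot> (ms \<otimes> \<iota> (t \<cdot> u))"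
proof -
  have "(ms \<otimes> \<iota> (t \<cdot> u)) \<odot> (\<iota> s \<otimes> Q) = (ms \<otimes> \<iota> (t \<cdot> u)) \<odot> (\<iota> (s \<cdot> s \<cdot> t) \<otimes> mu) \<odot> (\<iota> (s \<cdot> s) \<otimes> c \<otimes> \<iota> u) \<odot> (\<iota> s \<otimes> WB.E1 \<otimes> \<iota> (t \<cdot> u)) \<odot> (\<iota> (s \<cdot> s) \<otimes> hu \<otimes> \<iota> (t \<cdot> u))"
    unfolding Q_alt by simp
  also have "\<dots> = (\<iota> (s \<cdot> t) \<otimes> mu) \<odot> (\<iota> s \<otimes> c \<otimes> \<iota> u) \<odot> (ms \<otimes> \<iota> (u \<cdot> t \<cdot> u)) \<odot> (\<iota> s \<otimes> WB.E1 \<otimes> \<iota> (t \<cdot> u)) \<odot> (\<iota> (s \<cdot> s) \<otimes> hu \<otimes> \<iota> (t \<cdot> u))"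
    using swapz[of ms mu I t I, symmetric] swapz[of ms c I I u, symmetric] by simp
  also have "\<dots> = (\<iota> (s \<cdot> t) \<otimes> mu) \<odot> (\<iota> s \<otimes> c \<otimes> \<iota> u) \<odot> (WB.E1 \<otimes> \<iota> (t \<cdot> u)) \<odot> (ms \<otimes> \<iota> (u \<cdot> t \<cdot> u)) \<odot> (\<iota> (s \<cdot> s) \<otimes> hu \<otimes> \<iota> (t \<cdot> u))"
    using WB.E1_ms[symmetric, THEN whz[where p=I and q="t \<cdot> u"]] by simp
  also have "\<dots> = Q \<odot> (ms \<otimes> \<iota> (t \<cdot> u))"
    unfolding Q_alt using swap[of ms hu I I "t \<cdot> u", symmetric] by simp
  finally show ?thesis .
qed

lemma Wb_eq: "(\<iota> s \<otimes> mu) \<odot> (b \<otimes> \<iota> u) \<odot> (\<iota> u \<otimes> hs \<otimes> \<iota> u) = WB.E2 \<odot> (hs \<otimes> \<iota> u) \<odot> mu"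
proof -
  have "(\<iota> s \<otimes> mu) \<odot> (b \<otimes> \<iota> u) \<odot> (\<iota> u \<otimes> hs \<otimes> \<iota> u) = (\<iota> s \<otimes> mu) \<odot> (WB.E2 \<otimes> \<iota> u) \<odot> (hs \<otimes> \<iota> (u \<cdot> u))"
    using WB.ax4E[THEN whisk[where p=I and q=u]] by simp
  also have "\<dots> = WB.E2 \<odot> (\<iota> s \<otimes> mu) \<odot> (hs \<otimes> \<iota> (u \<cdot> u))"
    using WB.E2_mt[symmetric, THEN extc] by simp
  also have "\<dots> = WB.E2 \<odot> (hs \<otimes> \<iota> u) \<odot> mu"
    using swap[of hs mu I I I] by simp
  finally show ?thesis .
qed

lemma alpha: "Q \<odot> (E \<otimes> \<iota> u) = P \<odot> Q"
proof -
  have "Q \<odot> (E \<otimes> \<iota> u) = (\<iota> (s \<cdot> t) \<otimes> mu) \<odot> (\<iota> s \<otimes> c \<otimes> \<iota> u) \<odot> (b \<otimes> \<iota> (t \<cdot> u)) \<odot> (hu \<otimes> \<iota> (s \<cdot> t \<cdot> u)) \<odot> (ms \<otimes> \<iota> (t \<cdot> u)) \<odot> (\<iota> s \<otimes> a \<otimes> \<iota> u) \<odot> (\<iota> (s \<cdot> t) \<otimes> hs \<otimes> \<iota> u)"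
    unfolding Q_def WA.E1_def by simp
  also have "\<dots> = (\<iota> (s \<cdot> t) \<otimes> mu) \<odot> (\<iota> s \<otimes> c \<otimes> \<iota> u) \<odot> (ms \<otimes> \<iota> (u \<cdot> t \<cdot> u)) \<odot> (\<iota> s \<otimes> b \<otimes> \<iota> (t \<cdot> u)) \<odot> (b \<otimes> \<iota> (s \<cdot> t \<cdot> u)) \<odot> (hu \<otimes> \<iota> (s \<cdot> s \<cdot> t \<cdot> u)) \<odot> (\<iota> s \<otimes> a \<otimes> \<iota> u) \<odot> (\<iota> (s \<cdot> t) \<otimes> hs \<otimes> \<iota> u)"
    using swapz[of hu ms I I "t \<cdot> u", symmetric] WB.ax2[THEN whz[where p=I and q="t \<cdot> u"]] by simp
  also have "\<dots> = (ms \<otimes> \<iota> (t \<cdot> u)) \<odot> (\<iota> (s \<cdot> s \<cdot> t) \<otimes> mu) \<odot> (\<iota> (s \<cdot> s) \<otimes> c \<otimes> \<iota> u) \<odot> (\<iota> s \<otimes> b \<otimes> \<iota> (t \<cdot> u)) \<odot> (b \<otimes> \<iota> (s \<cdot> t \<cdot> u)) \<odot> (\<iota> (u \<cdot> s) \<otimes> a \<otimes> \<iota> u) \<odot> (\<iota> (u \<cdot> s \<cdot> t) \<otimes> hs \<otimes> \<iota> u) \<odot> (hu \<otimes> \<iota> (s \<cdot> t \<cdot> u))"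
    using swapz[of ms c I I u] swapz[of ms mu I t I] swapz[of hu a I s u, symmetric] swap[of hu hs I "s \<cdot> t" u, symmetric] by simp
  also have "\<dots> = (ms \<otimes> \<iota> (t \<cdot> u)) \<odot> (\<iota> (s \<cdot> s \<cdot> t) \<otimes> mu) \<odot> (\<iota> (s \<cdot> s) \<otimes> c \<otimes> \<iota> u) \<odot> (\<iota> s \<otimes> b \<otimes> \<iota> (t \<cdot> u)) \<odot> (\<iota> (s \<cdot> u) \<otimes> a \<otimes> \<iota> u) \<odot> (b \<otimes> \<iota> (t \<cdot> s \<cdot> u)) \<odot> (\<iota> (u \<cdot> s \<cdot> t) \<otimes> hs \<otimes> \<iota> u) \<odot> (hu \<otimes> \<iota> (s \<cdot> t \<cdot> u))"
    using swapz[of b a I I u, symmetric] by simp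
  also have "\<dots> = (ms \<otimes> \<iota> (t \<cdot> u)) \<odot> (\<iota> (s \<cdot> s \<cdot> t) \<otimes> mu) \<odot> (\<iota> s \<otimes> a \<otimes> \<iota> (u \<cdot> u)) \<odot> (\<iota> (s \<cdot> t) \<otimes> b \<otimes> \<iota> u) \<odot> (\<iota> s \<otimes> c \<otimes> \<iota> (s \<cdot> u)) \<odot> (b \<otimes> \<iota> (t \<cdot> s \<cdot> u)) \<odot> (\<iota> (u \<cdot> s \<cdot> t) \<otimes> hs \<otimes> \<iota> u) \<odot> (hu \<otimes> \<iota> (s \<cdot> t \<cdot> u))"
    using YB[symmetric, THEN whz[where p=s and q=u]] by simp
  also have "\<dots> = (ms \<otimes> \<iota> (t \<cdot> u)) \<odot> (\<iota> s \<otimes> a \<otimes> \<iota> u) \<odot> (\<iota> (s \<cdot> t \<cdot> s) \<otimes> mu) \<odot> (\<iota> (s \<cdot> t) \<otimes> b \<otimes> \<iota> u) \<odot> (\<iota> (s \<cdot> t \<cdot> u) \<otimes> hs \<otimes> \<iota> u) \<odot> (\<iota> s \<otimes> c \<otimes> \<iota> u) \<odot> (b \<otimes> \<iota> (t \<cdot> u)) \<odot> (hu \<otimes> \<iota> (s \<cdot> t \<cdot> u))"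
    using swapz[of a mu s I I] swapz[of b hs I t u, symmetric] swapz[of c hs s I u, symmetric] by simp
  also have "\<dots> = (ms \<otimes> \<iota> (t \<cdot> u)) \<odot> (\<iota> s \<otimes> a \<otimes> \<iota> u) \<odot> (\<iota> (s \<cdot> t) \<otimes> WB.E2) \<odot> (\<iota> (s \<cdot> t) \<otimes> hs \<otimes> \<iota> u) \<odot> (\<iota> (s \<cdot> t) \<otimes> mu) \<odot> (\<iota> s \<otimes> c \<otimes> \<iota> u) \<odot> (b \<otimes> \<iota> (t \<cdot> u)) \<odot> (hu \<otimes> \<iota> (s \<cdot> t \<cdot> u))"
    using Wb_eq[THEN whz[where p="s \<cdot> t" and q=I]] by simp
  also have "\<dots> = P \<odot> Q"
    unfolding P_def Q_def using WB.ax4E[THEN whz[where p="s \<cdot> t" and q=I]] by simp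
  finally show ?thesis .
qed

lemma QP: "Q \<odot> P = P \<odot> Q"
proof -
  have "Q \<odot> P = (\<iota> (s \<cdot> t) \<otimes> mu) \<odot> (\<iota> s \<otimes> c \<otimes> \<iota> u) \<odot> (b \<otimes> \<iota> (t \<cdot> u)) \<odot> (hu \<otimes> \<iota> (s \<cdot> t \<cdot> u)) \<odot> (ms \<otimes> \<iota> (t \<cdot> u)) \<odot> (\<iota> s \<otimes> a \<otimes> \<iota> u) \<odot> (\<iota> (s \<cdot> t) \<otimes> b) \<odot> (\<iota> (s \<cdot> t \<cdot> u) \<otimes> hs)"
    unfolding Q_def P_def by simp
  also have "\<dots> = (\<iota> (s \<cdot> t) \<otimes> mu) \<odot> (\<iota> s \<otimes> c \<otimes> \<iota> u) \<odot> (ms \<otimes> \<iota> (u \<cdot> t \<cdot> u)) \<odot> (\<iota> s \<otimes> b \<otimes> \<iota> (t \<cdot> u)) \<odot> (b \<otimes> \<iota> (s \<cdot> t \<cdot> u)) \<odot> (hu \<otimes> \<iota> (s \<cdot> s \<cdot> t \<cdot> u)) \<odot> (\<iota> s \<otimes> a \<otimes> \<iota> u) \<odot> (\<iota> (s \<cdot> t) \<otimes> b) \<odot> (\<iota> (s \<cdot> t \<cdot> u) \<otimes> hs)"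
    using swapz[of hu ms I I "t \<cdot> u", symmetric] WB.ax2[THEN whz[where p=I and q="t \<cdot> u"]] by simp
  also have "\<dots> = (ms \<otimes> \<iota> (t \<cdot> u)) \<odot> (\<iota> (s \<cdot> s \<cdot> t) \<otimes> mu) \<odot> (\<iota> (s \<cdot> s) \<otimes> c \<otimes> \<iota> u) \<odot> (\<iota> s \<otimes> b \<otimes> \<iota> (t \<cdot> u)) \<odot> (b \<otimes> \<iota> (s \<cdot> t \<cdot> u)) \<odot> (\<iota> (u \<cdot> s) \<otimes> a \<otimes> \<iota> u) \<odot> (\<iota> (u \<cdot> s \<cdot> t) \<otimes> b) \<odot> (\<iota> (u \<cdot> s \<cdot> t \<cdot> u) \<otimes> hs) \<odot> (hu \<otimes> \<iota> (s \<cdot> t \<cdot> u))"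
    using swapz[of ms c I I u] swapz[of ms mu I t I] swapz[of hu a I s u, symmetric] swapz[of hu b I "s \<cdot> t" I, symmetric]
      swap[of hu hs I "s \<cdot> t \<cdot> u" I, symmetric] by simp
  also have "\<dots> = (ms \<otimes> \<iota> (t \<cdot> u)) \<odot> (\<iota> (s \<cdot> s \<cdot> t) \<otimes> mu) \<odot> (\<iota> s \<otimes> a \<otimes> \<iota> (u \<cdot> u)) \<odot> (\<iota> (s \<cdot> t) \<otimes> b \<otimes> \<iota> u) \<odot> (\<iota> s \<otimes> c \<otimes> \<iota> (s \<cdot> u)) \<odot> (b \<otimes> \<iota> (t \<cdot> s \<cdot> u)) \<odot> (\<iota> (u \<cdot> s \<cdot> t) \<otimes> b) \<odot> (\<iota> (u \<cdot> s \<cdot> t \<cdot> u) \<otimes> hs) \<odot> (hu \<otimes> \<iota> (s \<cdot> t \<cdot> u))"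
    using swapz[of b a I I u, symmetric] YB[symmetric, THEN whz[where p=s and q=u]] by simp
  also have "\<dots> = (ms \<otimes> \<iota> (t \<cdot> u)) \<odot> (\<iota> s \<otimes> a \<otimes> \<iota> u) \<odot> (\<iota> (s \<cdot> t \<cdot> s) \<otimes> mu) \<odot> (\<iota> (s \<cdot> t) \<otimes> b \<otimes> \<iota> u) \<odot> (\<iota> (s \<cdot> t \<cdot> u) \<otimes> b) \<odot> (\<iota> s \<otimes> c \<otimes> \<iota> (u \<cdot> s)) \<odot> (b \<otimes> \<iota> (t \<cdot> u \<cdot> s)) \<odot> (\<iota> (u \<cdot> s \<cdot> t \<cdot> u) \<otimes> hs) \<odot> (hu \<otimes> \<iota> (s \<cdot> t \<cdot> u))"
    using swapz[of a mu s I I] swapz[of b b I t I, symmetric] swapz[of c b s I I, symmetric] by simp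
  also have "\<dots> = (ms \<otimes> \<iota> (t \<cdot> u)) \<odot> (\<iota> s \<otimes> a \<otimes> \<iota> u) \<odot> (\<iota> (s \<cdot> t) \<otimes> b) \<odot> (\<iota> (s \<cdot> t) \<otimes> mu \<otimes> \<iota> s) \<odot> (\<iota> s \<otimes> c \<otimes> \<iota> (u \<cdot> s)) \<odot> (b \<otimes> \<iota> (t \<cdot> u \<cdot> s)) \<odot> (\<iota> (u \<cdot> s \<cdot> t \<cdot> u) \<otimes> hs) \<odot> (hu \<otimes> \<iota> (s \<cdot> t \<cdot> u))"
    using WB.ax1[symmetric, THEN whz[where p="s \<cdot> t" and q=I]] by simp
  also have "\<dots> = P \<odot> Q"
    unfolding P_def Q_def using swapz[of b hs I "t \<cdot> u" I, symmetric] swapz[of c hs s u I, symmetric] swapz[of mu hs "s \<cdot> t" I I, symmetric] by simp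
  finally show ?thesis .
qed

lemma beta: "Q \<odot> (\<iota> s \<otimes> ht \<otimes> \<iota> u) = (\<iota> s \<otimes> WC.E2) \<odot> (\<iota> s \<otimes> ht \<otimes> \<iota> u) \<odot> WB.E2"
proof -
  have "Q \<odot> (\<iota> s \<otimes> ht \<otimes> \<iota> u) = (\<iota> (s \<cdot> t) \<otimes> mu) \<odot> (\<iota> s \<otimes> c \<otimes> \<iota> u) \<odot> (\<iota> (s \<cdot> u) \<otimes> ht \<otimes> \<iota> u) \<odot> (b \<otimes> \<iota> u) \<odot> (hu \<otimes> \<iota> (s \<cdot> u))"
    unfolding Q_def using swap[of hu ht I s u, symmetric] swapz[of b ht I I u, symmetric] by simp
  also have "\<dots> = (\<iota> (s \<cdot> t) \<otimes> mu) \<odot> (\<iota> s \<otimes> WC.E2 \<otimes> \<iota> u) \<odot> (\<iota> s \<otimes> ht \<otimes> \<iota> (u \<cdot> u)) \<odot> (b \<otimes> \<iota> u) \<odot> (hu \<otimes> \<iota> (s \<cdot> u))"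
    using WC.ax4E[THEN whz[where p=s and q=u]] by simp
  also have "\<dots> = (\<iota> s \<otimes> WC.E2) \<odot> (\<iota> s \<otimes> ht \<otimes> \<iota> u) \<odot> (\<iota> s \<otimes> mu) \<odot> (b \<otimes> \<iota> u) \<odot> (hu \<otimes> \<iota> (s \<cdot> u))"
    using WC.E2_mt[symmetric, THEN whz[where p=s and q=I]] swapz[of ht mu s I I] by simp
  also have "\<dots> = (\<iota> s \<otimes> WC.E2) \<odot> (\<iota> s \<otimes> ht \<otimes> \<iota> u) \<odot> WB.E2" unfolding WB.E2_def by simp
  finally show ?thesis .
qed

lemma Leta: "(\<iota> s \<otimes> c) \<odot> (b \<otimes> \<iota> t) \<odot> (\<iota> u \<otimes> WA.etaB) = Q \<odot> (a \<otimes> \<iota> u) \<odot> (\<iota> t \<otimes> b) \<odot> (ht \<otimes> \<iota> (u \<cdot> s)) \<odot> (\<iota> u \<otimes> hs)"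
proof -
  have "(\<iota> s \<otimes> c) \<odot> (b \<otimes> \<iota> t) \<odot> (\<iota> u \<otimes> WA.etaB) = (\<iota> s \<otimes> c) \<odot> (b \<otimes> \<iota> t) \<odot> (\<iota> u \<otimes> a) \<odot> (\<iota> u \<otimes> ht \<otimes> \<iota> s) \<odot> (\<iota> u \<otimes> hs)"
    unfolding WA.etaB_def using sep[of ht hs] by simp
  also have "\<dots> = (a \<otimes> \<iota> u) \<odot> (\<iota> t \<otimes> b) \<odot> (c \<otimes> \<iota> s) \<odot> (\<iota> u \<otimes> ht \<otimes> \<iota> s) \<odot> (\<iota> u \<otimes> hs)"
    using YB[symmetric, THEN extc] by simp
  also have "\<dots> = (a \<otimes> \<iota> u) \<odot> (\<iota> t \<otimes> b) \<odot> (WC.E2 \<otimes> \<iota> s) \<odot> (ht \<otimes> \<iota> (u \<cdot> s)) \<odot> (\<iota> u \<otimes> hs)"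
    using WC.ax4E[THEN whz[where p=I and q=s]] by simp
  also have "\<dots> = Q \<odot> (a \<otimes> \<iota> u) \<odot> (\<iota> t \<otimes> b) \<odot> (ht \<otimes> \<iota> (u \<cdot> s)) \<odot> (\<iota> u \<otimes> hs)"
    using Y[THEN extc] by simp
  finally show ?thesis .
qed

lemma A4: "Lam \<odot> (\<iota> u \<otimes> WA.etaB) = (E \<otimes> mu) \<odot> (Lam \<otimes> \<iota> u) \<odot> (hu \<otimes> E \<otimes> \<iota> u) \<odot> (WA.etaB \<otimes> \<iota> u)"
proof -
  have "Lam \<odot> (\<iota> u \<otimes> WA.etaB) = Q \<odot> (a \<otimes> \<iota> u) \<odot> (\<iota> t \<otimes> b) \<odot> (ht \<otimes> \<iota> (u \<cdot> s)) \<odot> (\<iota> u \<otimes> hs)"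
    unfolding Lam_def using WA.E1_etaB[THEN whisk[where p=u and q=I]] Leta by simp
  also have "\<dots> = Q \<odot> (E \<otimes> \<iota> u) \<odot> (\<iota> s \<otimes> ht \<otimes> \<iota> u) \<odot> WB.E2 \<odot> (hs \<otimes> \<iota> u)"
    using swapz[of ht b I I I] WA.ax3E[THEN whz[where p=I and q=u]] WB.ax4E by simp
  also have "\<dots> = P \<odot> (\<iota> s \<otimes> WC.E2) \<odot> (\<iota> s \<otimes> ht \<otimes> \<iota> u) \<odot> WB.E2 \<odot> (hs \<otimes> \<iota> u)"
    using alpha[THEN extc] beta[THEN extc] WB.E2_idem[THEN extc] by simp
  finally have L: "Lam \<odot> (\<iota> u \<otimes> WA.etaB) = P \<odot> (\<iota> s \<otimes> WC.E2) \<odot> (\<iota> s \<otimes> ht \<otimes> \<iota> u) \<odot> WB.E2 \<odot> (hs \<otimes> \<iota> u)" .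
  have "(E \<otimes> mu) \<odot> (Lam \<otimes> \<iota> u) \<odot> (hu \<otimes> E \<otimes> \<iota> u) \<odot> (WA.etaB \<otimes> \<iota> u) = (\<iota> (s \<cdot> t) \<otimes> mu) \<odot> (Lam \<otimes> \<iota> u) \<odot> (hu \<otimes> \<iota> (s \<cdot> t \<cdot> u)) \<odot> (E \<otimes> \<iota> u) \<odot> (WA.etaB \<otimes> \<iota> u)"
    using sep'[of E mu] ELam'[THEN whz[where p=I and q=u]] sep[of hu "E \<otimes> \<iota> u"] by simp
  also have "\<dots> = (\<iota> (s \<cdot> t) \<otimes> mu) \<odot> (\<iota> s \<otimes> c \<otimes> \<iota> u) \<odot> (b \<otimes> \<iota> (t \<cdot> u)) \<odot> (hu \<otimes> \<iota> (s \<cdot> t \<cdot> u)) \<odot> (WA.etaB \<otimes> \<iota> u)"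
    unfolding Lam_def using swapz[of hu E I I u] WA.E1_idem[THEN whz[where p=I and q=u]] WA.E1_etaB[THEN whisk[where p=I and q=u]] by simp
  also have "\<dots> = Q \<odot> (a \<otimes> \<iota> u) \<odot> (ht \<otimes> \<iota> (s \<cdot> u)) \<odot> (hs \<otimes> \<iota> u)"
    unfolding Q_def WA.etaB_def using sep[of ht "hs \<otimes> \<iota> u"] by simp
  also have "\<dots> = P \<odot> (\<iota> s \<otimes> WC.E2) \<odot> (\<iota> s \<otimes> ht \<otimes> \<iota> u) \<odot> WB.E2 \<odot> (hs \<otimes> \<iota> u)"
    using WA.ax3E[THEN whz[where p=I and q=u]] alpha[THEN extc] beta[THEN extc] by simp
  finally show ?thesis using L by simp
qed

lemma ab1: "(a \<otimes> \<iota> u) \<odot> (\<iota> t \<otimes> b) \<odot> (WC.muB \<otimes> \<iota> s) = (\<iota> s \<otimes> WC.muB) \<odot> (a \<otimes> \<iota> (u \<cdot> t \<cdot> u)) \<odot> (\<iota> t \<otimes> b \<otimes> \<iota> (t \<cdot> u))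
   \<odot> (\<iota> (t \<cdot> u) \<otimes> a \<otimes> \<iota> u) \<odot> (\<iota> (t \<cdot> u \<cdot> t) \<otimes> b)"
proof -
  have "(a \<otimes> \<iota> u) \<odot> (\<iota> t \<otimes> b) \<odot> (WC.muB \<otimes> \<iota> s) = (a \<otimes> \<iota> u) \<odot> (\<iota> t \<otimes> b) \<odot> (mt \<otimes> \<iota> (u \<cdot> s)) \<odot> (\<iota> (t \<cdot> t) \<otimes> mu \<otimes> \<iota> s) \<odot> (\<iota> t \<otimes> c \<otimes> \<iota> (u \<cdot> s))"
    unfolding WC.muB_def by simp
  also have "\<dots> = (\<iota> s \<otimes> mt \<otimes> \<iota> u) \<odot> (a \<otimes> \<iota> (t \<cdot> u)) \<odot> (\<iota> t \<otimes> a \<otimes> \<iota> u) \<odot> (\<iota> (t \<cdot> t \<cdot> s) \<otimes> mu) \<odot> (\<iota> (t \<cdot> t) \<otimes> b \<otimes> \<iota> u) \<odot> (\<iota> (t \<cdot> t \<cdot> u) \<otimes> b) \<odot> (\<iota> t \<otimes> c \<otimes> \<iota> (u \<cdot> s))"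
    using swapz[of mt b I I I] WA.ax1[THEN whz[where p=I and q=u]] WB.ax1[THEN whz[where p="t \<cdot> t" and q=I]] by simp
  also have "\<dots> = (\<iota> s \<otimes> mt \<otimes> \<iota> u) \<odot> (\<iota> (s \<cdot> t \<cdot> t) \<otimes> mu) \<odot> (a \<otimes> \<iota> (t \<cdot> u \<cdot> u)) \<odot> (\<iota> t \<otimes> a \<otimes> \<iota> (u \<cdot> u)) \<odot> (\<iota> (t \<cdot> t) \<otimes> b \<otimes> \<iota> u) \<odot> (\<iota> t \<otimes> c \<otimes> \<iota> (s \<cdot> u)) \<odot> (\<iota> (t \<cdot> u \<cdot> t) \<otimes> b)"
    using swap[of c b t I I] swapz[of a mu t I I, symmetric] swapz[of a mu I t I, symmetric] by simp
  also have "\<dots> = (\<iota> s \<otimes> mt \<otimes> \<iota> u) \<odot> (\<iota> (s \<cdot> t \<cdot> t) \<otimes> mu) \<odot> (\<iota> (s \<cdot> t) \<otimes> c \<otimes> \<iota> u) \<odot> (a \<otimes> \<iota> (u \<cdot> t \<cdot> u)) \<odot> (\<iota> t \<otimes> b \<otimes> \<iota> (t \<cdot> u)) \<odot> (\<iota> (t \<cdot> u) \<otimes> a \<otimes> \<iota> u) \<odot> (\<iota> (t \<cdot> u \<cdot> t) \<otimes> b)"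
    using YB[THEN whz[where p=t and q=u]] swapz[of a c I I u, symmetric] by simp
  also have "\<dots> = (\<iota> s \<otimes> WC.muB) \<odot> (a \<otimes> \<iota> (u \<cdot> t \<cdot> u)) \<odot> (\<iota> t \<otimes> b \<otimes> \<iota> (t \<cdot> u)) \<odot> (\<iota> (t \<cdot> u) \<otimes> a \<otimes> \<iota> u) \<odot> (\<iota> (t \<cdot> u \<cdot> t) \<otimes> b)"
    unfolding WC.muB_def by simp
  finally show ?thesis .
qed

lemma LamEta: "Lam \<odot> (\<iota> u \<otimes> WA.etaB) = Q \<odot> (a \<otimes> \<iota> u) \<odot> (\<iota> t \<otimes> b) \<odot> (ht \<otimes> \<iota> (u \<cdot> s)) \<odot> (\<iota> u \<otimes> hs)"
  unfolding Lam_def using WA.E1_etaB[THEN whisk[where p=u and q=I]] Leta by simp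

lemma Fh: "(WA.muB \<otimes> \<iota> u) \<odot> (\<iota> (s \<cdot> t) \<otimes> Lam) \<odot> (\<iota> (s \<cdot> t \<cdot> u) \<otimes> WA.etaB) = Q \<odot> P"
proof -
  have "(WA.muB \<otimes> \<iota> u) \<odot> (\<iota> (s \<cdot> t) \<otimes> Lam) \<odot> (\<iota> (s \<cdot> t \<cdot> u) \<otimes> WA.etaB) = (WA.muB \<otimes> \<iota> u) \<odot> (\<iota> (s \<cdot> t) \<otimes> Q) \<odot> (\<iota> (s \<cdot> t) \<otimes> a \<otimes> \<iota> u) \<odot> (\<iota> (s \<cdot> t \<cdot> t) \<otimes> b) \<odot> (\<iota> (s \<cdot> t) \<otimes> ht \<otimes> \<iota> (u \<cdot> s)) \<odot> (\<iota> (s \<cdot> t \<cdot> u) \<otimes> hs)"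
    using LamEta[THEN whisk[where p="s \<cdot> t" and q=I]] by simp
  also have "\<dots> = (ms \<otimes> \<iota> (t \<cdot> u)) \<odot> (\<iota> (s \<cdot> s) \<otimes> mt \<otimes> \<iota> u) \<odot> (\<iota> s \<otimes> a \<otimes> \<iota> (t \<cdot> u)) \<odot> (\<iota> (s \<cdot> t \<cdot> s \<cdot> t) \<otimes> mu) \<odot> (\<iota> (s \<cdot> t \<cdot> s) \<otimes> c \<otimes> \<iota> u) \<odot> (\<iota> (s \<cdot> t) \<otimes> b \<otimes> \<iota> (t \<cdot> u)) \<odot> (\<iota> (s \<cdot> t) \<otimes> hu \<otimes> \<iota> (s \<cdot> t \<cdot> u)) 
       \<odot> (\<iota> (s \<cdot> t) \<otimes> a \<otimes> \<iota> u) \<odot> (\<iota> (s \<cdot> t \<cdot> t) \<otimes> b) \<odot> (\<iota> (s \<cdot> t) \<otimes> ht \<otimes> \<iota> (u \<cdot> s)) \<odot> (\<iota> (s \<cdot> t \<cdot> u) \<otimes> hs)"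
    unfolding WA.muB_def Q_def by simp
  also have "\<dots> = (ms \<otimes> \<iota> (t \<cdot> u)) \<odot> (\<iota> (s \<cdot> s) \<otimes> mt \<otimes> \<iota> u) \<odot> (\<iota> (s \<cdot> s \<cdot> t \<cdot> t) \<otimes> mu) \<odot> (\<iota> (s \<cdot> s \<cdot> t) \<otimes> c \<otimes> \<iota> u) \<odot> (\<iota> s \<otimes> a \<otimes> \<iota> (u \<cdot> t \<cdot> u)) \<odot> (\<iota> (s \<cdot> t) \<otimes> b \<otimes> \<iota> (t \<cdot> u)) 
       \<odot> (\<iota> (s \<cdot> t \<cdot> u) \<otimes> a \<otimes> \<iota> u) \<odot> (\<iota> (s \<cdot> t \<cdot> u \<cdot> t) \<otimes> b) \<odot> (\<iota> (s \<cdot> t) \<otimes> hu \<otimes> \<iota> (t \<cdot> u \<cdot> s)) \<odot> (\<iota> (s \<cdot> t) \<otimes> ht \<otimes> \<iota> (u \<cdot> s)) \<odot> (\<iota> (s \<cdot> t \<cdot> u) \<otimes> hs)"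
    using swapz[of a mu s t I, symmetric] swapz[of a c s I u, symmetric] swapz[of hu a "s \<cdot> t" I u, symmetric] swapz[of hu b "s \<cdot> t" t I, symmetric] by simp
  also have "\<dots> = (ms \<otimes> \<iota> (t \<cdot> u)) \<odot> (\<iota> s \<otimes> a \<otimes> \<iota> u) \<odot> (\<iota> (s \<cdot> t) \<otimes> b) \<odot> (\<iota> s \<otimes> WC.muB \<otimes> \<iota> s) \<odot> (\<iota> (s \<cdot> t) \<otimes> hu \<otimes> \<iota> (t \<cdot> u \<cdot> s)) \<odot> (\<iota> (s \<cdot> t) \<otimes> ht \<otimes> \<iota> (u \<cdot> s)) \<odot> (\<iota> (s \<cdot> t \<cdot> u) \<otimes> hs)"
    using ab1[symmetric, THEN whz[where p=s and q=I]] unfolding WC.muB_def by simp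
  also have "\<dots> = (ms \<otimes> \<iota> (t \<cdot> u)) \<odot> (\<iota> s \<otimes> a \<otimes> \<iota> u) \<odot> (\<iota> (s \<cdot> t) \<otimes> b) \<odot> (\<iota> s \<otimes> WC.E2 \<otimes> \<iota> s) \<odot> (\<iota> (s \<cdot> t \<cdot> u) \<otimes> hs)"
    using WC.muB_mid[THEN whz[where p=s and q=s]] WC.E1_E2 by simp
  also have "\<dots> = (ms \<otimes> \<iota> (t \<cdot> u)) \<odot> (\<iota> s \<otimes> Q) \<odot> (\<iota> s \<otimes> a \<otimes> \<iota> u) \<odot> (\<iota> (s \<cdot> t) \<otimes> b) \<odot> (\<iota> (s \<cdot> t \<cdot> u) \<otimes> hs)"
    using Y[THEN whz[where p=s and q=I]] by simp
  also have "\<dots> = Q \<odot> P" unfolding P_def using Z[THEN extc] by simp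
  finally show ?thesis .
qed

lemma A3: "Lam \<odot> (hu \<otimes> E) = (WA.muB \<otimes> \<iota> u) \<odot> (E \<otimes> Lam) \<odot> (E \<otimes> \<iota> u \<otimes> WA.etaB) \<odot> (E \<otimes> hu)"
proof -
  have "(WA.muB \<otimes> \<iota> u) \<odot> (E \<otimes> Lam) \<odot> (E \<otimes> \<iota> u \<otimes> WA.etaB) \<odot> (E \<otimes> hu)
     = (WA.muB \<otimes> \<iota> u) \<odot> (E \<otimes> \<iota> (s \<cdot> t \<cdot> u)) \<odot> (\<iota> (s \<cdot> t) \<otimes> Lam) \<odot> (E \<otimes> \<iota> (u \<cdot> s \<cdot> t)) \<odot> (\<iota> (s \<cdot> t \<cdot> u) \<otimes> WA.etaB) \<odot> (E \<otimes> \<iota> u) \<odot> (\<iota> (s \<cdot> t) \<otimes> hu)"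
    using sep[of E Lam] sep[of E "\<iota> u \<otimes> WA.etaB"] sep[of E hu] by simp
  also have "\<dots> = (WA.muB \<otimes> \<iota> u) \<odot> (\<iota> (s \<cdot> t) \<otimes> Lam) \<odot> (\<iota> (s \<cdot> t \<cdot> u) \<otimes> WA.etaB) \<odot> (\<iota> (s \<cdot> t) \<otimes> hu)"
    using WA.muB_E1r[THEN whz[where p=I and q=u]] swapz[of E Lam I I I] swapz[of E WA.etaB I u I]
      WA.E1_idem[THEN whz[where p=I and q="u \<cdot> s \<cdot> t"]] WA.E1_idem[THEN whz[where p=I and q="s \<cdot> t \<cdot> u"]] by simp
  also have "\<dots> = Q \<odot> P \<odot> (\<iota> (s \<cdot> t) \<otimes> hu)" using Fh[THEN extc] by simp
  also have "\<dots> = Q \<odot> (E \<otimes> \<iota> u) \<odot> (\<iota> (s \<cdot> t) \<otimes> hu)" using QP[THEN extc] alpha[symmetric, THEN extc] by simp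
  also have "\<dots> = (\<iota> (s \<cdot> t) \<otimes> mu) \<odot> (Lam \<otimes> \<iota> u) \<odot> (hu \<otimes> \<iota> (s \<cdot> t \<cdot> u)) \<odot> (\<iota> (s \<cdot> t) \<otimes> hu)"
    unfolding Q_def Lam_def using swapz[of hu E I I u] by simp
  also have "\<dots> = Lam \<odot> (hu \<otimes> \<iota> (s \<cdot> t))"
    using swap[of hu hu I "s \<cdot> t" I, symmetric] swapz[of Lam hu I I I, symmetric] wunitz[OF WB.T.mS_simps(8), of "s \<cdot> t" I] by simp
  also have "\<dots> = Lam \<odot> (hu \<otimes> E)" using sep'[of hu E] LamE[THEN extc] by simp
  finally show ?thesis by simp
qed

end

locale WD4 = TC +
  fixes s ms hs t mt ht u mu hu v mv hv a b c bv cv d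
  assumes Wa: "wdl t mt ht s ms hs a" and Wb: "wdl u mu hu s ms hs b" and Wc: "wdl u mu hu t mt ht c"
  and Wbv: "wdl v mv hv s ms hs bv" and Wcv: "wdl v mv hv t mt ht cv" and Wd: "wdl v mv hv u mu hu d"
  and YBu: "(a \<otimes> \<iota> u) \<odot> (\<iota> t \<otimes> b) \<odot> (c \<otimes> \<iota> s) = (\<iota> s \<otimes> c) \<odot> (b \<otimes> \<iota> t) \<odot> (\<iota> u \<otimes> a)"
  and YBv: "(a \<otimes> \<iota> v) \<odot> (\<iota> t \<otimes> bv) \<odot> (cv \<otimes> \<iota> s) = (\<iota> s \<otimes> cv) \<odot> (bv \<otimes> \<iota> t) \<odot> (\<iota> v \<otimes> a)"
  and YBs: "(b \<otimes> \<iota> v) \<odot> (\<iota> u \<otimes> bv) \<odot> (d \<otimes> \<iota> s) = (\<iota> s \<otimes> d) \<odot> (bv \<otimes> \<iota> u) \<odot> (\<iota> v \<otimes> b)"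
  and YBt: "(c \<otimes> \<iota> v) \<odot> (\<iota> u \<otimes> cv) \<odot> (d \<otimes> \<iota> t) = (\<iota> t \<otimes> d) \<odot> (cv \<otimes> \<iota> u) \<odot> (\<iota> v \<otimes> c)"
begin
sublocale U: WD3 K A s ms hs t mt ht u mu hu a b c by unfold_locales (rule Wa Wb Wc YBu)+
sublocale V: WD3 K A s ms hs t mt ht v mv hv a bv cv by unfold_locales (rule Wa Wbv Wcv YBv)+
sublocale WDd: WD K A v mv hv u mu hu d by unfold_locales (rule Wd)

lemma YBnew: "(U.Lam \<otimes> \<iota> v) \<odot> (\<iota> u \<otimes> V.Lam) \<odot> (d \<otimes> U.E) = (U.E \<otimes> d) \<odot> (V.Lam \<otimes> \<iota> u) \<odot> (\<iota> v \<otimes> U.Lam)"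
proof -
  have "(U.Lam \<otimes> \<iota> v) \<odot> (\<iota> u \<otimes> V.Lam) \<odot> (d \<otimes> U.E) = (\<iota> s \<otimes> c \<otimes> \<iota> v) \<odot> (b \<otimes> \<iota> (t \<cdot> v)) \<odot> (\<iota> u \<otimes> U.E \<otimes> \<iota> v) \<odot> (\<iota> (u \<cdot> s) \<otimes> cv) \<odot> (\<iota> u \<otimes> bv \<otimes> \<iota> t) \<odot> (\<iota> (u \<cdot> v) \<otimes> U.E) \<odot> (\<iota> (u \<cdot> v) \<otimes> U.E) \<odot> (d \<otimes> \<iota> (s \<cdot> t))"
    unfolding U.Lam_def V.Lam_def using sep'[of d U.E] by simp
  also have "\<dots> = (\<iota> s \<otimes> c \<otimes> \<iota> v) \<odot> (b \<otimes> \<iota> (t \<cdot> v)) \<odot> (\<iota> (u \<cdot> s) \<otimes> cv) \<odot> (\<iota> u \<otimes> bv \<otimes> \<iota> t) \<odot> (\<iota> (u \<cdot> v) \<otimes> U.E) \<odot> (d \<otimes> \<iota> (s \<cdot> t))"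
    using U.WA.E1_idem[THEN whz[where p="u \<cdot> v" and q=I]] V.ELam[THEN whz[where p=u and q=I]] by simp
  also have "\<dots> = (\<iota> s \<otimes> c \<otimes> \<iota> v) \<odot> (b \<otimes> \<iota> (t \<cdot> v)) \<odot> (\<iota> (u \<cdot> s) \<otimes> cv) \<odot> (\<iota> u \<otimes> bv \<otimes> \<iota> t) \<odot> (d \<otimes> \<iota> (s \<cdot> t)) \<odot> (\<iota> (v \<cdot> u) \<otimes> U.E)"
    using swap[of d U.E I I I] by simp
  also have "\<dots> = (\<iota> s \<otimes> c \<otimes> \<iota> v) \<odot> (\<iota> (s \<cdot> u) \<otimes> cv) \<odot> (\<iota> s \<otimes> d \<otimes> \<iota> t) \<odot> (bv \<otimes> \<iota> (u \<cdot> t)) \<odot> (\<iota> v \<otimes> b \<otimes> \<iota> t) \<odot> (\<iota> (v \<cdot> u) \<otimes> U.E)"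
    using swapz[of b cv I I I, symmetric] YBs[THEN whz[where p=I and q=t]] by simp
  also have "\<dots> = (\<iota> (s \<cdot> t) \<otimes> d) \<odot> (\<iota> s \<otimes> cv \<otimes> \<iota> u) \<odot> (bv \<otimes> \<iota> (t \<cdot> u)) \<odot> (\<iota> (v \<cdot> s) \<otimes> c) \<odot> (\<iota> v \<otimes> b \<otimes> \<iota> t) \<odot> (\<iota> (v \<cdot> u) \<otimes> U.E)"
    using YBt[THEN whz[where p=s and q=I]] swapz[of bv c I I I] by simp
  finally have L: "(U.Lam \<otimes> \<iota> v) \<odot> (\<iota> u \<otimes> V.Lam) \<odot> (d \<otimes> U.E) = (\<iota> (s \<cdot> t) \<otimes> d) \<odot> (\<iota> s \<otimes> cv \<otimes> \<iota> u) \<odot> (bv \<otimes> \<iota> (t \<cdot> u)) \<odot> (\<iota> (v \<cdot> s) \<otimes> c) \<odot> (\<iota> v \<otimes> b \<otimes> \<iota> t) \<odot> (\<iota> (v \<cdot> u) \<otimes> U.E)" .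
  have "(U.E \<otimes> d) \<odot> (V.Lam \<otimes> \<iota> u) \<odot> (\<iota> v \<otimes> U.Lam) = (\<iota> (s \<cdot> t) \<otimes> d) \<odot> (U.E \<otimes> \<iota> (v \<cdot> u)) \<odot> (\<iota> s \<otimes> cv \<otimes> \<iota> u) \<odot> (bv \<otimes> \<iota> (t \<cdot> u)) \<odot> (\<iota> v \<otimes> U.E \<otimes> \<iota> u) \<odot> (\<iota> (v \<cdot> s) \<otimes> c) \<odot> (\<iota> v \<otimes> b \<otimes> \<iota> t) \<odot> (\<iota> (v \<cdot> u) \<otimes> U.E)"
    unfolding U.Lam_def V.Lam_def using sep'[of U.E d] by simp
  also have "\<dots> = (\<iota> (s \<cdot> t) \<otimes> d) \<odot> (\<iota> s \<otimes> cv \<otimes> \<iota> u) \<odot> (bv \<otimes> \<iota> (t \<cdot> u)) \<odot> (\<iota> v \<otimes> U.E \<otimes> \<iota> u) \<odot> (\<iota> (v \<cdot> s) \<otimes> c) \<odot> (\<iota> v \<otimes> b \<otimes> \<iota> t) \<odot> (\<iota> (v \<cdot> u) \<otimes> U.E)"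
    using V.ELam[THEN whz[where p=I and q=u]] by simp
  also have "\<dots> = (\<iota> (s \<cdot> t) \<otimes> d) \<odot> (\<iota> s \<otimes> cv \<otimes> \<iota> u) \<odot> (bv \<otimes> \<iota> (t \<cdot> u)) \<odot> (\<iota> (v \<cdot> s) \<otimes> c) \<odot> (\<iota> v \<otimes> b \<otimes> \<iota> t) \<odot> (\<iota> (v \<cdot> u) \<otimes> U.E)"
    using U.ELam[THEN whisk[where p=v and q=I]] by simp
  finally show ?thesis using L by simp
qed
end


context WD begin
lemma muB_E1l: "muB \<odot> (\<iota> (s \<cdot> t) \<otimes> E1) = muB" using muB_E2 E1_E2 by simp
lemma muB_assocE: "muB \<odot> (muB \<otimes> E1) = muB \<odot> (E1 \<otimes> muB)"
proof -
  have "muB \<odot> (muB \<otimes> E1) = muB \<odot> (\<iota> (s \<cdot> t) \<otimes> E1) \<odot> (muB \<otimes> \<iota> (s \<cdot> t))" using sep'[of muB E1] by simp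
  also have "\<dots> = muB \<odot> (muB \<otimes> \<iota> (s \<cdot> t))" using muB_E1l[THEN extc] by simp
  also have "\<dots> = muB \<odot> (\<iota> (s \<cdot> t) \<otimes> muB)" by (rule muB_assoc)
  also have "\<dots> = muB \<odot> (E1 \<otimes> \<iota> (s \<cdot> t)) \<odot> (\<iota> (s \<cdot> t) \<otimes> muB)" using muB_E1r[THEN extc] by simp
  also have "\<dots> = muB \<odot> (E1 \<otimes> muB)" using sep[of E1 muB] by simp
  finally show ?thesis .
qed
lemma unitE1: "muB \<odot> (E1 \<otimes> etaB) = E1"
  using sep[of E1 etaB] muB_E1r[THEN extc] muB_unit1 by simp
lemma unitE2: "muB \<odot> (etaB \<otimes> E1) = E1"
  using sep'[of etaB E1] muB_E1l[THEN extc] muB_unit2 by simp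
end

context TC begin

lemma clo_sel[simp]: "Obj clo = {A}" "Arr clo = {v. carr v}" "Src clo = (\<lambda>v. A)" "Trg clo = (\<lambda>v. A)"
  "Id1 clo = barId K" "Hc1 clo = barC K" "Cell clo = {x. ccell x}" "Dom clo = (\<lambda>x. fst (snd x))"
  "Cod clo = (\<lambda>x. snd (snd x))" "Vc clo x y = (Vc K (fst x) (fst y), fst (snd y), snd (snd x))"
  "Id2 clo v = (snd v, v, v)"
  "Hc2 clo x y = (Hc2 K (fst x) (fst y), barC K (fst (snd x)) (fst (snd y)), barC K (snd (snd x)) (snd (snd y)))"
  by (simp_all add: clo_def)

lemma TC_clo: "TC clo A" by unfold_locales (simp_all add: clo_twocat)

lemma clo_ar: "TC.ar clo A v \<longleftrightarrow> carr v" by (simp add: TC.ar_def[OF TC_clo])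
lemma clo_ce: "TC.ce clo A x \<longleftrightarrow> ccell x" by (auto simp: TC.ce_def[OF TC_clo] clo_ar ccell_def)

lemma barC_eq: "carr u \<Longrightarrow> carr v \<Longrightarrow> carr w \<Longrightarrow> barC K (barC K u v) w = barC K u (barC K v w)"
  by (simp add: barC_def carr_iff)
lemma barC_Id: "carr u \<Longrightarrow> barC K u (barId K A) = u" "carr u \<Longrightarrow> barC K (barId K A) u = u"
  by (simp_all add: barC_def barId_def carr_iff)

definition "cm M = (mmu M, barC K (mc M) (mc M), mc M)"
definition "ch M = (meta M, barId K A, mc M)"

lemma bar_monadD: assumes "bar_monad K A M"
  shows "carr (mc M)" "ce (mmu M)" "Dom K (mmu M) = fst (mc M) \<cdot> fst (mc M)" "Cod K (mmu M) = fst (mc M)"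
    "ce (meta M)" "Dom K (meta M) = I" "Cod K (meta M) = fst (mc M)"
    "snd (mc M) \<odot> mmu M = mmu M" "mmu M \<odot> (snd (mc M) \<otimes> snd (mc M)) = mmu M"
    "snd (mc M) \<odot> meta M = meta M"
    "mmu M \<odot> (mmu M \<otimes> snd (mc M)) = mmu M \<odot> (snd (mc M) \<otimes> mmu M)"
    "mmu M \<odot> (snd (mc M) \<otimes> meta M) = snd (mc M)" "mmu M \<odot> (meta M \<otimes> snd (mc M)) = snd (mc M)"
  using assms unfolding bar_monad_def barHom_def carr_def barArr_def barC_def barId_def wl_def wr_def ce_def ar_def
  by (auto simp: T(3)[rule_format] T(1)[rule_format, OF A])

lemma mon_clo: assumes "bar_monad K A M" shows "TC.mon clo A (mc M) (cm M) (ch M)"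
proof -
  note d = bar_monadD[OF assms]
  have c: "carr (barC K (mc M) (mc M))" using d by (simp add: carr_barC)
  show ?thesis
    unfolding TC.mon_def[OF TC_clo] clo_ar clo_ce cm_def ch_def
    using d c carr_barId by (simp add: ccell_iff barC_eq barC_Id carr_iff barC_def barId_def)
qed

definition "cl T S l = (l, barC K (mc T) (mc S), barC K (mc S) (mc T))"

lemma bar_wdlD: assumes "bar_wdl K A T S l"
  shows "bar_monad K A T" "bar_monad K A S" "ce l" "Dom K l = fst (mc T) \<cdot> fst (mc S)" "Cod K l = fst (mc S) \<cdot> fst (mc T)"
  "(snd (mc S) \<otimes> snd (mc T)) \<odot> l = l" "l \<odot> (snd (mc T) \<otimes> snd (mc S)) = l"
  "l \<odot> (mmu T \<otimes> snd (mc S)) = (snd (mc S) \<otimes> mmu T) \<odot> (l \<otimes> snd (mc T)) \<odot> (snd (mc T) \<otimes> l)"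
  "l \<odot> (snd (mc T) \<otimes> mmu S) = (mmu S \<otimes> snd (mc T)) \<odot> (snd (mc S) \<otimes> l) \<odot> (l \<otimes> snd (mc S))"
  "l \<odot> (meta T \<otimes> snd (mc S)) = (mmu S \<otimes> snd (mc T)) \<odot> (snd (mc S) \<otimes> l) \<odot> ((snd (mc S) \<otimes> snd (mc T)) \<otimes> meta S) \<odot> (snd (mc S) \<otimes> meta T)"
  "l \<odot> (snd (mc T) \<otimes> meta S) = (snd (mc S) \<otimes> mmu T) \<odot> (l \<otimes> snd (mc T)) \<odot> (meta T \<otimes> (snd (mc S) \<otimes> snd (mc T))) \<odot> (meta S \<otimes> snd (mc T))"
  using assms bar_monadD[of T] bar_monadD[of S] unfolding bar_wdl_def barHom_def barC_def wl_def wr_def Let_def ce_def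
  by (auto simp: carr_iff)


lemma idem_H: "ce e \<Longrightarrow> ce f \<Longrightarrow> Cod K e = Dom K e \<Longrightarrow> Cod K f = Dom K f \<Longrightarrow> e \<odot> e = e \<Longrightarrow> f \<odot> f = f \<Longrightarrow>
  (e \<otimes> f) \<odot> (e \<otimes> f) = e \<otimes> f"
  using fuse[of e e f f] by simp

lemma wdl_clo: assumes "bar_wdl K A T S l"
  shows "TC.wdl clo A (mc T) (cm T) (ch T) (mc S) (cm S) (ch S) (cl T S l)"
proof -
  note d = bar_wdlD[OF assms]
  note dT = bar_monadD[OF d(1)] and dS = bar_monadD[OF d(2)]
  show ?thesis
    unfolding TC.wdl_def[OF TC_clo] clo_ce using mon_clo[OF d(1)] mon_clo[OF d(2)] d dT dS carr_barId
    by (simp add: ccell_iff barC_eq barC_Id carr_iff barC_def barId_def cm_def ch_def cl_def idem_H)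
qed

lemma fst_eq: "x = y \<Longrightarrow> fst x = fst y" by simp

lemma raw_WD:
  assumes "bar_wdl K A T S l"
  shows "WD clo A (mc T) (cm T) (ch T) (mc S) (cm S) (ch S) (cl T S l)"
  by (rule WD.intro[OF TC_clo]) (rule WD_axioms.intro, rule wdl_clo[OF assms])

lemma ccellD: "ccell x \<Longrightarrow> ce (fst x) \<and> Dom K (fst x) = fst (fst (snd x)) \<and> Cod K (fst x) = fst (snd (snd x))
   \<and> snd (snd (snd x)) \<odot> fst x = fst x \<and> fst x \<odot> snd (fst (snd x)) = fst x"
  by (simp add: ccell_iff)

lemma raw_G1:
  assumes "bar_wdl K A T S l"
  shows "bar_monad K A (wdl_monad K T S l)"
    and "wdl_idem K T S l = (snd (mc S) \<otimes> mmu T) \<odot> (l \<otimes> snd (mc T)) \<odot> (meta T \<otimes> snd (mc S) \<otimes> snd (mc T))"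
    and "(snd (mc S) \<otimes> snd (mc T)) \<odot> wdl_idem K T S l = wdl_idem K T S l"
    and "wdl_idem K T S l \<odot> (snd (mc S) \<otimes> snd (mc T)) = wdl_idem K T S l"
proof -
  interpret C: TC clo A by (rule TC_clo)
  interpret W: WD clo A "mc T" "cm T" "ch T" "mc S" "cm S" "ch S" "cl T S l" by (rule raw_WD[OF assms])
  note d = bar_wdlD[OF assms]
  note dT = bar_monadD[OF d(1)] and dS = bar_monadD[OF d(2)]
  have e1: "fst W.E1 = wdl_idem K T S l"
    unfolding W.E1_def by (simp add: wdl_idem_def wl_def wr_def barC_def cm_def ch_def cl_def Let_def)
  have mu: "fst W.muB = mmu (wdl_monad K T S l)"
    unfolding W.muB_alt by (simp add: wdl_monad_def wl_def wr_def barC_def cm_def ch_def cl_def Let_def)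
  have et: "fst W.etaB = meta (wdl_monad K T S l)"
    unfolding W.etaB_def by (simp add: wdl_monad_def wl_def wr_def barC_def cm_def ch_def cl_def Let_def)
  have e2: "fst W.E2 = (snd (mc S) \<otimes> mmu T) \<odot> (l \<otimes> snd (mc T)) \<odot> (meta T \<otimes> snd (mc S) \<otimes> snd (mc T))"
    unfolding W.E2_def using dS dT by (simp add: barC_def cm_def ch_def cl_def carr_iff)
  have tE: "ccell W.E1" "ccell W.muB" "ccell W.etaB" using W.E1_ty W.muB_ty W.etaB_ty by (simp_all add: clo_ce)
  have dE: "Dom clo W.E1 = barC K (mc S) (mc T)" "Cod clo W.E1 = barC K (mc S) (mc T)"
    "Dom clo W.muB = barC K (mc S) (barC K (mc T) (barC K (mc S) (mc T)))" "Cod clo W.muB = barC K (mc S) (mc T)"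
    "Dom clo W.etaB = barId K A" "Cod clo W.etaB = barC K (mc S) (mc T)"
    using W.E1_ty W.muB_ty W.etaB_ty by simp_all
  have r1: "ce (wdl_idem K T S l)" "Dom K (wdl_idem K T S l) = fst (mc S) \<cdot> fst (mc T)" "Cod K (wdl_idem K T S l) = fst (mc S) \<cdot> fst (mc T)"
    "(snd (mc S) \<otimes> snd (mc T)) \<odot> wdl_idem K T S l = wdl_idem K T S l"
    "wdl_idem K T S l \<odot> (snd (mc S) \<otimes> snd (mc T)) = wdl_idem K T S l"
    using ccellD[OF tE(1)] dE e1 by (simp_all add: barC_def)
  have r2: "ce (mmu (wdl_monad K T S l))" "Dom K (mmu (wdl_monad K T S l)) = fst (mc S) \<cdot> fst (mc T) \<cdot> fst (mc S) \<cdot> fst (mc T)"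
    "Cod K (mmu (wdl_monad K T S l)) = fst (mc S) \<cdot> fst (mc T)"
    using ccellD[OF tE(2)] dE mu by (simp_all add: barC_def)
  have r3: "ce (meta (wdl_monad K T S l))" "Dom K (meta (wdl_monad K T S l)) = I"
    "Cod K (meta (wdl_monad K T S l)) = fst (mc S) \<cdot> fst (mc T)"
    using ccellD[OF tE(3)] dE et by (simp_all add: barC_def barId_def)
  have q1: "wdl_idem K T S l \<odot> wdl_idem K T S l = wdl_idem K T S l"
    using fst_eq[OF W.E1_idem] e1 by simp
  have q2: "wdl_idem K T S l \<odot> mmu (wdl_monad K T S l) = mmu (wdl_monad K T S l)"
    using fst_eq[OF W.E1_muB] e1 mu by simp
  have q3: "mmu (wdl_monad K T S l) \<odot> (wdl_idem K T S l \<otimes> wdl_idem K T S l) = mmu (wdl_monad K T S l)"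
    using fst_eq[OF W.muB_EE] e1 mu by simp
  have q4: "wdl_idem K T S l \<odot> meta (wdl_monad K T S l) = meta (wdl_monad K T S l)"
    using fst_eq[OF W.E1_etaB] e1 et by simp
  have q5: "mmu (wdl_monad K T S l) \<odot> (mmu (wdl_monad K T S l) \<otimes> wdl_idem K T S l) = mmu (wdl_monad K T S l) \<odot> (wdl_idem K T S l \<otimes> mmu (wdl_monad K T S l))"
    using fst_eq[OF W.muB_assocE] e1 mu by simp
  have q6: "mmu (wdl_monad K T S l) \<odot> (wdl_idem K T S l \<otimes> meta (wdl_monad K T S l)) = wdl_idem K T S l"
    using fst_eq[OF W.unitE1] e1 mu et by simp
  have q7: "mmu (wdl_monad K T S l) \<odot> (meta (wdl_monad K T S l) \<otimes> wdl_idem K T S l) = wdl_idem K T S l"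
    using fst_eq[OF W.unitE2] e1 mu et by simp
  have q8: "wdl_idem K T S l = fst W.E2" using W.E1_E2 e1 by simp
  have mc: "mc (wdl_monad K T S l) = (fst (mc S) \<cdot> fst (mc T), wdl_idem K T S l)"
    by (simp add: wdl_monad_def Let_def)
  have ar: "ar (fst (mc S) \<cdot> fst (mc T))" using dS dT by (simp add: carr_iff)
  have h1: "(fst (mc S) \<cdot> fst (mc T)) \<cdot> fst (mc S) \<cdot> fst (mc T) = fst (mc S) \<cdot> fst (mc T) \<cdot> fst (mc S) \<cdot> fst (mc T)"
    using dS dT by (simp add: carr_iff)
  show "bar_monad K A (wdl_monad K T S l)"
    unfolding bar_monad_def barHom_def barArr_def barC_def barId_def wl_def wr_def mc
    using r1 r2 r3 q1 q2 q3 q4 q5 q6 q7 ar A h1 by (auto simp: ce_def ar_def)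
  show "wdl_idem K T S l = (snd (mc S) \<otimes> mmu T) \<odot> (l \<otimes> snd (mc T)) \<odot> (meta T \<otimes> snd (mc S) \<otimes> snd (mc T))"
    using q8 e2 by simp
  show "(snd (mc S) \<otimes> snd (mc T)) \<odot> wdl_idem K T S l = wdl_idem K T S l"
    "wdl_idem K T S l \<odot> (snd (mc S) \<otimes> snd (mc T)) = wdl_idem K T S l" using r1 by simp_all
qed


definition "rYB S0 S1 S2 a b c \<longleftrightarrow> Vc K (wr K a (mc S2)) (Vc K (wl K (mc S1) b) (wr K c (mc S0))) =
          Vc K (wl K (mc S0) c) (Vc K (wr K b (mc S1)) (wl K (mc S2) a))"

lemma WD3_clo:
  assumes "bar_wdl K A S1 S0 a" "bar_wdl K A U S0 b" "bar_wdl K A U S1 c" "rYB S0 S1 U a b c"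
  shows "WD3 clo A (mc S0) (cm S0) (ch S0) (mc S1) (cm S1) (ch S1) (mc U) (cm U) (ch U) (cl S1 S0 a) (cl U S0 b) (cl U S1 c)"
proof -
  note d1 = bar_wdlD[OF assms(1)] and d2 = bar_wdlD[OF assms(2)] and d3 = bar_wdlD[OF assms(3)]
  note m0 = bar_monadD[OF d1(2)] and m1 = bar_monadD[OF d1(1)] and m2 = bar_monadD[OF d2(1)]
  show ?thesis
    apply (rule WD3.intro[OF TC_clo])
    apply (rule WD3_axioms.intro)
       apply (rule wdl_clo[OF assms(1)])
      apply (rule wdl_clo[OF assms(2)])
     apply (rule wdl_clo[OF assms(3)])
    using assms(4) d1 d2 d3 m0 m1 m2 unfolding rYB_def
    by (simp add: cl_def barC_def wl_def wr_def carr_iff)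
qed

lemma raw_G2:
  assumes "bar_wdl K A S1 S0 a" "bar_wdl K A U S0 b" "bar_wdl K A U S1 c" "rYB S0 S1 U a b c"
  shows "bar_wdl K A U (wdl_monad K S1 S0 a)
     (Vc K (wl K (mc S0) c) (Vc K (wr K b (mc S1)) (wl K (mc U) (wdl_idem K S1 S0 a))))"
proof -
  interpret C: TC clo A by (rule TC_clo)
  interpret W: WD3 clo A "mc S0" "cm S0" "ch S0" "mc S1" "cm S1" "ch S1" "mc U" "cm U" "ch U" "cl S1 S0 a" "cl U S0 b" "cl U S1 c"
    by (rule WD3_clo[OF assms])
  note d1 = bar_wdlD[OF assms(1)] and d2 = bar_wdlD[OF assms(2)] and d3 = bar_wdlD[OF assms(3)]
  note m0 = bar_monadD[OF d1(2)] and m1 = bar_monadD[OF d1(1)] and m2 = bar_monadD[OF d2(1)]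
  note G1 = raw_G1[OF assms(1)]
  define E where "E = wdl_idem K S1 S0 a"
  define mB where "mB = mmu (wdl_monad K S1 S0 a)"
  define hB where "hB = meta (wdl_monad K S1 S0 a)"
  define L where "L = Vc K (wl K (mc S0) c) (Vc K (wr K b (mc S1)) (wl K (mc U) (wdl_idem K S1 S0 a)))"
  have e1: "fst W.E = E"
    unfolding W.WA.E1_def by (simp add: E_def wdl_idem_def wl_def wr_def barC_def cm_def ch_def cl_def Let_def)
  have mu: "fst W.WA.muB = mB"
    unfolding W.WA.muB_alt by (simp add: mB_def wdl_monad_def wl_def wr_def barC_def cm_def ch_def cl_def Let_def)
  have et: "fst W.WA.etaB = hB"
    unfolding W.WA.etaB_def by (simp add: hB_def wdl_monad_def wl_def wr_def barC_def cm_def ch_def cl_def Let_def)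
  have la: "fst W.Lam = L"
    unfolding W.Lam_def using e1 by (simp add: L_def E_def wl_def wr_def barC_def cm_def ch_def cl_def Let_def)
  have tE: "ccell W.E" "ccell W.WA.muB" "ccell W.WA.etaB" "ccell W.Lam"
    using W.WA.E1_ty W.WA.muB_ty W.WA.etaB_ty W.Lam_ty by (simp_all add: clo_ce)
  have dE: "Dom clo W.E = barC K (mc S0) (mc S1)" "Cod clo W.E = barC K (mc S0) (mc S1)"
    "Dom clo W.WA.muB = barC K (mc S0) (barC K (mc S1) (barC K (mc S0) (mc S1)))" "Cod clo W.WA.muB = barC K (mc S0) (mc S1)"
    "Dom clo W.WA.etaB = barId K A" "Cod clo W.WA.etaB = barC K (mc S0) (mc S1)"
    "Dom clo W.Lam = barC K (mc U) (barC K (mc S0) (mc S1))" "Cod clo W.Lam = barC K (mc S0) (barC K (mc S1) (mc U))"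
    using W.WA.E1_ty W.WA.muB_ty W.WA.etaB_ty W.Lam_ty by simp_all
  have r1: "ce E" "Dom K E = fst (mc S0) \<cdot> fst (mc S1)" "Cod K E = fst (mc S0) \<cdot> fst (mc S1)"
    using ccellD[OF tE(1)] dE e1 by (simp_all add: barC_def)
  have r2: "ce mB" "Dom K mB = fst (mc S0) \<cdot> fst (mc S1) \<cdot> fst (mc S0) \<cdot> fst (mc S1)" "Cod K mB = fst (mc S0) \<cdot> fst (mc S1)"
    using ccellD[OF tE(2)] dE mu by (simp_all add: barC_def)
  have r3: "ce hB" "Dom K hB = I" "Cod K hB = fst (mc S0) \<cdot> fst (mc S1)"
    using ccellD[OF tE(3)] dE et by (simp_all add: barC_def barId_def)
  have r4: "ce L" "Dom K L = fst (mc U) \<cdot> fst (mc S0) \<cdot> fst (mc S1)" "Cod K L = fst (mc S0) \<cdot> fst (mc S1) \<cdot> fst (mc U)"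
    using ccellD[OF tE(4)] dE la by (simp_all add: barC_def)
  have q1: "(E \<otimes> snd (mc U)) \<odot> L = L" using fst_eq[OF W.ELam'] e1 la by simp
  have q2: "L \<odot> (snd (mc U) \<otimes> E) = L" using fst_eq[OF W.LamE] e1 la by simp
  have q3: "L \<odot> (mmu U \<otimes> E) = (E \<otimes> mmu U) \<odot> (L \<otimes> snd (mc U)) \<odot> (snd (mc U) \<otimes> L)"
    using fst_eq[OF W.A1] e1 la by (simp add: cm_def)
  have q4: "L \<odot> (snd (mc U) \<otimes> mB) = (mB \<otimes> snd (mc U)) \<odot> (E \<otimes> L) \<odot> (L \<otimes> E)"
    using fst_eq[OF W.A2] e1 la mu by simp
  have q5: "L \<odot> (meta U \<otimes> E) = (mB \<otimes> snd (mc U)) \<odot> (E \<otimes> L) \<odot> (E \<otimes> snd (mc U) \<otimes> hB) \<odot> (E \<otimes> meta U)"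
    using fst_eq[OF W.A3] e1 la mu et by (simp add: ch_def)
  have q6: "L \<odot> (snd (mc U) \<otimes> hB) = (E \<otimes> mmu U) \<odot> (L \<otimes> snd (mc U)) \<odot> (meta U \<otimes> E \<otimes> snd (mc U)) \<odot> (hB \<otimes> snd (mc U))"
    using fst_eq[OF W.A4] e1 la et by (simp add: cm_def ch_def)
  have mc: "mc (wdl_monad K S1 S0 a) = (fst (mc S0) \<cdot> fst (mc S1), E)"
    by (simp add: wdl_monad_def Let_def E_def)
  have ar: "ar (fst (mc S0) \<cdot> fst (mc S1))" using m0 m1 by (simp add: carr_iff)
  have h1: "fst (mc U) \<cdot> fst (mc S0) \<cdot> fst (mc S1) = fst (mc U) \<cdot> fst (mc S0) \<cdot> fst (mc S1)" by simp
  have ee: "(E \<otimes> snd (mc U)) \<otimes> hB = E \<otimes> snd (mc U) \<otimes> hB" using r1 r3 m2 by (simp add: carr_iff)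
  have ee2: "meta U \<otimes> E \<otimes> snd (mc U) = meta U \<otimes> (E \<otimes> snd (mc U))" by simp
  have cell: "L \<in> Cell K" using r4 by (simp add: ce_def)
  have cod: "Cod K L = (fst (mc S0) \<cdot> fst (mc S1)) \<cdot> fst (mc U)" using r4 m0 m1 m2 by (simp add: carr_iff)
  have q5': "L \<odot> (meta U \<otimes> E) = (mB \<otimes> snd (mc U)) \<odot> (E \<otimes> L) \<odot> ((E \<otimes> snd (mc U)) \<otimes> hB) \<odot> (E \<otimes> meta U)"
    using q5 ee by simp
  have mm: "mmu (wdl_monad K S1 S0 a) = mB" "meta (wdl_monad K S1 S0 a) = hB" by (simp_all add: mB_def hB_def)
  have "bar_wdl K A U (wdl_monad K S1 S0 a) L"
    unfolding bar_wdl_def Let_def mc mm barHom_def barC_def wl_def wr_def fst_conv snd_conv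
    using m2 G1(1) d2(1) cell r4(2) cod q1 q2 q3 q4 q5' q6 by blast
  then show ?thesis by (simp add: L_def)
qed

lemma WD4_clo:
  assumes w: "bar_wdl K A S1 S0 a" "bar_wdl K A U S0 b" "bar_wdl K A U S1 c"
    "bar_wdl K A Vm S0 bv" "bar_wdl K A Vm S1 cv" "bar_wdl K A Vm U d"
  and y: "rYB S0 S1 U a b c" "rYB S0 S1 Vm a bv cv" "rYB S0 U Vm b bv d" "rYB S1 U Vm c cv d"
  shows "WD4 clo A (mc S0) (cm S0) (ch S0) (mc S1) (cm S1) (ch S1) (mc U) (cm U) (ch U) (mc Vm) (cm Vm) (ch Vm)
     (cl S1 S0 a) (cl U S0 b) (cl U S1 c) (cl Vm S0 bv) (cl Vm S1 cv) (cl Vm U d)"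
proof -
  note d1 = bar_wdlD[OF w(1)] and d2 = bar_wdlD[OF w(2)] and d3 = bar_wdlD[OF w(3)]
   and d4 = bar_wdlD[OF w(4)] and d5 = bar_wdlD[OF w(5)] and d6 = bar_wdlD[OF w(6)]
  note m0 = bar_monadD[OF d1(2)] and m1 = bar_monadD[OF d1(1)] and m2 = bar_monadD[OF d2(1)] and m3 = bar_monadD[OF d4(1)]
  show ?thesis
    apply (rule WD4.intro[OF TC_clo])
    apply (rule WD4_axioms.intro)
    apply (rule wdl_clo[OF w(1)]) apply (rule wdl_clo[OF w(2)]) apply (rule wdl_clo[OF w(3)])
    apply (rule wdl_clo[OF w(4)]) apply (rule wdl_clo[OF w(5)]) apply (rule wdl_clo[OF w(6)])
    using y d1 d2 d3 d4 d5 d6 m0 m1 m2 m3 unfolding rYB_def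
    by (simp_all add: cl_def barC_def wl_def wr_def carr_iff)
qed

lemma raw_G3:
  assumes w: "bar_wdl K A S1 S0 a" "bar_wdl K A U S0 b" "bar_wdl K A U S1 c"
    "bar_wdl K A Vm S0 bv" "bar_wdl K A Vm S1 cv" "bar_wdl K A Vm U d"
  and y: "rYB S0 S1 U a b c" "rYB S0 S1 Vm a bv cv" "rYB S0 U Vm b bv d" "rYB S1 U Vm c cv d"
  shows "rYB (wdl_monad K S1 S0 a) U Vm
     (Vc K (wl K (mc S0) c) (Vc K (wr K b (mc S1)) (wl K (mc U) (wdl_idem K S1 S0 a))))
     (Vc K (wl K (mc S0) cv) (Vc K (wr K bv (mc S1)) (wl K (mc Vm) (wdl_idem K S1 S0 a)))) d"
proof -
  interpret C: TC clo A by (rule TC_clo)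
  interpret W: WD4 clo A "mc S0" "cm S0" "ch S0" "mc S1" "cm S1" "ch S1" "mc U" "cm U" "ch U" "mc Vm" "cm Vm" "ch Vm"
     "cl S1 S0 a" "cl U S0 b" "cl U S1 c" "cl Vm S0 bv" "cl Vm S1 cv" "cl Vm U d"
    by (rule WD4_clo[OF w y])
  have e1: "fst W.U.E = wdl_idem K S1 S0 a"
    unfolding W.U.WA.E1_def by (simp add: wdl_idem_def wl_def wr_def barC_def cm_def ch_def cl_def Let_def)
  have lu: "fst W.U.Lam = Vc K (wl K (mc S0) c) (Vc K (wr K b (mc S1)) (wl K (mc U) (wdl_idem K S1 S0 a)))"
    unfolding W.U.Lam_def using e1 by (simp add: wl_def wr_def barC_def cm_def ch_def cl_def Let_def)
  have lv: "fst W.V.Lam = Vc K (wl K (mc S0) cv) (Vc K (wr K bv (mc S1)) (wl K (mc Vm) (wdl_idem K S1 S0 a)))"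
    unfolding W.V.Lam_def using e1 by (simp add: wl_def wr_def barC_def cm_def ch_def cl_def Let_def)
  show ?thesis
    using fst_eq[OF W.YBnew] e1 lu lv unfolding rYB_def by (simp add: wl_def wr_def wdl_monad_def Let_def cl_def)
qed

lemma Wdl_obj_iff: "wA D = A \<Longrightarrow> Wdl_obj K D \<longleftrightarrow> (\<forall>i\<le>wm D. bar_monad K A (wS D i)) \<and>
     (\<forall>i j. i < j \<and> j \<le> wm D \<longrightarrow> bar_wdl K A (wS D j) (wS D i) (wL D i j)) \<and>
     (\<forall>i j k. i < j \<and> j < k \<and> k \<le> wm D \<longrightarrow> rYB (wS D i) (wS D j) (wS D k) (wL D i j) (wL D i k) (wL D j k))"
  unfolding Wdl_obj_def rYB_def Let_def by simp

lemma C1_sel: "wA (C1 K D) = wA D" "wm (C1 K D) = wm D - 1"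
  "wS (C1 K D) i = (if i = 0 then wdl_monad K (wS D 1) (wS D 0) (wL D 0 1) else wS D (Suc i))"
  "wL (C1 K D) i j = (if i = 0 then Vc K (wl K (mc (wS D 0)) (wL D 1 (Suc j)))
                   (Vc K (wr K (wL D 0 (Suc j)) (mc (wS D 1))) (wl K (mc (wS D (Suc j))) (wdl_idem K (wS D 1) (wS D 0) (wL D 0 1))))
               else wL D (Suc i) (Suc j))"
  by (simp_all add: C1_def Let_def)

lemma C1_pres:
  assumes W: "Wdl_obj K D" and a: "wA D = A" and m: "Suc 0 \<le> wm D"
  shows "Wdl_obj K (C1 K D)"
proof -
  let ?S = "wS D" and ?L = "wL D" and ?m = "wm D"
  have M: "\<And>i. i \<le> ?m \<Longrightarrow> bar_monad K A (?S i)" and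
    Wd: "\<And>i j. i < j \<Longrightarrow> j \<le> ?m \<Longrightarrow> bar_wdl K A (?S j) (?S i) (?L i j)" and
    Y: "\<And>i j k. i < j \<Longrightarrow> j < k \<Longrightarrow> k \<le> ?m \<Longrightarrow> rYB (?S i) (?S j) (?S k) (?L i j) (?L i k) (?L j k)"
    using W a by (auto simp: Wdl_obj_iff)
  have c1a: "wA (C1 K D) = A" using a by (simp add: C1_sel)
  show ?thesis unfolding Wdl_obj_iff[OF c1a]
  proof (intro conjI allI impI)
    fix i assume i: "i \<le> wm (C1 K D)"
    show "bar_monad K A (wS (C1 K D) i)"
    proof (cases "i = 0")
      case True then show ?thesis using raw_G1(1)[OF Wd[of 0 1]] m by (simp add: C1_sel)
    next
      case False then show ?thesis using M[of "Suc i"] i by (simp add: C1_sel)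
    qed
  next
    fix i j assume ij: "i < j \<and> j \<le> wm (C1 K D)"
    show "bar_wdl K A (wS (C1 K D) j) (wS (C1 K D) i) (wL (C1 K D) i j)"
    proof (cases "i = 0")
      case True
      have "bar_wdl K A (?S (Suc j)) (wdl_monad K (?S 1) (?S 0) (?L 0 1))
          (Vc K (wl K (mc (?S 0)) (?L 1 (Suc j))) (Vc K (wr K (?L 0 (Suc j)) (mc (?S 1))) (wl K (mc (?S (Suc j))) (wdl_idem K (?S 1) (?S 0) (?L 0 1)))))"
        by (rule raw_G2) (use ij m in \<open>auto intro!: Wd Y simp: C1_sel\<close>)
      then show ?thesis using True ij by (simp add: C1_sel)
    next
      case False
      have "Suc j \<le> wm D" using ij m unfolding C1_sel by arith
      then show ?thesis using Wd[of "Suc i" "Suc j"] ij False by (simp add: C1_sel)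
    qed
  next
    fix i j k assume ijk: "i < j \<and> j < k \<and> k \<le> wm (C1 K D)"
    show "rYB (wS (C1 K D) i) (wS (C1 K D) j) (wS (C1 K D) k) (wL (C1 K D) i j) (wL (C1 K D) i k) (wL (C1 K D) j k)"
    proof (cases "i = 0")
      case True
      have "rYB (wdl_monad K (?S 1) (?S 0) (?L 0 1)) (?S (Suc j)) (?S (Suc k))
          (Vc K (wl K (mc (?S 0)) (?L 1 (Suc j))) (Vc K (wr K (?L 0 (Suc j)) (mc (?S 1))) (wl K (mc (?S (Suc j))) (wdl_idem K (?S 1) (?S 0) (?L 0 1)))))
          (Vc K (wl K (mc (?S 0)) (?L 1 (Suc k))) (Vc K (wr K (?L 0 (Suc k)) (mc (?S 1))) (wl K (mc (?S (Suc k))) (wdl_idem K (?S 1) (?S 0) (?L 0 1)))))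
          (?L (Suc j) (Suc k))"
        by (rule raw_G3) (use ijk m in \<open>auto intro!: Wd Y simp: C1_sel\<close>)
      then show ?thesis using True ijk by (simp add: C1_sel)
    next
      case False
      have "Suc k \<le> wm D" using ijk m unfolding C1_sel by arith
      then show ?thesis using Y[of "Suc i" "Suc j" "Suc k"] ijk False by (simp add: C1_sel)
    qed
  qed
qed
end


context TC begin
lemma cl_cons: "carr v \<Longrightarrow> comp_list K A (v#xs) = barC K v (comp_list K A xs)"
  by (cases xs) (auto simp: barC_Id)
lemma cl_carr: "\<forall>x\<in>set xs. carr x \<Longrightarrow> carr (comp_list K A xs)"
  by (induction xs) (auto simp: carr_barId carr_barC cl_cons)
lemma cl_snoc: "\<forall>x\<in>set xs. carr x \<Longrightarrow> carr v \<Longrightarrow> comp_list K A (xs @ [v]) = barC K (comp_list K A xs) v"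
proof (induction xs)
  case Nil then show ?case by (simp add: barC_Id)
next
  case (Cons x xs)
  then have "comp_list K A ((x # xs) @ [v]) = barC K x (comp_list K A (xs @ [v]))"
    using cl_cons[of x "xs @ [v]"] by simp
  also have "\<dots> = barC K x (barC K (comp_list K A xs) v)" using Cons by simp
  also have "\<dots> = barC K (barC K x (comp_list K A xs)) v" using Cons by (simp add: barC_eq cl_carr)
  also have "\<dots> = barC K (comp_list K A (x # xs)) v" using Cons by (simp add: cl_cons)
  finally show ?case .
qed
end

context TC begin

lemma core3:
  assumes s: "ce sg" "Dom K sg = W" "Cod K sg = W" "ar W"
  and b: "ce bt" "Dom K bt = W" "Cod K bt = W" "sg \<odot> bt = bt" "bt \<odot> bt = bt"
  and t: "ce e" "Dom K e = t" "Cod K e = t" "e \<odot> e = e" "ar t"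
  and m: "ce mt" "Dom K mt = t \<cdot> t" "Cod K mt = t" "e \<odot> mt = mt" "mt \<odot> (e \<otimes> e) = mt"
  and h: "ce ht" "Dom K ht = I" "Cod K ht = t" "e \<odot> ht = ht"
  and r: "ce R" "Dom K R = t \<cdot> W" "Cod K R = W \<cdot> t" "(bt \<otimes> e) \<odot> R \<odot> (e \<otimes> bt) = R \<odot> (e \<otimes> bt)"
  shows "(bt \<otimes> mt) \<odot> ((R \<odot> (e \<otimes> bt)) \<otimes> e) \<odot> (ht \<otimes> bt \<otimes> e) = (sg \<otimes> mt) \<odot> (R \<otimes> e) \<odot> (ht \<otimes> sg \<otimes> e) \<odot> (bt \<otimes> e)"
proof -
  have 1: "bt \<otimes> mt = (sg \<otimes> mt) \<odot> (bt \<otimes> e \<otimes> e)" using fuse[of sg bt mt "e \<otimes> e"] s b t m by simp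
  have 2: "(bt \<otimes> e \<otimes> e) \<odot> ((R \<odot> (e \<otimes> bt)) \<otimes> e) = (R \<odot> (e \<otimes> bt)) \<otimes> e"
    using fuse[of "bt \<otimes> e" "R \<odot> (e \<otimes> bt)" e e] s b t r by simp
  have 3: "(R \<odot> (e \<otimes> bt)) \<otimes> e = (R \<otimes> e) \<odot> (e \<otimes> bt \<otimes> e)"
    using fuse[of R "e \<otimes> bt" e e] s b t r by simp
  have 4: "(e \<otimes> bt \<otimes> e) \<odot> (ht \<otimes> bt \<otimes> e) = ht \<otimes> bt \<otimes> e"
    using fuse[of e ht "bt \<otimes> e" "bt \<otimes> e"] fuse[of bt bt e e] s b t h by simp
  have 5: "ht \<otimes> bt \<otimes> e = (ht \<otimes> sg \<otimes> e) \<odot> (bt \<otimes> e)"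
    using fuse[of ht "Id2 K I" "sg \<otimes> e" "bt \<otimes> e"] fuse[of sg bt e e] s b t h by simp
  have "(bt \<otimes> mt) \<odot> ((R \<odot> (e \<otimes> bt)) \<otimes> e) \<odot> (ht \<otimes> bt \<otimes> e)
     = (sg \<otimes> mt) \<odot> ((bt \<otimes> e \<otimes> e) \<odot> ((R \<odot> (e \<otimes> bt)) \<otimes> e)) \<odot> (ht \<otimes> bt \<otimes> e)"
    unfolding 1 using s b t m r h by simp
  also have "\<dots> = (sg \<otimes> mt) \<odot> (R \<otimes> e) \<odot> ((e \<otimes> bt \<otimes> e) \<odot> (ht \<otimes> bt \<otimes> e))"
    unfolding 2 unfolding 3 using s b t m r h by simp
  also have "\<dots> = (sg \<otimes> mt) \<odot> (R \<otimes> e) \<odot> (ht \<otimes> sg \<otimes> e) \<odot> (bt \<otimes> e)"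
    unfolding 4 unfolding 5 using s b t m r h by simp
  finally show ?thesis .
qed


lemma core6:
  assumes s: "ce sg" "Dom K sg = W" "Cod K sg = W" "ar W"
  and b: "ce bt" "Dom K bt = W" "Cod K bt = W" "sg \<odot> bt = bt"
  and t: "ce e" "Dom K e = t" "Cod K e = t" "e \<odot> e = e" "ar t"
  and u: "ce f" "Dom K f = u" "Cod K f = u" "f \<odot> f = f" "ar u"
  and l: "ce Lk" "Dom K Lk = u \<cdot> t" "Cod K Lk = t \<cdot> u" "Lk \<odot> (f \<otimes> e) = Lk"
  and r: "ce R" "Dom K R = u \<cdot> W" "Cod K R = W \<cdot> u" "(bt \<otimes> f) \<odot> R \<odot> (f \<otimes> bt) = R \<odot> (f \<otimes> bt)"
  and p: "ce bp" "Dom K bp = W \<cdot> t" "Cod K bp = W \<cdot> t" "(bt \<otimes> e) \<odot> bp = bp"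
  shows "(bt \<otimes> Lk) \<odot> ((R \<odot> (f \<otimes> bt)) \<otimes> e) \<odot> (f \<otimes> bp) = (sg \<otimes> Lk) \<odot> (R \<otimes> e) \<odot> (f \<otimes> bp)"
proof -
  have 1: "bt \<otimes> Lk = (sg \<otimes> Lk) \<odot> (bt \<otimes> f \<otimes> e)" using fuse[of sg bt Lk "f \<otimes> e"] s b t u l by simp
  have 2: "(bt \<otimes> f \<otimes> e) \<odot> ((R \<odot> (f \<otimes> bt)) \<otimes> e) = (R \<odot> (f \<otimes> bt)) \<otimes> e"
    using fuse[of "bt \<otimes> f" "R \<odot> (f \<otimes> bt)" e e] s b t u r by simp
  have 3: "(R \<odot> (f \<otimes> bt)) \<otimes> e = (R \<otimes> e) \<odot> (f \<otimes> bt \<otimes> e)"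
    using fuse[of R "f \<otimes> bt" e e] s b t u r by simp
  have 4: "(f \<otimes> bt \<otimes> e) \<odot> (f \<otimes> bp) = f \<otimes> bp"
    using fuse[of f f "bt \<otimes> e" bp] s b t u p by simp
  have "(bt \<otimes> Lk) \<odot> ((R \<odot> (f \<otimes> bt)) \<otimes> e) \<odot> (f \<otimes> bp) = (sg \<otimes> Lk) \<odot> ((bt \<otimes> f \<otimes> e) \<odot> ((R \<odot> (f \<otimes> bt)) \<otimes> e)) \<odot> (f \<otimes> bp)"
    unfolding 1 using s b t u l r p by simp
  also have "\<dots> = (sg \<otimes> Lk) \<odot> (R \<otimes> e) \<odot> ((f \<otimes> bt \<otimes> e) \<odot> (f \<otimes> bp))"
    unfolding 2 unfolding 3 using s b t u l r p by simp
  also have "\<dots> = (sg \<otimes> Lk) \<odot> (R \<otimes> e) \<odot> (f \<otimes> bp)" unfolding 4 ..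
  finally show ?thesis .
qed

end

locale SEQ = TC +
  fixes S L and N :: nat
  assumes cs: "\<And>i. i \<le> N \<Longrightarrow> carr (mc (S i :: (_,_) bmonad))"
  and bm: "\<And>i. i \<le> N \<Longrightarrow> bar_monad K A (S i)"
  and w01: "bar_wdl K A (S 1) (S 0) (L 0 1)" and N1: "1 \<le> N"
  and clw: "\<And>i j. i < j \<Longrightarrow> j \<le> N \<Longrightarrow> ce (L i j) \<and> Dom K (L i j) = fst (mc (S j)) \<cdot> fst (mc (S i)) \<and> Cod K (L i j) = fst (mc (S i)) \<cdot> fst (mc (S j))"
begin

abbreviation "sg \<equiv> seg K A S"

lemma seg_carr: "a \<le> b \<Longrightarrow> b \<le> Suc N \<Longrightarrow> carr (sg a b)"
  unfolding seg_def by (rule cl_carr) (auto intro: cs)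
lemma seg_refl[simp]: "sg a a = barId K A" by (simp add: seg_def)
lemma seg_snoc: "a \<le> b \<Longrightarrow> b \<le> N \<Longrightarrow> sg a (Suc b) = barC K (sg a b) (mc (S b))"
  unfolding seg_def by (simp add: cl_snoc cs)
lemma seg_cons: "a < b \<Longrightarrow> b \<le> Suc N \<Longrightarrow> sg a b = barC K (mc (S a)) (sg (Suc a) b)"
  unfolding seg_def by (simp add: upt_conv_Cons cl_cons cs)

lemma ar_s[simp]: "i \<le> N \<Longrightarrow> ar (fst (mc (S i)))" using cs by (simp add: carr_iff)
lemma ce_e[simp]: "i \<le> N \<Longrightarrow> ce (snd (mc (S i)))" "i \<le> N \<Longrightarrow> Dom K (snd (mc (S i))) = fst (mc (S i))"
  "i \<le> N \<Longrightarrow> Cod K (snd (mc (S i))) = fst (mc (S i))" "i \<le> N \<Longrightarrow> snd (mc (S i)) \<odot> snd (mc (S i)) = snd (mc (S i))"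
  using cs by (simp_all add: carr_iff)
lemma ar_w[simp]: "a \<le> b \<Longrightarrow> b \<le> Suc N \<Longrightarrow> ar (fst (sg a b))" using seg_carr by (simp add: carr_iff)
lemma ce_sig[simp]: "a \<le> b \<Longrightarrow> b \<le> Suc N \<Longrightarrow> ce (snd (sg a b))" "a \<le> b \<Longrightarrow> b \<le> Suc N \<Longrightarrow> Dom K (snd (sg a b)) = fst (sg a b)"
  "a \<le> b \<Longrightarrow> b \<le> Suc N \<Longrightarrow> Cod K (snd (sg a b)) = fst (sg a b)"
  "a \<le> b \<Longrightarrow> b \<le> Suc N \<Longrightarrow> snd (sg a b) \<odot> snd (sg a b) = snd (sg a b)"
  using seg_carr by (simp_all add: carr_iff)
lemma L_ty[simp]: "i < j \<Longrightarrow> j \<le> N \<Longrightarrow> ce (L i j)" "i < j \<Longrightarrow> j \<le> N \<Longrightarrow> Dom K (L i j) = fst (mc (S j)) \<cdot> fst (mc (S i))"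
  "i < j \<Longrightarrow> j \<le> N \<Longrightarrow> Cod K (L i j) = fst (mc (S i)) \<cdot> fst (mc (S j))" using clw by simp_all

lemma w_snoc: "a \<le> b \<Longrightarrow> b \<le> N \<Longrightarrow> fst (sg a (Suc b)) = fst (sg a b) \<cdot> fst (mc (S b))"
  by (simp add: seg_snoc barC_def)
lemma w_cons: "a < b \<Longrightarrow> b \<le> Suc N \<Longrightarrow> fst (sg a b) = fst (mc (S a)) \<cdot> fst (sg (Suc a) b)"
  by (simp add: seg_cons[of a b] barC_def)
lemma sig_snoc: "a \<le> b \<Longrightarrow> b \<le> N \<Longrightarrow> snd (sg a (Suc b)) = snd (sg a b) \<otimes> snd (mc (S b))"
  by (simp add: seg_snoc barC_def)
lemma w_refl[simp]: "fst (barId K A) = I" "snd (barId K A) = Id2 K I" by (simp_all add: barId_def)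


lemma w_app: "a \<le> b \<Longrightarrow> b \<le> c \<Longrightarrow> c \<le> Suc N \<Longrightarrow> fst (sg a b) \<cdot> fst (sg b c) = fst (sg a c)"
proof (induction c rule: nat_induct)
  case 0 then show ?case by simp
next
  case (Suc c)
  show ?case
  proof (cases "b = Suc c")
    case True then show ?thesis using Suc by simp
  next
    case False
    then have bc: "b \<le> c" using Suc by simp
    have ih: "fst (sg a b) \<cdot> fst (sg b c) = fst (sg a c)" using Suc bc by simp
    have "fst (sg a b) \<cdot> fst (sg b (Suc c)) = fst (sg a b) \<cdot> (fst (sg b c) \<cdot> fst (mc (S c)))"
      using bc Suc by (simp add: w_snoc)
    also have "\<dots> = (fst (sg a b) \<cdot> fst (sg b c)) \<cdot> fst (mc (S c))"
      by (rule H1_assoc[symmetric]) (use bc Suc in simp_all)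
    also have "\<dots> = fst (sg a c) \<cdot> fst (mc (S c))" unfolding ih ..
    also have "\<dots> = fst (sg a (Suc c))" using bc Suc by (simp add: w_snoc)
    finally show ?thesis .
  qed
qed

abbreviation "RT \<equiv> Rterm K A S L"
abbreviation "PC \<equiv> pushc K A S L"

lemma RT_def': "RT l k i = snd (sg 0 i) \<otimes> L i l \<otimes> snd (sg (Suc i) k)" by (simp add: Rterm_def wl_def wr_def)

lemma RT_ty: assumes "i < l" "l \<le> N" "i < k" "k \<le> Suc N"
  shows "ce (RT l k i)" "Dom K (RT l k i) = fst (sg 0 i) \<cdot> fst (mc (S l)) \<cdot> fst (mc (S i)) \<cdot> fst (sg (Suc i) k)"
    "Cod K (RT l k i) = fst (sg 0 i) \<cdot> fst (mc (S i)) \<cdot> fst (mc (S l)) \<cdot> fst (sg (Suc i) k)"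
  using assms by (simp_all add: RT_def')

lemma RT_chain: assumes "Suc i < k" "Suc i < l" "l \<le> N" "k \<le> Suc N"
  shows "Cod K (RT l k i) = Dom K (RT l k (Suc i))"
proof -
  have a: "fst (sg 0 (Suc i)) = fst (sg 0 i) \<cdot> fst (mc (S i))" using assms by (simp add: w_snoc)
  have b: "fst (sg (Suc i) k) = fst (mc (S (Suc i))) \<cdot> fst (sg (Suc (Suc i)) k)" using assms by (simp add: w_cons)
  show ?thesis using assms by (simp add: RT_ty a b)
qed

lemma PC_ty: "1 \<le> j \<Longrightarrow> j \<le> k \<Longrightarrow> j \<le> l \<Longrightarrow> l \<le> N \<Longrightarrow> k \<le> Suc N \<Longrightarrow>
   ce (PC l k j) \<and> Dom K (PC l k j) = fst (mc (S l)) \<cdot> fst (sg 0 k) \<and> Cod K (PC l k j) = fst (sg 0 j) \<cdot> fst (mc (S l)) \<cdot> fst (sg j k)"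
proof (induction j rule: nat_induct)
  case 0 then show ?case by simp
next
  case (Suc j)
  show ?case
  proof (cases j)
    case 0
    have "fst (sg 0 k) = fst (mc (S 0)) \<cdot> fst (sg (Suc 0) k)" using Suc 0 by (simp add: w_cons)
    moreover have "fst (sg 0 1) = fst (mc (S 0))" using Suc 0 by (simp add: w_snoc)
    ultimately show ?thesis using Suc 0 RT_ty[of 0 l k] by (simp add: eval_nat_numeral)
  next
    case (Suc j')
    then have IH: "ce (PC l k j) \<and> Dom K (PC l k j) = fst (mc (S l)) \<cdot> fst (sg 0 k) \<and> Cod K (PC l k j) = fst (sg 0 j) \<cdot> fst (mc (S l)) \<cdot> fst (sg j k)"
      using Suc.IH Suc.prems by simp
    have c: "Cod K (PC l k j) = Dom K (RT l k j)"
    proof -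
      have "fst (sg j k) = fst (mc (S j)) \<cdot> fst (sg (Suc j) k)" using Suc.prems by (simp add: w_cons)
      then show ?thesis using IH Suc.prems RT_ty[of j l k] by simp
    qed
    have p: "PC l k (Suc j) = RT l k j \<odot> PC l k j" using Suc by simp
    have "fst (sg 0 (Suc j)) = fst (sg 0 j) \<cdot> fst (mc (S j))" using Suc.prems by (simp add: w_snoc)
    then show ?thesis unfolding p using IH c Suc.prems RT_ty[of j l k] by simp
  qed
qed

lemma RT_ext: "i < k \<Longrightarrow> i < l \<Longrightarrow> l \<le> N \<Longrightarrow> k \<le> N \<Longrightarrow> RT l (Suc k) i = RT l k i \<otimes> snd (mc (S k))"
  by (simp add: RT_def' sig_snoc)

lemma PC_ext: "1 \<le> j \<Longrightarrow> j \<le> k \<Longrightarrow> j \<le> l \<Longrightarrow> l \<le> N \<Longrightarrow> k \<le> N \<Longrightarrow> PC l (Suc k) j = PC l k j \<otimes> snd (mc (S k))"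
proof (induction j rule: nat_induct)
  case 0 then show ?case by simp
next
  case (Suc j)
  show ?case
  proof (cases j)
    case 0 then show ?thesis using Suc RT_ext[of 0 k l] by simp
  next
    case (Suc j')
    then have IH: "PC l (Suc k) j = PC l k j \<otimes> snd (mc (S k))" using Suc.IH Suc.prems by simp
    have t1: "ce (PC l k j)" "Cod K (PC l k j) = Dom K (RT l k j)"
      using PC_ty[of j k l] RT_ty[of j l k] Suc Suc.prems w_cons[of j k] by auto
    have "PC l (Suc k) (Suc j) = RT l (Suc k) j \<odot> PC l (Suc k) j" using Suc by simp
    also have "\<dots> = (RT l k j \<otimes> snd (mc (S k))) \<odot> (PC l k j \<otimes> snd (mc (S k)))" using IH RT_ext[of j k l] Suc.prems by simp
    also have "\<dots> = (RT l k j \<odot> PC l k j) \<otimes> snd (mc (S k))"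
      using fuse[of "RT l k j" "PC l k j" "snd (mc (S k))" "snd (mc (S k))"] t1 RT_ty[of j l k] Suc.prems by simp
    finally show ?thesis using Suc by simp
  qed
qed

lemma mS[simp]: "i \<le> N \<Longrightarrow> ce (mmu (S i))" "i \<le> N \<Longrightarrow> Dom K (mmu (S i)) = fst (mc (S i)) \<cdot> fst (mc (S i))"
  "i \<le> N \<Longrightarrow> Cod K (mmu (S i)) = fst (mc (S i))" "i \<le> N \<Longrightarrow> ce (meta (S i))" "i \<le> N \<Longrightarrow> Dom K (meta (S i)) = I"
  "i \<le> N \<Longrightarrow> Cod K (meta (S i)) = fst (mc (S i))"
  using bar_monadD[OF bm] by simp_all

abbreviation "E0 \<equiv> wdl_idem K (S 1) (S 0) (L 0 1)"
lemma E0_ty[simp]: "ce E0" "Dom K E0 = fst (sg 0 2)" "Cod K E0 = fst (sg 0 2)"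
proof -
  have "carr (mc (wdl_monad K (S 1) (S 0) (L 0 1)))" using bar_monadD(1)[OF raw_G1(1)[OF w01]] .
  moreover have "fst (sg 0 2) = fst (mc (S 0)) \<cdot> fst (mc (S 1))"
    using w_snoc[of 0 1] w_snoc[of 0 0] N1 by (simp add: eval_nat_numeral)
  ultimately show "ce E0" "Dom K E0 = fst (sg 0 2)" "Cod K E0 = fst (sg 0 2)"
    by (simp_all add: carr_iff wdl_monad_def Let_def)
qed

lemma E0_ty2[simp]: "ce (wdl_idem K (S (Suc 0)) (S 0) (L 0 (Suc 0)))"
  "Dom K (wdl_idem K (S (Suc 0)) (S 0) (L 0 (Suc 0))) = fst (sg 0 (Suc (Suc 0)))"
  "Cod K (wdl_idem K (S (Suc 0)) (S 0) (L 0 (Suc 0))) = fst (sg 0 (Suc (Suc 0)))"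
  using E0_ty unfolding One_nat_def numeral_2_eq_2 by simp_all

lemma w_one: "l \<le> N \<Longrightarrow> fst (sg l (Suc l)) = fst (mc (S l))" using w_snoc[of l l] by simp

abbreviation "OV \<equiv> ovl K A S L"
lemma OV_def': "OV l = (snd (sg 0 l) \<otimes> mmu (S l)) \<odot> PC l (Suc l) l \<odot> (meta (S l) \<otimes> snd (sg 0 (Suc l)))"
  by (simp add: ovl_def wl_def wr_def)
lemma OV_ty: assumes "1 \<le> l" "l \<le> N" shows "ce (OV l)" "Dom K (OV l) = fst (sg 0 (Suc l))" "Cod K (OV l) = fst (sg 0 (Suc l))"
proof -
  note p = PC_ty[of l "Suc l" l]
  have w: "fst (sg 0 (Suc l)) = fst (sg 0 l) \<cdot> fst (mc (S l))" using assms by (simp add: w_snoc)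
  show "ce (OV l)" "Dom K (OV l) = fst (sg 0 (Suc l))" "Cod K (OV l) = fst (sg 0 (Suc l))"
    unfolding OV_def' using p assms w w_one[of l] by simp_all
qed

abbreviation "LT \<equiv> lbterm K A S L"
abbreviation "LA \<equiv> lbaux K A S L"
definition "XX j = (if j = 1 then E0 else OV j)"
lemma XX_ty: "1 \<le> j \<Longrightarrow> j \<le> N \<Longrightarrow> ce (XX j) \<and> Dom K (XX j) = fst (sg 0 (Suc j)) \<and> Cod K (XX j) = fst (sg 0 (Suc j))"
  by (cases "j = 1") (auto simp: XX_def OV_ty)
lemma LT_def': "LT m j = XX j \<otimes> snd (sg (Suc j) (Suc m))"
  by (simp add: lbterm_def XX_def wr_def eval_nat_numeral)

lemma LT_ty: "1 \<le> j \<Longrightarrow> j \<le> m \<Longrightarrow> m \<le> N \<Longrightarrow> ce (LT m j) \<and> Dom K (LT m j) = fst (sg 0 (Suc m)) \<and> Cod K (LT m j) = fst (sg 0 (Suc m))"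
  unfolding LT_def' using XX_ty[of j] w_app[of 0 "Suc j" "Suc m"] by simp

lemma LA_ty: "1 \<le> j \<Longrightarrow> j \<le> m \<Longrightarrow> m \<le> N \<Longrightarrow> ce (LA m j) \<and> Dom K (LA m j) = fst (sg 0 (Suc m)) \<and> Cod K (LA m j) = fst (sg 0 (Suc m))"
proof (induction j rule: nat_induct)
  case 0 then show ?case by simp
next
  case (Suc j)
  show ?case
  proof (cases j)
    case 0 then show ?thesis using Suc LT_ty[of 1 m] by simp
  next
    case (Suc j')
    then have "LA m (Suc j) = LT m (Suc j) \<odot> LA m j" by simp
    then show ?thesis using Suc.IH Suc.prems LT_ty[of "Suc j" m] \<open>j = Suc j'\<close> by simp
  qed
qed

lemma LT_ext: "1 \<le> j \<Longrightarrow> j \<le> m \<Longrightarrow> Suc m \<le> N \<Longrightarrow> LT (Suc m) j = LT m j \<otimes> snd (mc (S (Suc m)))"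
  unfolding LT_def' using XX_ty[of j] by (simp add: sig_snoc)

lemma LA_ext: "1 \<le> j \<Longrightarrow> j \<le> m \<Longrightarrow> Suc m \<le> N \<Longrightarrow> LA (Suc m) j = LA m j \<otimes> snd (mc (S (Suc m)))"
proof (induction j rule: nat_induct)
  case 0 then show ?case by simp
next
  case (Suc j)
  show ?case
  proof (cases j)
    case 0 then show ?thesis using Suc LT_ext[of 1 m] by simp
  next
    case (Suc j')
    have IH: "LA (Suc m) j = LA m j \<otimes> snd (mc (S (Suc m)))" using Suc.IH Suc.prems \<open>j = Suc j'\<close> by simp
    have t: "ce (LA m j)" "ce (LT m (Suc j))" "Cod K (LA m j) = Dom K (LT m (Suc j))"
      using LA_ty[of j m] LT_ty[of "Suc j" m] Suc.prems \<open>j = Suc j'\<close> by auto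
    have "LA (Suc m) (Suc j) = LT (Suc m) (Suc j) \<odot> LA (Suc m) j" using \<open>j = Suc j'\<close> by simp
    also have "\<dots> = (LT m (Suc j) \<otimes> snd (mc (S (Suc m)))) \<odot> (LA m j \<otimes> snd (mc (S (Suc m))))"
      using IH LT_ext[of "Suc j" m] Suc.prems by simp
    also have "\<dots> = (LT m (Suc j) \<odot> LA m j) \<otimes> snd (mc (S (Suc m)))"
      using fuse[of "LT m (Suc j)" "LA m j" "snd (mc (S (Suc m)))" "snd (mc (S (Suc m)))"] t Suc.prems by simp
    also have "\<dots> = LA m (Suc j) \<otimes> snd (mc (S (Suc m)))" using \<open>j = Suc j'\<close> by simp
    finally show ?thesis .
  qed
qed

abbreviation "LB \<equiv> lbar K A S L"
lemma LB_LA: "1 \<le> k \<Longrightarrow> k \<le> N \<Longrightarrow> LB k = LA k k"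
  by (cases "k = 1") (simp_all add: lbar_def lbterm_def wr_def numeral_2_eq_2)

lemma LB_ty: "1 \<le> k \<Longrightarrow> k \<le> N \<Longrightarrow> ce (LB k) \<and> Dom K (LB k) = fst (sg 0 (Suc k)) \<and> Cod K (LB k) = fst (sg 0 (Suc k))"
  using LB_LA LA_ty by simp

lemma LB_step: assumes "1 \<le> k" "Suc k \<le> N" shows "LB (Suc k) = OV (Suc k) \<odot> (LB k \<otimes> snd (mc (S (Suc k))))"
proof -
  obtain k' where k: "k = Suc k'" using assms by (cases k) auto
  have "LB (Suc k) = LA (Suc k) (Suc k)" using LB_LA assms by simp
  also have "\<dots> = LT (Suc k) (Suc k) \<odot> LA (Suc k) k" using k by simp
  also have "\<dots> = OV (Suc k) \<odot> (LA k k \<otimes> snd (mc (S (Suc k))))"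
    using LA_ext[of k k] assms OV_ty[of "Suc k"] by (simp add: LT_def' XX_def)
  finally show ?thesis using LB_LA assms by simp
qed
end


context TC begin

lemma SEQ_of: assumes "Wdl_obj K D" "wA D = A" "1 \<le> wm D" shows "SEQ K A (wS D) (wL D) (wm D)"
proof -
  have M: "\<And>i. i \<le> wm D \<Longrightarrow> bar_monad K A (wS D i)" and
    Wd: "\<And>i j. i < j \<Longrightarrow> j \<le> wm D \<Longrightarrow> bar_wdl K A (wS D j) (wS D i) (wL D i j)"
    using assms by (auto simp: Wdl_obj_iff)
  show ?thesis
  proof (unfold_locales)
    fix i assume "i \<le> wm D" then show "carr (mc (wS D i))" using bar_monadD(1)[OF M] by simp
  next
    fix i assume "i \<le> wm D" then show "bar_monad K A (wS D i)" by (rule M)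
  next
    show "bar_wdl K A (wS D 1) (wS D 0) (wL D 0 1)" using Wd[of 0 1] assms by simp
  next
    show "1 \<le> wm D" by (rule assms(3))
  next
    fix i j assume "i < j" "j \<le> wm D"
    then show "ce (wL D i j) \<and> Dom K (wL D i j) = fst (mc (wS D j)) \<cdot> fst (mc (wS D i)) \<and> Cod K (wL D i j) = fst (mc (wS D i)) \<cdot> fst (mc (wS D j))"
      using bar_wdlD[OF Wd] by simp
  qed
qed

definition "INV D n k \<longleftrightarrow> Wdl_obj K ((C1 K ^^ k) D) \<and> wA ((C1 K ^^ k) D) = A \<and> wm ((C1 K ^^ k) D) = n - k \<and>
  mc (wS ((C1 K ^^ k) D) 0) = (fst (seg K A (wS D) 0 (Suc k)), lbar K A (wS D) (wL D) k) \<and>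
  (\<forall>i. 1 \<le> i \<longrightarrow> wS ((C1 K ^^ k) D) i = wS D (i + k)) \<and>
  (\<forall>i j. 1 \<le> i \<longrightarrow> wL ((C1 K ^^ k) D) i j = wL D (i + k) (j + k)) \<and>
  (\<forall>j. 1 \<le> j \<longrightarrow> j + k \<le> n \<longrightarrow> wL ((C1 K ^^ k) D) 0 j =
      Vc K (pushc K A (wS D) (wL D) (j + k) (Suc k) (Suc k)) (wl K (mc (wS D (j + k))) (lbar K A (wS D) (wL D) k))) \<and>
  Vc K (snd (seg K A (wS D) 0 (Suc k))) (lbar K A (wS D) (wL D) k) = lbar K A (wS D) (wL D) k"

lemma INV_1: assumes W: "Wdl_obj K D" "wA D = A" "wm D = n" "1 < n" shows "INV D n 1"
proof -
  interpret Q: SEQ K A "wS D" "wL D" n using SEQ_of[OF W(1,2)] W by simp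
  have Wd: "\<And>i j. i < j \<Longrightarrow> j \<le> n \<Longrightarrow> bar_wdl K A (wS D j) (wS D i) (wL D i j)"
    using W by (auto simp: Wdl_obj_iff)
  have s02: "Q.sg 0 2 = barC K (mc (wS D 0)) (mc (wS D 1))"
    using Q.seg_snoc[of 0 1] Q.seg_snoc[of 0 0] W Q.cs[of 0] by (simp add: barC_Id numeral_2_eq_2)
  have s01: "Q.sg 0 1 = mc (wS D 0)" using Q.seg_snoc[of 0 0] W Q.cs[of 0] by (simp add: barC_Id)
  have lb1: "Q.LB 1 = Q.E0" by (simp add: lbar_def)
  have L0: "\<And>j. 1 \<le> j \<Longrightarrow> j + 1 \<le> n \<Longrightarrow> wL (C1 K D) 0 j =
      Vc K (Q.PC (j + 1) 2 2) (wl K (mc (wS D (j + 1))) Q.E0)"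
  proof -
    fix j assume j: "1 \<le> j" "j + 1 \<le> n"
    have p: "Q.PC (j + 1) 2 2 = Q.RT (j + 1) 2 1 \<odot> Q.RT (j + 1) 2 0" by (simp add: numeral_2_eq_2)
    have r1: "Q.RT (j + 1) 2 1 = snd (mc (wS D 0)) \<otimes> wL D 1 (j + 1)"
      unfolding Q.RT_def' using s01 j W by (simp add: numeral_2_eq_2)
    have r0: "Q.RT (j + 1) 2 0 = wL D 0 (j + 1) \<otimes> snd (mc (wS D 1))"
      unfolding Q.RT_def' using Q.seg_snoc[of 1 1] Q.cs[of 1] j W by (simp add: barC_Id numeral_2_eq_2)
    have w02: "fst (Q.sg 0 (Suc (Suc 0))) = fst (mc (wS D 0)) \<cdot> fst (mc (wS D (Suc 0)))"
      using s02 by (simp add: barC_def numeral_2_eq_2)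
    show "wL (C1 K D) 0 j = Vc K (Q.PC (j + 1) 2 2) (wl K (mc (wS D (j + 1))) Q.E0)"
      unfolding p r1 r0 C1_sel using j W w02 by (simp add: wl_def wr_def)
  qed
  show ?thesis unfolding INV_def
    using C1_pres[OF W(1,2)] W s02 lb1 L0 raw_G1(3)[OF Wd[of 0 1]]
    by (auto simp: C1_sel wdl_monad_def Let_def barC_def numeral_2_eq_2)
qed


lemma INV_step: assumes W: "Wdl_obj K D" "wA D = A" "wm D = n" "1 < n"
  and I: "INV D n k" and k: "1 \<le> k" "Suc k \<le> n - 1"
  shows "INV D n (Suc k)"
proof -
  interpret Q: SEQ K A "wS D" "wL D" n using SEQ_of[OF W(1,2)] W by simp
  have Wd: "\<And>i j. i < j \<Longrightarrow> j \<le> n \<Longrightarrow> bar_wdl K A (wS D j) (wS D i) (wL D i j)"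
    using W by (auto simp: Wdl_obj_iff)
  define D' where "D' = (C1 K ^^ k) D"
  have D'': "(C1 K ^^ Suc k) D = C1 K D'" by (simp add: D'_def)
  note I' = I[unfolded INV_def D'_def[symmetric]]
  have WD': "Wdl_obj K D'" "wA D' = A" "wm D' = n - k" using I' by simp_all
  have mc0: "mc (wS D' 0) = (fst (Q.sg 0 (Suc k)), Q.LB k)" using I' by simp
  have S': "\<And>i. 1 \<le> i \<Longrightarrow> wS D' i = wS D (i + k)" using I' by simp
  have L': "\<And>i j. 1 \<le> i \<Longrightarrow> wL D' i j = wL D (i + k) (j + k)" using I' by simp
  have L0: "\<And>j. 1 \<le> j \<Longrightarrow> j + k \<le> n \<Longrightarrow> wL D' 0 j = Vc K (Q.PC (j + k) (Suc k) (Suc k)) (wl K (mc (wS D (j + k))) (Q.LB k))"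
    using I' by simp
  have ab: "snd (Q.sg 0 (Suc k)) \<odot> Q.LB k = Q.LB k" using I' by simp
  have Wd': "\<And>i j. i < j \<Longrightarrow> j \<le> n - k \<Longrightarrow> bar_wdl K A (wS D' j) (wS D' i) (wL D' i j)"
    using WD' by (auto simp: Wdl_obj_iff)
  have bm': "\<And>i. i \<le> n - k \<Longrightarrow> bar_monad K A (wS D' i)" using WD' by (auto simp: Wdl_obj_iff)
  have S1: "wS D' 1 = wS D (Suc k)" using S'[of 1] by simp
  have Lam: "wL D' 0 1 = Q.PC (Suc k) (Suc k) (Suc k) \<odot> (snd (mc (wS D (Suc k))) \<otimes> Q.LB k)"
    using L0[of 1] k by (simp add: wl_def)
  have p01: "bar_wdl K A (wS D' 1) (wS D' 0) (wL D' 0 1)" using Wd'[of 0 1] k by simp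
  note G = raw_G1[OF p01]
  have cb: "carr (mc (wS D' 0))" using bar_monadD(1)[OF bm'[of 0]] by simp
  have bt: "ce (Q.LB k)" "Dom K (Q.LB k) = fst (Q.sg 0 (Suc k))" "Cod K (Q.LB k) = fst (Q.sg 0 (Suc k))"
     "Q.LB k \<odot> Q.LB k = Q.LB k" using cb mc0 by (simp_all add: carr_iff)
  let ?t = "fst (mc (wS D (Suc k)))" and ?e = "snd (mc (wS D (Suc k)))" and ?W = "fst (Q.sg 0 (Suc k))"
    and ?sg = "snd (Q.sg 0 (Suc k))" and ?R = "Q.PC (Suc k) (Suc k) (Suc k)"
    and ?m = "mmu (wS D (Suc k))" and ?h = "meta (wS D (Suc k))"
  have kn: "Suc k \<le> n" using k by simp
  have mD: "?e \<odot> ?m = ?m" "?m \<odot> (?e \<otimes> ?e) = ?m" "?e \<odot> ?h = ?h" using bar_monadD[OF Q.bm[OF kn]] by simp_all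
  have Rty: "ce ?R" "Dom K ?R = ?t \<cdot> ?W" "Cod K ?R = ?W \<cdot> ?t"
    using Q.PC_ty[of "Suc k" "Suc k" "Suc k"] kn by simp_all
  have Rab: "(Q.LB k \<otimes> ?e) \<odot> ?R \<odot> (?e \<otimes> Q.LB k) = ?R \<odot> (?e \<otimes> Q.LB k)"
    using bar_wdlD(6)[OF p01] Lam S1 mc0 by simp
  have E2: "wdl_idem K (wS D' 1) (wS D' 0) (wL D' 0 1) = (Q.LB k \<otimes> ?m) \<odot> ((?R \<odot> (?e \<otimes> Q.LB k)) \<otimes> ?e) \<odot> (?h \<otimes> Q.LB k \<otimes> ?e)"
    using G(2) S1 mc0 Lam by simp
  have c3: "(Q.LB k \<otimes> ?m) \<odot> ((?R \<odot> (?e \<otimes> Q.LB k)) \<otimes> ?e) \<odot> (?h \<otimes> Q.LB k \<otimes> ?e) = (?sg \<otimes> ?m) \<odot> (?R \<otimes> ?e) \<odot> (?h \<otimes> ?sg \<otimes> ?e) \<odot> (Q.LB k \<otimes> ?e)"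
    by (rule core3) (use bt ab mD Rty Rab kn in simp_all)
  have lbs: "Q.LB (Suc k) = (?sg \<otimes> ?m) \<odot> (?R \<otimes> ?e) \<odot> (?h \<otimes> ?sg \<otimes> ?e) \<odot> (Q.LB k \<otimes> ?e)"
    using Q.LB_step[of k] k Q.PC_ext[of "Suc k" "Suc k" "Suc k"] Q.sig_snoc[of 0 "Suc k"] Q.OV_ty[of "Suc k"] bt Rty kn
    by (simp add: Q.OV_def')
  have eqE: "wdl_idem K (wS D' 1) (wS D' 0) (wL D' 0 1) = Q.LB (Suc k)" using E2 c3 lbs by simp
  have kk: "Suc 0 \<le> wm D'" using WD' k by simp
  have bp: "ce (Q.LB (Suc k))" "Dom K (Q.LB (Suc k)) = ?W \<cdot> ?t" "Cod K (Q.LB (Suc k)) = ?W \<cdot> ?t"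
    using Q.LB_ty[of "Suc k"] kn Q.w_snoc[of 0 "Suc k"] by simp_all
  have bpa: "(Q.LB k \<otimes> ?e) \<odot> Q.LB (Suc k) = Q.LB (Suc k)" using G(3) eqE S1 mc0 by simp
  have part7: "\<And>j. 1 \<le> j \<Longrightarrow> j + Suc k \<le> n \<Longrightarrow> wL (C1 K D') 0 j =
      Vc K (Q.PC (j + Suc k) (Suc (Suc k)) (Suc (Suc k))) (wl K (mc (wS D (j + Suc k))) (Q.LB (Suc k)))"
  proof -
    fix j assume j: "1 \<le> j" "j + Suc k \<le> n"
    define l where "l = j + Suc k"
    have l: "Suc k < l" "l \<le> n" "Suc j + k = l" using j by (auto simp: l_def)
    let ?f = "snd (mc (wS D l))" and ?u = "fst (mc (wS D l))" and ?Lk = "wL D (Suc k) l" and ?R' = "Q.PC l (Suc k) (Suc k)"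
    have lhs: "wL (C1 K D') 0 j = (Q.LB k \<otimes> ?Lk) \<odot> ((?R' \<odot> (?f \<otimes> Q.LB k)) \<otimes> ?e) \<odot> (?f \<otimes> Q.LB (Suc k))"
      using L'[of 1 "Suc j"] L0[of "Suc j"] S'[of "Suc j"] S1 mc0 eqE l j
      by (simp add: C1_sel wl_def wr_def)
    have R'ty: "ce ?R'" "Dom K ?R' = ?u \<cdot> ?W" "Cod K ?R' = ?W \<cdot> ?u"
      using Q.PC_ty[of "Suc k" "Suc k" l] l by simp_all
    have R'ab: "(Q.LB k \<otimes> ?f) \<odot> ?R' \<odot> (?f \<otimes> Q.LB k) = ?R' \<odot> (?f \<otimes> Q.LB k)"
      using bar_wdlD(6)[OF Wd'[of 0 "Suc j"]] L0[of "Suc j"] S'[of "Suc j"] mc0 l j by (simp add: wl_def)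
    have Lkab: "?Lk \<odot> (?f \<otimes> ?e) = ?Lk" using bar_wdlD(7)[OF Wd[of "Suc k" l]] l by simp
    have c6: "(Q.LB k \<otimes> ?Lk) \<odot> ((?R' \<odot> (?f \<otimes> Q.LB k)) \<otimes> ?e) \<odot> (?f \<otimes> Q.LB (Suc k)) = (?sg \<otimes> ?Lk) \<odot> (?R' \<otimes> ?e) \<odot> (?f \<otimes> Q.LB (Suc k))"
      by (rule core6) (use bt ab R'ty R'ab Lkab bp bpa kn l in simp_all)
    have rhs: "Q.PC l (Suc (Suc k)) (Suc (Suc k)) = (?sg \<otimes> ?Lk) \<odot> (?R' \<otimes> ?e)"
      using Q.PC_ext[of "Suc k" "Suc k" l] l by (simp add: Q.RT_def')
    show "wL (C1 K D') 0 j = Vc K (Q.PC (j + Suc k) (Suc (Suc k)) (Suc (Suc k))) (wl K (mc (wS D (j + Suc k))) (Q.LB (Suc k)))"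
      unfolding lhs c6 l_def[symmetric] rhs using R'ty l bp kn by (simp add: wl_def)
  qed
  have part8: "snd (Q.sg 0 (Suc (Suc k))) \<odot> Q.LB (Suc k) = Q.LB (Suc k)"
  proof -
    have fz: "(?sg \<otimes> ?e) \<odot> (Q.LB k \<otimes> ?e) = Q.LB k \<otimes> ?e" using fuse[of ?sg "Q.LB k" ?e ?e] ab bt kn by simp
    have "snd (Q.sg 0 (Suc (Suc k))) \<odot> Q.LB (Suc k) = (?sg \<otimes> ?e) \<odot> ((Q.LB k \<otimes> ?e) \<odot> Q.LB (Suc k))"
      using Q.sig_snoc[of 0 "Suc k"] kn bpa by simp
    also have "\<dots> = ((?sg \<otimes> ?e) \<odot> (Q.LB k \<otimes> ?e)) \<odot> Q.LB (Suc k)"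
      by (rule V_assoc[symmetric]) (use bt bp kn in simp_all)
    also have "\<dots> = Q.LB (Suc k)" unfolding fz by (rule bpa)
    finally show ?thesis .
  qed
  show ?thesis unfolding INV_def D''
  proof (intro conjI allI impI)
    show "Wdl_obj K (C1 K D')" by (rule C1_pres[OF WD'(1,2) kk])
    show "wA (C1 K D') = A" using WD' by (simp add: C1_sel)
    show "wm (C1 K D') = n - Suc k" using WD' by (simp add: C1_sel)
    show "mc (wS (C1 K D') 0) = (fst (Q.sg 0 (Suc (Suc k))), Q.LB (Suc k))"
      using eqE S1 mc0 Q.w_snoc[of 0 "Suc k"] kn by (simp add: C1_sel wdl_monad_def Let_def)
    fix i :: nat assume "1 \<le> i" then show "wS (C1 K D') i = wS D (i + Suc k)" using S'[of "Suc i"] by (simp add: C1_sel)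
  next
    fix i j :: nat assume "1 \<le> i" then show "wL (C1 K D') i j = wL D (i + Suc k) (j + Suc k)" using L'[of "Suc i" "Suc j"] by (simp add: C1_sel)
  next
    fix j :: nat assume "1 \<le> j" "j + Suc k \<le> n" then show "wL (C1 K D') 0 j =
      Vc K (Q.PC (j + Suc k) (Suc (Suc k)) (Suc (Suc k))) (wl K (mc (wS D (j + Suc k))) (Q.LB (Suc k)))" by (rule part7)
  next
    show "snd (Q.sg 0 (Suc (Suc k))) \<odot> Q.LB (Suc k) = Q.LB (Suc k)" by (rule part8)
  qed
qed

lemma INV_all: assumes W: "Wdl_obj K D" "wA D = A" "wm D = n" "1 < n"
  shows "1 \<le> k \<Longrightarrow> k \<le> n - 1 \<Longrightarrow> INV D n k"
proof (induction k)
  case 0 then show ?case by simp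
next
  case (Suc k)
  show ?case
  proof (cases "k = 0")
    case True then show ?thesis using INV_1[OF W] by simp
  next
    case False then show ?thesis using INV_step[OF W Suc.IH] Suc.prems by simp
  qed
qed

lemma final: assumes W: "Wdl_obj K D" "wA D = A" "wm D = n" "1 < n"
  shows "wm ((C1 K ^^ (n - 1)) D) = 1 \<and>
         wA ((C1 K ^^ (n - 1)) D) = wA D \<and>
         mc (wS ((C1 K ^^ (n - 1)) D) 0) =
           (fst (seg K (wA D) (wS D) 0 n), lbar K (wA D) (wS D) (wL D) (n - 1)) \<and>
         wS ((C1 K ^^ (n - 1)) D) 1 = wS D n \<and>
         wL ((C1 K ^^ (n - 1)) D) 0 1 =
           Vc K (pushc K (wA D) (wS D) (wL D) n n n)
                (wl K (mc (wS D n)) (lbar K (wA D) (wS D) (wL D) (n - 1)))"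
proof -
  have I: "INV D n (n - 1)" using INV_all[OF W] W by simp
  have e: "Suc (n - 1) = n" "1 + (n - 1) = n" using W by auto
  show ?thesis using I W e unfolding INV_def by auto
qed

end

theorem lemma2p8:
  fixes K :: "('o,'a,'c) tcat" and D :: "('o,'a,'c) wdlm" and n :: nat
  assumes "twocat K" and "Wdl_obj K D" and "wm D = n" and "1 < n"
  shows "wm ((C1 K ^^ (n - 1)) D) = 1 \<and>
         wA ((C1 K ^^ (n - 1)) D) = wA D \<and>
         mc (wS ((C1 K ^^ (n - 1)) D) 0) =
           (fst (seg K (wA D) (wS D) 0 n), lbar K (wA D) (wS D) (wL D) (n - 1)) \<and>
         wS ((C1 K ^^ (n - 1)) D) 1 = wS D n \<and>
         wL ((C1 K ^^ (n - 1)) D) 0 1 =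
           Vc K (pushc K (wA D) (wS D) (wL D) n n n)
                (wl K (mc (wS D n)) (lbar K (wA D) (wS D) (wL D) (n - 1)))"
proof -
  have "bar_monad K (wA D) (wS D 0)" using assms(2) unfolding Wdl_obj_def by simp
  then have A: "wA D \<in> Obj K" by (simp add: bar_monad_def)
  interpret TC K "wA D" by unfold_locales (rule assms(1), rule A)
  show ?thesis by (rule final) (use assms in simp_all)
qed

end
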